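(* Let $F$ be a vector subspace of $\mathcal B(S)$ satisfying conditions (i)–(vi) below, and assume (H1) below holds with constant $\alpha\in(0,1)$. Let $f\in\mathcal B(S^3)$ such that $Pf$ and $Pf^2$ exist and belong to $F$, and $(\mu,Pf)=0$. Then for all $\delta>0$, $r\in\mathbb N$, $n\ge1$: $$\mathbb P(|\overline M_{\mathbb G_r}(f)|>\delta)\le\begin{cases}\frac{c}{\delta^2}(1/2)^r & \alpha^2<1/2,\\ \frac{c}{\delta^2}r(1/2)^r & \alpha^2=1/2,\\ \frac{c}{\delta^2}\alpha^{2r} & \alpha^2>1/2,\end{cases}\qquad \mathbb P(|\overline M^\pi_n(f)|>\delta)\le\begin{cases}\frac{c}{\delta^2}(1/2)^{r_n+1} & \alpha^2<1/2,\\ \frac{c}{\delta^2}r_n(1/2)^{r_n+1} & \alpha^2=1/2,\\ \frac{c}{\delta^2}\alpha^{2(r_n+1)} & \alpha^2>1/2,\end{cases}$$ $$\mathbb P(|\overline M_{\mathbb T_r}(f)|>\delta)\le\begin{cases}\frac{c}{\delta^2}(1/2)^{r+1} & \alpha^2<1/2,\\ \frac{c}{\delta^2}r(1/2)^{r+1} & \alpha^2=1/2,\\ \frac{c}{\delta^2}\alpha^{2(r+1)} & \alpha^2>1/2,\end{cases}$$ where the positive constant $c$ depends on $f$ and $\alpha$ (and may differ between bounds).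
   Context: Binary tree: $\mathbb T=\mathbb N^*$, vertex $n$ having daughters $2n,2n+1$; $\mathbb G_r=\{2^r,\dots,2^{r+1}-1\}$, $\mathbb T_r=\bigcup_{q=0}^r\mathbb G_q$, $r_n=\lfloor\log_2n\rfloor$. $(S,\mathcal S)$ is a metric space with Borel $\sigma$-field; $\mathcal B(S^p)$ is the set of measurable real functions on $S^p$. A $\mathbb T$-transition probability $P$ is a Markov kernel from $S$ to $S^2$; $P_0(x,B)=P(x,B\times S)$, $P_1(x,B)=P(x,S\times B)$, $Q=(P_0+P_1)/2$; $Pf(x)=\int f(x,y,z)P(x,dy\,dz)$; for $g,h\in\mathcal B(S)$, $(g\otimes h)(y,z)=g(y)h(z)$, $P(g\otimes h)(x)=\int g(y)h(z)P(x,dy\,dz)$. $(X_n)_{n\in\mathbb T}$ is a bifurcating Markov chain with initial law $\nu$ and $\mathbb T$-transition probability $P$: with $\mathcal F_r=\sigma(X_i,i\in\mathbb T_r)$, $\mathcal L(X_1)=\nu$ and for every $r$ and every family $(f_n)_{n\in\mathbb G_r}$ of bounded measurable functions on $S^3$, $\mathbb E[\prod_{n\in\mathbb G_r}f_n(X_n,X_{2n},X_{2n+1})\mid\mathcal F_r]=\prod_{n\in\mathbb G_r}Pf_n(X_n)$. $(Y_r)$ is a Markov chain on $S$ with transition $Q$. $\Delta_i=(X_i,X_{2i},X_{2i+1})$. $\pi$ is a random permutation of $\mathbb N^*$ leaving each $\mathbb G_r$ invariant, drawn uniformly among such permutations, independently of $X$. For $f\in\mathcal B(S^3)$: $\overline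 M_{\mathbb G_r}(f)=|\mathbb G_r|^{-1}\sum_{i\in\mathbb G_r}f(\Delta_i)$, $\overline M_{\mathbb T_r}(f)=|\mathbb T_r|^{-1}\sum_{i\in\mathbb T_r}f(\Delta_i)$, $\overline M^\pi_n(f)=n^{-1}\sum_{i=1}^nf(\Delta_{\pi(i)})$. $(\mu,g)=\int gd\mu$. Conditions on $F$: (i) $F$ contains constants; (ii) $g^2\in F$ for $g\in F$; (iii) for all $x$ and $g,h\in F$, $g\otimes h\in L^1(P(x,\cdot))$ and $P(g\otimes h)\in F$; (iv) there is a probability $\mu$ on $S$ with $F\subset L^1(\mu)$ and $\lim_r\mathbb E_x[g(Y_r)]=(\mu,g)$ for all $x$, $g\in F$ (with $Y_0=x$); (v) for every $g\in F$ there is $h\in F$ with $|Q^rg|\le h$ for all $r$; (vi) $F\subset L^1(\nu)$. (H1): there is $\alpha\in(0,1)$ such that for every $g\in F$ with $(\mu,g)=0$ there is $h\in F$ with $|Q^rg(x)|\le\alpha^rh(x)$ for all $r,x$. *)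

theory Defs
  imports "HOL-Probability.Probability"
begin

definition Gen :: "nat \<Rightarrow> nat set" where
  "Gen r = {2^r ..< 2^(Suc r)}"

definition Tr :: "nat \<Rightarrow> nat set" where
  "Tr r = (\<Union>q\<le>r. Gen q)"

definition rgen :: "nat \<Rightarrow> nat" where
  "rgen n = nat \<lfloor>log 2 (real n)\<rfloor>"

text \<open>A T-transition probability P is a Markov kernel S -> S x S, modelled as
 P :: 'a => ('a x 'a) measure. Pop k x = integral of k over P(x, dy dz).\<close>

definition Pop :: "('a \<Rightarrow> ('a \<times> 'a) measure) \<Rightarrow> ('a \<times> 'a \<Rightarrow> real) \<Rightarrow> 'a \<Rightarrow> real" where
  "Pop P k x = (\<integral>p. k p \<partial>P x)"

definition P3 :: "('a \<Rightarrow> ('a \<times> 'a) measure) \<Rightarrow> ('a \<times> 'a \<times> 'a \<Rightarrow> real) \<Rightarrow> 'a \<Rightarrow> real" where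
  "P3 P f x = (\<integral>p. f (x, fst p, snd p) \<partial>P x)"

definition Qop :: "('a \<Rightarrow> ('a \<times> 'a) measure) \<Rightarrow> ('a \<Rightarrow> real) \<Rightarrow> 'a \<Rightarrow> real" where
  "Qop P g x = ((\<integral>p. g (fst p) \<partial>P x) + (\<integral>p. g (snd p) \<partial>P x)) / 2"

definition tensor :: "('a \<Rightarrow> real) \<Rightarrow> ('a \<Rightarrow> real) \<Rightarrow> 'a \<times> 'a \<Rightarrow> real" where
  "tensor g h = (\<lambda>(y, z). g y * h z)"

definition vector_subspace_B :: "('a::topological_space \<Rightarrow> real) set \<Rightarrow> bool" where
  "vector_subspace_B F \<longleftrightarrow> F \<subseteq> borel_measurable borel \<and> (\<lambda>_. 0) \<in> F \<and>
     (\<forall>g\<in>F. \<forall>h\<in>F. (\<lambda>x. g x + h x) \<in> F) \<and> (\<forall>c. \<forall>g\<in>F. (\<lambda>x. c * g x) \<in> F)"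

definition F_conditions ::
  "('a::topological_space \<Rightarrow> ('a \<times> 'a) measure) \<Rightarrow> 'a measure \<Rightarrow> 'a measure \<Rightarrow> ('a \<Rightarrow> real) set \<Rightarrow> bool" where
  "F_conditions P \<mu> \<nu> F \<longleftrightarrow>
     \<comment> \<open>(i)\<close>   (\<forall>c. (\<lambda>_. c) \<in> F) \<and>
     \<comment> \<open>(ii)\<close>  (\<forall>g\<in>F. (\<lambda>x. (g x)\<^sup>2) \<in> F) \<and>
     \<comment> \<open>(iii)\<close> (\<forall>g\<in>F. \<forall>h\<in>F. (\<forall>x. integrable (P x) (tensor g h)) \<and> Pop P (tensor g h) \<in> F) \<and>
     \<comment> \<open>(iv)\<close>  (prob_space \<mu> \<and> sets \<mu> = sets borel \<and> (\<forall>g\<in>F. integrable \<mu> g) \<and>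
               (\<forall>g\<in>F. \<forall>x. (\<lambda>r. (Qop P ^^ r) g x) \<longlonglongrightarrow> (\<integral>y. g y \<partial>\<mu>))) \<and>
     \<comment> \<open>(v)\<close>   (\<forall>g\<in>F. \<exists>h\<in>F. \<forall>r x. \<bar>(Qop P ^^ r) g x\<bar> \<le> h x) \<and>
     \<comment> \<open>(vi)\<close>  (\<forall>g\<in>F. integrable \<nu> g)"

definition H1 :: "('a \<Rightarrow> ('a \<times> 'a) measure) \<Rightarrow> 'a measure \<Rightarrow> ('a \<Rightarrow> real) set \<Rightarrow> real \<Rightarrow> bool" where
  "H1 P \<mu> F \<alpha> \<longleftrightarrow> 0 < \<alpha> \<and> \<alpha> < 1 \<and>
     (\<forall>g\<in>F. (\<integral>y. g y \<partial>\<mu>) = 0 \<longrightarrow> (\<exists>h\<in>F. \<forall>r x. \<bar>(Qop P ^^ r) g x\<bar> \<le> \<alpha> ^ r * h x))"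

definition filt :: "'b measure \<Rightarrow> (nat \<Rightarrow> 'b \<Rightarrow> 'a::topological_space) \<Rightarrow> nat \<Rightarrow> 'b measure" where
  "filt M X r = sigma (space M) (\<Union>i\<in>Tr r. {X i -` A \<inter> space M | A. A \<in> sets borel})"

definition Delta :: "(nat \<Rightarrow> 'b \<Rightarrow> 'a) \<Rightarrow> nat \<Rightarrow> 'b \<Rightarrow> 'a \<times> 'a \<times> 'a" where
  "Delta X i \<omega> = (X i \<omega>, X (2*i) \<omega>, X (2*i+1) \<omega>)"

definition bifurcating_MC ::
  "'b measure \<Rightarrow> (nat \<Rightarrow> 'b \<Rightarrow> 'a::topological_space) \<Rightarrow> 'a measure \<Rightarrow> ('a \<Rightarrow> ('a \<times> 'a) measure) \<Rightarrow> bool" where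
  "bifurcating_MC M X \<nu> P \<longleftrightarrow> prob_space M \<and>
     (\<forall>i. X i \<in> borel_measurable M) \<and>
     P \<in> borel \<rightarrow>\<^sub>M prob_algebra (borel \<Otimes>\<^sub>M borel) \<and>
     distr M borel (X 1) = \<nu> \<and>
     (\<forall>r (fs :: nat \<Rightarrow> 'a \<times> 'a \<times> 'a \<Rightarrow> real).
        (\<forall>n\<in>Gen r. fs n \<in> borel_measurable (borel \<Otimes>\<^sub>M borel \<Otimes>\<^sub>M borel) \<and> (\<exists>B. \<forall>t. \<bar>fs n t\<bar> \<le> B)) \<longrightarrow>
        (AE \<omega> in M. real_cond_exp M (filt M X r) (\<lambda>\<omega>. \<Prod>n\<in>Gen r. fs n (Delta X n \<omega>)) \<omega>
                      = (\<Prod>n\<in>Gen r. P3 P (fs n) (X n \<omega>))))"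

text \<open>pi: random permutation of N* leaving each G_r invariant, uniformly drawn
  (uniform on the finite group of such permutations of each T_R), independent of X.\<close>
definition layer_perms :: "nat \<Rightarrow> (nat \<Rightarrow> nat) set" where
  "layer_perms R = {\<sigma>. \<sigma> permutes Tr R \<and> (\<forall>q\<le>R. \<sigma> ` Gen q = Gen q)}"

definition random_layer_perm ::
  "'b measure \<Rightarrow> (nat \<Rightarrow> 'b \<Rightarrow> 'a::topological_space) \<Rightarrow> ('b \<Rightarrow> nat \<Rightarrow> nat) \<Rightarrow> bool" where
  "random_layer_perm M X \<pi> \<longleftrightarrow>
     (\<forall>\<omega>\<in>space M. \<forall>q. \<pi> \<omega> ` Gen q = Gen q) \<and>
     (\<forall>R. \<forall>\<sigma>\<in>layer_perms R.
        measure M {\<omega>\<in>space M. \<forall>i\<in>Tr R. \<pi> \<omega> i = \<sigma> i} = 1 / real (card (layer_perms R))) \<and>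
     \<pi> \<in> M \<rightarrow>\<^sub>M Pi\<^sub>M UNIV (\<lambda>_. count_space UNIV) \<and>
     (\<lambda>\<omega> i. X i \<omega>) \<in> M \<rightarrow>\<^sub>M Pi\<^sub>M UNIV (\<lambda>_. borel) \<and>
     prob_space.indep_set M
       (sigma_sets (space M) {\<pi> -` A \<inter> space M | A. A \<in> sets (Pi\<^sub>M UNIV (\<lambda>_. count_space UNIV))})
       (sigma_sets (space M) {(\<lambda>\<omega> i. X i \<omega>) -` A \<inter> space M | A. A \<in> sets (Pi\<^sub>M UNIV (\<lambda>_. borel))})"

definition MG :: "(nat \<Rightarrow> 'b \<Rightarrow> 'a) \<Rightarrow> nat \<Rightarrow> ('a \<times> 'a \<times> 'a \<Rightarrow> real) \<Rightarrow> 'b \<Rightarrow> real" where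
  "MG X r f \<omega> = (\<Sum>i\<in>Gen r. f (Delta X i \<omega>)) / real (card (Gen r))"

definition MT :: "(nat \<Rightarrow> 'b \<Rightarrow> 'a) \<Rightarrow> nat \<Rightarrow> ('a \<times> 'a \<times> 'a \<Rightarrow> real) \<Rightarrow> 'b \<Rightarrow> real" where
  "MT X r f \<omega> = (\<Sum>i\<in>Tr r. f (Delta X i \<omega>)) / real (card (Tr r))"

definition Mpi :: "(nat \<Rightarrow> 'b \<Rightarrow> 'a) \<Rightarrow> ('b \<Rightarrow> nat \<Rightarrow> nat) \<Rightarrow> nat \<Rightarrow> ('a \<times> 'a \<times> 'a \<Rightarrow> real) \<Rightarrow> 'b \<Rightarrow> real" where
  "Mpi X \<pi> n f \<omega> = (\<Sum>i\<in>{1..n}. f (Delta X (\<pi> \<omega> i) \<omega>)) / real n"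

end

theory Submission
  imports Defs
begin


lemma P3_measurable:
  assumes f[measurable]: "f \<in> borel_measurable (borel \<Otimes>\<^sub>M borel \<Otimes>\<^sub>M borel)"
    and P: "P \<in> borel \<rightarrow>\<^sub>M prob_algebra (borel \<Otimes>\<^sub>M borel)"
  shows "P3 P f \<in> borel_measurable borel"
proof -
  have Ps[measurable]: "P \<in> borel \<rightarrow>\<^sub>M subprob_algebra (borel \<Otimes>\<^sub>M borel)"
    using measurable_prob_algebraD[OF P] .
  have sp: "sets (P x) = sets (borel \<Otimes>\<^sub>M borel)" for x
    using measurable_space[OF P, of x] by (auto simp: space_prob_algebra)
  have nnm: "(\<lambda>x. \<integral>\<^sup>+p. ennreal (g (x, fst p, snd p)) \<partial>P x) \<in> borel_measurable borel"
    if [measurable]: "g \<in> borel_measurable (borel \<Otimes>\<^sub>M borel \<Otimes>\<^sub>M borel)" for g :: "_ \<Rightarrow> real"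
    by (rule nn_integral_measurable_subprob_algebra2[where N="borel \<Otimes>\<^sub>M borel"]) measurable
  have eq: "P3 P f x = (if (\<integral>\<^sup>+p. ennreal (norm (f (x, fst p, snd p))) \<partial>P x) < \<infinity>
      then enn2real (\<integral>\<^sup>+p. ennreal (f (x, fst p, snd p)) \<partial>P x)
         - enn2real (\<integral>\<^sup>+p. ennreal (- f (x, fst p, snd p)) \<partial>P x) else 0)" for x
  proof -
    have m: "(\<lambda>p. f (x, fst p, snd p)) \<in> borel_measurable (P x)"
      using measurable_cong_sets[OF sp refl] by measurable
    show ?thesis
    proof (cases "(\<integral>\<^sup>+p. ennreal (norm (f (x, fst p, snd p))) \<partial>P x) < \<infinity>")
      case True
      then have "integrable (P x) (\<lambda>p. f (x, fst p, snd p))" using m by (simp add: integrable_iff_bounded)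
      then show ?thesis using True unfolding P3_def by (simp add: real_lebesgue_integral_def)
    next
      case False
      then have "\<not> integrable (P x) (\<lambda>p. f (x, fst p, snd p))" by (simp add: integrable_iff_bounded)
      then show ?thesis using False unfolding P3_def by (simp add: not_integrable_integral_eq)
    qed
  qed
  have [measurable]: "(\<lambda>x. \<integral>\<^sup>+p. ennreal (norm (f (x, fst p, snd p))) \<partial>P x) \<in> borel_measurable borel"
    using nnm[of "\<lambda>t. norm (f t)"] by simp
  have [measurable]: "(\<lambda>x. \<integral>\<^sup>+p. ennreal (f (x, fst p, snd p)) \<partial>P x) \<in> borel_measurable borel"
    using nnm[of f] by simp
  have [measurable]: "(\<lambda>x. \<integral>\<^sup>+p. ennreal (- f (x, fst p, snd p)) \<partial>P x) \<in> borel_measurable borel"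
    using nnm[of "\<lambda>t. - f t"] by simp
  show ?thesis unfolding eq[abs_def] by measurable
qed



definition Pn :: "('a \<Rightarrow> ('a \<times> 'a) measure) \<Rightarrow> ('a \<times> 'a \<times> 'a \<Rightarrow> real) \<Rightarrow> 'a \<Rightarrow> ennreal" where
  "Pn P f x = (\<integral>\<^sup>+p. ennreal (f (x, fst p, snd p)) \<partial>P x)"

lemma SUP_trunc: "(SUP k::nat. ennreal (min (a::real) (real k))) = ennreal a"
proof (rule antisym)
  show "(SUP k::nat. ennreal (min a (real k))) \<le> ennreal a"
    by (rule SUP_least) (simp add: ennreal_leI)
  obtain k :: nat where "a \<le> real k" using real_arch_simple by blast
  then have "ennreal a = ennreal (min a (real k))" by simp
  also have "\<dots> \<le> (SUP k::nat. ennreal (min a (real k)))" by (rule SUP_upper) simp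
  finally show "ennreal a \<le> (SUP k::nat. ennreal (min a (real k)))" .
qed

lemma prod_two:
  assumes "finite G" "n \<in> G" "m \<in> G"
  shows "(\<Prod>k\<in>G. if k = n then a else if k = m then b else (1::real)) = a * (if m = n then 1 else b)"
proof -
  have "(\<Prod>k\<in>G. if k = n then a else if k = m then b else (1::real))
      = a * (\<Prod>k\<in>G - {n}. if k = n then a else if k = m then b else (1::real))"
    using assms by (subst prod.remove[of _ n]) auto
  also have "(\<Prod>k\<in>G - {n}. if k = n then a else if k = m then b else (1::real)) = (\<Prod>k\<in>G - {n}. if k = m then b else 1)"
    by (rule prod.cong) auto
  also have "\<dots> = (if m = n then 1 else b)"
    using assms by (simp add: prod.delta)
  finally show ?thesis .
qed

locale bmc =
  fixes M :: "'b measure" and X :: "nat \<Rightarrow> 'b \<Rightarrow> 'a::metric_space"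
    and \<nu> :: "'a measure" and P :: "'a \<Rightarrow> ('a \<times> 'a) measure"
  assumes BMC: "bifurcating_MC M X \<nu> P"
begin

lemma prob: "prob_space M"
  using BMC unfolding bifurcating_MC_def by auto

sublocale prob_space M by (rule prob)

lemma X_meas[measurable]: "X i \<in> borel_measurable M"
  using BMC unfolding bifurcating_MC_def by auto

lemma P_meas: "P \<in> borel \<rightarrow>\<^sub>M prob_algebra (borel \<Otimes>\<^sub>M borel)"
  using BMC unfolding bifurcating_MC_def by auto

lemma nu_def: "\<nu> = distr M borel (X 1)"
  using BMC unfolding bifurcating_MC_def by auto

lemma Delta_meas[measurable]: "Delta X i \<in> M \<rightarrow>\<^sub>M borel \<Otimes>\<^sub>M borel \<Otimes>\<^sub>M borel"
  unfolding Delta_def[abs_def] by measurable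

lemma sets_P: "sets (P x) = sets (borel \<Otimes>\<^sub>M borel)"
  using measurable_space[OF P_meas, of x] by (auto simp: space_prob_algebra)

lemma space_P: "space (P x) = UNIV"
  using sets_eq_imp_space_eq[OF sets_P[of x]] by (simp add: space_pair_measure)

lemma prob_P: "prob_space (P x)"
  using measurable_space[OF P_meas, of x] by (auto simp: space_prob_algebra)

lemma meas_P: "g \<in> borel_measurable (borel \<Otimes>\<^sub>M borel) \<Longrightarrow> g \<in> borel_measurable (P x)"
  using measurable_cong_sets[OF sets_P refl] by auto

lemma P3_meas[measurable]: "f \<in> borel_measurable (borel \<Otimes>\<^sub>M borel \<Otimes>\<^sub>M borel) \<Longrightarrow> P3 P f \<in> borel_measurable borel"
  using P3_measurable P_meas by blast

lemma Pn_meas[measurable]: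
  assumes [measurable]: "f \<in> borel_measurable (borel \<Otimes>\<^sub>M borel \<Otimes>\<^sub>M borel)"
  shows "Pn P f \<in> borel_measurable borel"
proof -
  have Ps[measurable]: "P \<in> borel \<rightarrow>\<^sub>M subprob_algebra (borel \<Otimes>\<^sub>M borel)"
    using measurable_prob_algebraD[OF P_meas] .
  show ?thesis unfolding Pn_def[abs_def]
    by (rule nn_integral_measurable_subprob_algebra2[where N="borel \<Otimes>\<^sub>M borel"]) measurable
qed

lemma filt_subalg: "sigma_finite_subalgebra M (filt M X r)"
proof -
  have gen: "(\<Union>i\<in>Tr r. {X i -` A \<inter> space M | A. A \<in> sets borel}) \<subseteq> sets M"
    by auto
  have "subalgebra M (filt M X r)"
    unfolding subalgebra_def filt_def
    using gen by (auto simp: space_measure_of_conv sets_measure_of_conv intro!: sets.sigma_sets_subset)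
  then interpret finite_measure_subalgebra M "filt M X r"
    by unfold_locales
  show ?thesis by (rule finite_measure_subalgebra_is_sigma_finite) unfold_locales
qed

lemma bmc_integral:
  assumes fs: "\<forall>n\<in>Gen r. fs n \<in> borel_measurable (borel \<Otimes>\<^sub>M borel \<Otimes>\<^sub>M borel) \<and> (\<exists>B. \<forall>t. \<bar>fs n t\<bar> \<le> B)"
  shows "(\<integral>\<omega>. (\<Prod>n\<in>Gen r. fs n (Delta X n \<omega>)) \<partial>M) = (\<integral>\<omega>. (\<Prod>n\<in>Gen r. P3 P (fs n) (X n \<omega>)) \<partial>M)"
proof -
  have AE: "AE \<omega> in M. real_cond_exp M (filt M X r) (\<lambda>\<omega>. \<Prod>n\<in>Gen r. fs n (Delta X n \<omega>)) \<omega>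
                      = (\<Prod>n\<in>Gen r. P3 P (fs n) (X n \<omega>))"
    using BMC fs unfolding bifurcating_MC_def by blast
  interpret S: sigma_finite_subalgebra M "filt M X r" by (rule filt_subalg)
  obtain B where B: "\<And>n t. n \<in> Gen r \<Longrightarrow> \<bar>fs n t\<bar> \<le> B n"
    using fs by metis
  have fm[measurable]: "\<And>n. n \<in> Gen r \<Longrightarrow> fs n \<in> borel_measurable (borel \<Otimes>\<^sub>M borel \<Otimes>\<^sub>M borel)"
    using fs by auto
  have meas: "(\<lambda>\<omega>. \<Prod>n\<in>Gen r. fs n (Delta X n \<omega>)) \<in> borel_measurable M"
    by (rule borel_measurable_prod) (use fm in measurable)
  have int: "integrable M (\<lambda>\<omega>. \<Prod>n\<in>Gen r. fs n (Delta X n \<omega>))"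
  proof (rule integrable_const_bound[where B="\<Prod>n\<in>Gen r. B n"])
    show "AE x in M. norm (\<Prod>n\<in>Gen r. fs n (Delta X n x)) \<le> (\<Prod>n\<in>Gen r. B n)"
      by (intro AE_I2) (auto simp: abs_prod intro!: prod_mono B)
  qed (rule meas)
  have m2: "(\<lambda>\<omega>. \<Prod>n\<in>Gen r. P3 P (fs n) (X n \<omega>)) \<in> borel_measurable M"
    by (rule borel_measurable_prod) (use fm in measurable)
  have "(\<integral>\<omega>. (\<Prod>n\<in>Gen r. fs n (Delta X n \<omega>)) \<partial>M)
      = (\<integral>\<omega>. real_cond_exp M (filt M X r) (\<lambda>\<omega>. \<Prod>n\<in>Gen r. fs n (Delta X n \<omega>)) \<omega> \<partial>M)"
    using S.real_cond_exp_int(2)[OF int] by simp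
  also have "\<dots> = (\<integral>\<omega>. (\<Prod>n\<in>Gen r. P3 P (fs n) (X n \<omega>)) \<partial>M)"
    apply (rule integral_cong_AE)
    apply (rule measurable_from_subalg[OF S.subalg]) apply simp
    apply (rule m2)
    apply (rule AE)
    done
  finally show ?thesis .
qed

end


context bmc begin

lemma Pn_eq_P3:
  assumes [measurable]: "f \<in> borel_measurable (borel \<Otimes>\<^sub>M borel \<Otimes>\<^sub>M borel)"
    and nn: "\<And>t. 0 \<le> f t" and int: "integrable (P x) (\<lambda>p. f (x, fst p, snd p))"
  shows "Pn P f x = ennreal (P3 P f x)"
  unfolding Pn_def P3_def
  by (rule nn_integral_eq_integral[OF int]) (simp add: nn)

lemma int_P_bounded:
  assumes [measurable]: "f \<in> borel_measurable (borel \<Otimes>\<^sub>M borel \<Otimes>\<^sub>M borel)"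
    and b: "\<And>t. \<bar>f t\<bar> \<le> (B::real)"
  shows "integrable (P x) (\<lambda>p. f (x, fst p, snd p))"
proof -
  interpret Px: prob_space "P x" by (rule prob_P)
  have "(\<lambda>p. f (x, fst p, snd p)) \<in> borel_measurable (borel \<Otimes>\<^sub>M borel)" by measurable
  then have m: "(\<lambda>p. f (x, fst p, snd p)) \<in> borel_measurable (P x)" by (rule meas_P)
  show ?thesis by (rule Px.integrable_const_bound[where B=B]) (use b m in auto)
qed

lemma P3_const: "P3 P (\<lambda>_. c) x = c"
proof -
  interpret Px: prob_space "P x" by (rule prob_P)
  show ?thesis unfolding P3_def by (simp add: Px.prob_space)
qed

lemma Pn_const: "Pn P (\<lambda>_. 1) x = 1"
proof -
  interpret Px: prob_space "P x" by (rule prob_P)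
  show ?thesis unfolding Pn_def by (simp add: Px.emeasure_space_1)
qed

lemma bnd2: "0 \<le> a \<Longrightarrow> a \<le> B \<Longrightarrow> 0 \<le> b \<Longrightarrow> b \<le> B \<Longrightarrow>
   norm ((a::real) * (if c then 1 else b)) \<le> B * max 1 B"
proof -
  assume h: "0 \<le> a" "a \<le> B" "0 \<le> b" "b \<le> B"
  have "B \<le> B * max 1 B" using h by (simp add: mult_le_cancel_left1)
  moreover have "a * b \<le> B * max 1 B" using h by (intro mult_mono) auto
  ultimately show ?thesis using h by (auto simp: abs_mult)
qed

lemma nn_pair0:
  assumes n: "n \<in> Gen r" and m: "m \<in> Gen r"
    and [measurable]: "f \<in> borel_measurable (borel \<Otimes>\<^sub>M borel \<Otimes>\<^sub>M borel)"
    and [measurable]: "g \<in> borel_measurable (borel \<Otimes>\<^sub>M borel \<Otimes>\<^sub>M borel)"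
    and fb: "\<And>t. 0 \<le> f t \<and> f t \<le> B" and gb: "\<And>t. 0 \<le> g t \<and> g t \<le> B"
  shows "(\<integral>\<^sup>+\<omega>. ennreal (f (Delta X n \<omega>)) * (if m = n then 1 else ennreal (g (Delta X m \<omega>))) \<partial>M)
       = (\<integral>\<^sup>+\<omega>. Pn P f (X n \<omega>) * (if m = n then 1 else Pn P g (X m \<omega>)) \<partial>M)"
proof -
  have fin: "finite (Gen r)" by (simp add: Gen_def)
  define fs where "fs = (\<lambda>k. if k = n then f else if k = m then g else (\<lambda>_. 1::real))"
  have fs: "\<forall>k\<in>Gen r. fs k \<in> borel_measurable (borel \<Otimes>\<^sub>M borel \<Otimes>\<^sub>M borel) \<and> (\<exists>B. \<forall>t. \<bar>fs k t\<bar> \<le> B)"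
  proof
    fix k assume "k \<in> Gen r"
    have a: "\<bar>f t\<bar> \<le> max B 1" "\<bar>g t\<bar> \<le> max B 1" "\<bar>1::real\<bar> \<le> max B 1" for t
      using fb[of t] gb[of t] by auto
    show "fs k \<in> borel_measurable (borel \<Otimes>\<^sub>M borel \<Otimes>\<^sub>M borel) \<and> (\<exists>B. \<forall>t. \<bar>fs k t\<bar> \<le> B)"
      unfolding fs_def using a by (auto intro!: exI[of _ "max B 1"])
  qed
  have e1: "(\<Prod>k\<in>Gen r. fs k (Delta X k \<omega>)) = f (Delta X n \<omega>) * (if m = n then 1 else g (Delta X m \<omega>))" for \<omega>
  proof -
    have "(\<Prod>k\<in>Gen r. fs k (Delta X k \<omega>)) = (\<Prod>k\<in>Gen r. if k = n then f (Delta X n \<omega>) else if k = m then g (Delta X m \<omega>) else 1)"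
      by (rule prod.cong) (auto simp: fs_def)
    then show ?thesis using prod_two[OF fin n m] by simp
  qed
  have e2: "(\<Prod>k\<in>Gen r. P3 P (fs k) (X k \<omega>)) = P3 P f (X n \<omega>) * (if m = n then 1 else P3 P g (X m \<omega>))" for \<omega>
  proof -
    have "(\<Prod>k\<in>Gen r. P3 P (fs k) (X k \<omega>)) = (\<Prod>k\<in>Gen r. if k = n then P3 P f (X n \<omega>) else if k = m then P3 P g (X m \<omega>) else 1)"
      by (rule prod.cong) (auto simp: fs_def P3_const)
    then show ?thesis using prod_two[OF fin n m] by simp
  qed
  have eq: "(\<integral>\<omega>. f (Delta X n \<omega>) * (if m = n then 1 else g (Delta X m \<omega>)) \<partial>M)
      = (\<integral>\<omega>. P3 P f (X n \<omega>) * (if m = n then 1 else P3 P g (X m \<omega>)) \<partial>M)"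
    using bmc_integral[OF fs] unfolding e1 e2 .
  have intf: "integrable (P x) (\<lambda>p. f (x, fst p, snd p))" for x
    by (rule int_P_bounded[where B=B]) (use fb in auto)
  have intg: "integrable (P x) (\<lambda>p. g (x, fst p, snd p))" for x
    by (rule int_P_bounded[where B=B]) (use gb in auto)
  have Pf: "Pn P f x = ennreal (P3 P f x)" for x by (rule Pn_eq_P3[OF _ _ intf]) (use fb in auto)
  have Pg: "Pn P g x = ennreal (P3 P g x)" for x by (rule Pn_eq_P3[OF _ _ intg]) (use gb in auto)
  have P3f: "0 \<le> P3 P f x \<and> P3 P f x \<le> B" for x
  proof -
    interpret Px: prob_space "P x" by (rule prob_P)
    have "P3 P f x \<le> (\<integral>p. B \<partial>P x)" unfolding P3_def
      by (rule integral_mono[OF intf]) (use fb in auto)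
    then show ?thesis using fb unfolding P3_def by (auto intro: integral_nonneg simp: Px.prob_space)
  qed
  have P3g: "0 \<le> P3 P g x \<and> P3 P g x \<le> B" for x
  proof -
    interpret Px: prob_space "P x" by (rule prob_P)
    have "P3 P g x \<le> (\<integral>p. B \<partial>P x)" unfolding P3_def
      by (rule integral_mono[OF intg]) (use gb in auto)
    then show ?thesis using gb unfolding P3_def by (auto intro: integral_nonneg simp: Px.prob_space)
  qed
  have B0: "0 \<le> B" using fb[of undefined] by auto
  have i1: "integrable M (\<lambda>\<omega>. f (Delta X n \<omega>) * (if m = n then 1 else g (Delta X m \<omega>)))"
    by (rule integrable_const_bound[where B="B * max 1 B"])
       (use fb gb in \<open>intro AE_I2 bnd2, auto\<close>)
  have i2: "integrable M (\<lambda>\<omega>. P3 P f (X n \<omega>) * (if m = n then 1 else P3 P g (X m \<omega>)))"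
    by (rule integrable_const_bound[where B="B * max 1 B"])
       (use P3f P3g in \<open>intro AE_I2 bnd2, auto\<close>)
  have "(\<integral>\<^sup>+\<omega>. ennreal (f (Delta X n \<omega>)) * (if m = n then 1 else ennreal (g (Delta X m \<omega>))) \<partial>M)
      = (\<integral>\<^sup>+\<omega>. ennreal (f (Delta X n \<omega>) * (if m = n then 1 else g (Delta X m \<omega>))) \<partial>M)"
    by (rule nn_integral_cong) (use fb gb in \<open>auto simp: ennreal_mult\<close>)
  also have "\<dots> = ennreal (\<integral>\<omega>. f (Delta X n \<omega>) * (if m = n then 1 else g (Delta X m \<omega>)) \<partial>M)"
    by (rule nn_integral_eq_integral[OF i1]) (use fb gb in auto)
  also note eq
  also have "ennreal (\<integral>\<omega>. P3 P f (X n \<omega>) * (if m = n then 1 else P3 P g (X m \<omega>)) \<partial>M)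
      = (\<integral>\<^sup>+\<omega>. ennreal (P3 P f (X n \<omega>) * (if m = n then 1 else P3 P g (X m \<omega>))) \<partial>M)"
    by (rule nn_integral_eq_integral[OF i2, symmetric]) (use P3f P3g in auto)
  also have "\<dots> = (\<integral>\<^sup>+\<omega>. Pn P f (X n \<omega>) * (if m = n then 1 else Pn P g (X m \<omega>)) \<partial>M)"
    by (rule nn_integral_cong) (use P3f P3g in \<open>auto simp: ennreal_mult Pf Pg\<close>)
  finally show ?thesis .
qed

end


context bmc begin

lemma Pn_mono:
  assumes "\<And>t. f t \<le> g t"
  shows "Pn P f x \<le> Pn P g x"
  unfolding Pn_def by (rule nn_integral_mono) (simp add: assms ennreal_leI)

lemma Pn_SUP:
  assumes [measurable]: "f \<in> borel_measurable (borel \<Otimes>\<^sub>M borel \<Otimes>\<^sub>M borel)"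
  shows "(SUP k::nat. Pn P (\<lambda>t. min (f t) (real k)) x) = Pn P f x"
proof -
  have m: "(\<lambda>p. ennreal (min (f (x, fst p, snd p)) (real k))) \<in> borel_measurable (P x)" for k
    by (rule meas_P) measurable
  have inc: "incseq (\<lambda>k p. ennreal (min (f (x, fst p, snd p)) (real k)))"
    by (auto simp: incseq_def le_fun_def intro!: ennreal_leI)
  have "Pn P f x = (\<integral>\<^sup>+p. (SUP k::nat. ennreal (min (f (x, fst p, snd p)) (real k))) \<partial>P x)"
    unfolding Pn_def SUP_trunc ..
  also have "\<dots> = (SUP k::nat. Pn P (\<lambda>t. min (f t) (real k)) x)"
    unfolding Pn_def by (rule nn_integral_monotone_convergence_SUP[OF inc m])
  finally show ?thesis ..
qed

lemma nn_pair1: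
  assumes n: "n \<in> Gen r" and m: "m \<in> Gen r"
    and [measurable]: "f \<in> borel_measurable (borel \<Otimes>\<^sub>M borel \<Otimes>\<^sub>M borel)"
    and [measurable]: "g \<in> borel_measurable (borel \<Otimes>\<^sub>M borel \<Otimes>\<^sub>M borel)"
    and fb: "\<And>t. 0 \<le> f t" and gb: "\<And>t. 0 \<le> g t \<and> g t \<le> B"
  shows "(\<integral>\<^sup>+\<omega>. ennreal (f (Delta X n \<omega>)) * (if m = n then 1 else ennreal (g (Delta X m \<omega>))) \<partial>M)
       = (\<integral>\<^sup>+\<omega>. Pn P f (X n \<omega>) * (if m = n then 1 else Pn P g (X m \<omega>)) \<partial>M)"
proof -
  define fk where "fk = (\<lambda>k::nat. \<lambda>t. min (f t) (real k))"
  have [measurable]: "fk k \<in> borel_measurable (borel \<Otimes>\<^sub>M borel \<Otimes>\<^sub>M borel)" for k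
    unfolding fk_def by measurable
  have eqk: "(\<integral>\<^sup>+\<omega>. ennreal (fk k (Delta X n \<omega>)) * (if m = n then 1 else ennreal (g (Delta X m \<omega>))) \<partial>M)
       = (\<integral>\<^sup>+\<omega>. Pn P (fk k) (X n \<omega>) * (if m = n then 1 else Pn P g (X m \<omega>)) \<partial>M)" for k
    by (rule nn_pair0[OF n m, where B="max (real k) B"]) (use fb gb in \<open>auto simp: fk_def le_max_iff_disj\<close>)
  have inc1: "incseq (\<lambda>k \<omega>. ennreal (fk k (Delta X n \<omega>)) * (if m = n then 1 else ennreal (g (Delta X m \<omega>))))"
    by (auto simp: incseq_def le_fun_def fk_def intro!: mult_right_mono ennreal_leI)
  have inc2: "incseq (\<lambda>k \<omega>. Pn P (fk k) (X n \<omega>) * (if m = n then 1 else Pn P g (X m \<omega>)))"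
    by (auto simp: incseq_def le_fun_def fk_def intro!: mult_right_mono Pn_mono)
  have "(\<integral>\<^sup>+\<omega>. ennreal (f (Delta X n \<omega>)) * (if m = n then 1 else ennreal (g (Delta X m \<omega>))) \<partial>M)
      = (\<integral>\<^sup>+\<omega>. (SUP k. ennreal (fk k (Delta X n \<omega>)) * (if m = n then 1 else ennreal (g (Delta X m \<omega>)))) \<partial>M)"
    unfolding fk_def SUP_mult_right_ennreal[symmetric] SUP_trunc ..
  also have "\<dots> = (SUP k. (\<integral>\<^sup>+\<omega>. ennreal (fk k (Delta X n \<omega>)) * (if m = n then 1 else ennreal (g (Delta X m \<omega>))) \<partial>M))"
    by (rule nn_integral_monotone_convergence_SUP[OF inc1]) measurable
  also have "\<dots> = (SUP k. (\<integral>\<^sup>+\<omega>. Pn P (fk k) (X n \<omega>) * (if m = n then 1 else Pn P g (X m \<omega>)) \<partial>M))"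
    unfolding eqk ..
  also have "\<dots> = (\<integral>\<^sup>+\<omega>. (SUP k. Pn P (fk k) (X n \<omega>) * (if m = n then 1 else Pn P g (X m \<omega>))) \<partial>M)"
    by (rule nn_integral_monotone_convergence_SUP[OF inc2, symmetric]) measurable
  also have "\<dots> = (\<integral>\<^sup>+\<omega>. Pn P f (X n \<omega>) * (if m = n then 1 else Pn P g (X m \<omega>)) \<partial>M)"
    unfolding SUP_mult_right_ennreal[symmetric] fk_def Pn_SUP[OF assms(3)] ..
  finally show ?thesis .
qed

lemma nn_single:
  assumes n: "n \<in> Gen r"
    and [measurable]: "f \<in> borel_measurable (borel \<Otimes>\<^sub>M borel \<Otimes>\<^sub>M borel)"
    and fb: "\<And>t. 0 \<le> f t"
  shows "(\<integral>\<^sup>+\<omega>. ennreal (f (Delta X n \<omega>)) \<partial>M) = (\<integral>\<^sup>+\<omega>. Pn P f (X n \<omega>) \<partial>M)"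
  using nn_pair1[OF n n assms(2) _ fb, of "\<lambda>_. 0" 0] by simp

lemma nn_pair:
  assumes n: "n \<in> Gen r" and m: "m \<in> Gen r" and nm: "n \<noteq> m"
    and [measurable]: "f \<in> borel_measurable (borel \<Otimes>\<^sub>M borel \<Otimes>\<^sub>M borel)"
    and [measurable]: "g \<in> borel_measurable (borel \<Otimes>\<^sub>M borel \<Otimes>\<^sub>M borel)"
    and fb: "\<And>t. 0 \<le> f t" and gb: "\<And>t. 0 \<le> g t"
  shows "(\<integral>\<^sup>+\<omega>. ennreal (f (Delta X n \<omega>)) * ennreal (g (Delta X m \<omega>)) \<partial>M)
       = (\<integral>\<^sup>+\<omega>. Pn P f (X n \<omega>) * Pn P g (X m \<omega>) \<partial>M)"
proof -
  define gk where "gk = (\<lambda>k::nat. \<lambda>t. min (g t) (real k))"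
  have [measurable]: "gk k \<in> borel_measurable (borel \<Otimes>\<^sub>M borel \<Otimes>\<^sub>M borel)" for k
    unfolding gk_def by measurable
  have eqk: "(\<integral>\<^sup>+\<omega>. ennreal (f (Delta X n \<omega>)) * ennreal (gk k (Delta X m \<omega>)) \<partial>M)
       = (\<integral>\<^sup>+\<omega>. Pn P f (X n \<omega>) * Pn P (gk k) (X m \<omega>) \<partial>M)" for k
    using nn_pair1[OF n m, of f "gk k" "real k"] nm fb gb by (auto simp: gk_def)
  have inc1: "incseq (\<lambda>k \<omega>. ennreal (f (Delta X n \<omega>)) * ennreal (gk k (Delta X m \<omega>)))"
    by (auto simp: incseq_def le_fun_def gk_def intro!: mult_left_mono ennreal_leI)
  have inc2: "incseq (\<lambda>k \<omega>. Pn P f (X n \<omega>) * Pn P (gk k) (X m \<omega>))"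
    by (auto simp: incseq_def le_fun_def gk_def intro!: mult_left_mono Pn_mono)
  have "(\<integral>\<^sup>+\<omega>. ennreal (f (Delta X n \<omega>)) * ennreal (g (Delta X m \<omega>)) \<partial>M)
      = (\<integral>\<^sup>+\<omega>. (SUP k. ennreal (f (Delta X n \<omega>)) * ennreal (gk k (Delta X m \<omega>))) \<partial>M)"
    unfolding gk_def SUP_mult_left_ennreal[symmetric] SUP_trunc ..
  also have "\<dots> = (SUP k. (\<integral>\<^sup>+\<omega>. ennreal (f (Delta X n \<omega>)) * ennreal (gk k (Delta X m \<omega>)) \<partial>M))"
    by (rule nn_integral_monotone_convergence_SUP[OF inc1]) measurable
  also have "\<dots> = (SUP k. (\<integral>\<^sup>+\<omega>. Pn P f (X n \<omega>) * Pn P (gk k) (X m \<omega>) \<partial>M))"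
    unfolding eqk ..
  also have "\<dots> = (\<integral>\<^sup>+\<omega>. (SUP k. Pn P f (X n \<omega>) * Pn P (gk k) (X m \<omega>)) \<partial>M)"
    by (rule nn_integral_monotone_convergence_SUP[OF inc2, symmetric]) measurable
  also have "\<dots> = (\<integral>\<^sup>+\<omega>. Pn P f (X n \<omega>) * Pn P g (X m \<omega>) \<partial>M)"
    unfolding SUP_mult_left_ennreal[symmetric] gk_def Pn_SUP[OF assms(5)] ..
  finally show ?thesis .
qed

end


lemma prob_sq_le:
  fixes g :: "_ \<Rightarrow> real"
  assumes "prob_space N" "integrable N g" "integrable N (\<lambda>x. (g x)\<^sup>2)"
  shows "(\<integral>x. g x \<partial>N)\<^sup>2 \<le> (\<integral>x. (g x)\<^sup>2 \<partial>N)"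
  using prob_space.variance_eq[OF assms] prob_space.variance_positive[OF assms(1), of g] by simp

context bmc begin

definition pint :: "('a \<times> 'a \<times> 'a \<Rightarrow> real) \<Rightarrow> bool" where
  "pint f \<longleftrightarrow> f \<in> borel_measurable (borel \<Otimes>\<^sub>M borel \<Otimes>\<^sub>M borel) \<and> (\<forall>x. integrable (P x) (\<lambda>p. f (x, fst p, snd p)))"

lemma pint_meas[measurable_dest]: "pint f \<Longrightarrow> f \<in> borel_measurable (borel \<Otimes>\<^sub>M borel \<Otimes>\<^sub>M borel)"
  by (simp add: pint_def)

lemma pint_int: "pint f \<Longrightarrow> integrable (P x) (\<lambda>p. f (x, fst p, snd p))"
  by (simp add: pint_def)

lemma pint_abs: "pint f \<Longrightarrow> pint (\<lambda>t. \<bar>f t\<bar>)"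
  unfolding pint_def by auto

lemma pint_max0: "pint f \<Longrightarrow> pint (\<lambda>t. max (f t) 0)"
  unfolding pint_def by auto

lemma pint_max0m: "pint f \<Longrightarrow> pint (\<lambda>t. max (- f t) 0)"
  unfolding pint_def by auto

lemma pint_diff: "pint f \<Longrightarrow> pint g \<Longrightarrow> pint (\<lambda>t. f t - g t)"
  unfolding pint_def by auto

lemma pint_add: "pint f \<Longrightarrow> pint g \<Longrightarrow> pint (\<lambda>t. f t + g t)"
  unfolding pint_def by auto

lemma pint_cmult: "pint f \<Longrightarrow> pint (\<lambda>t. c * f t)"
  unfolding pint_def by auto

lemma P3_diff: "pint f \<Longrightarrow> pint g \<Longrightarrow> P3 P (\<lambda>t. f t - g t) x = P3 P f x - P3 P g x"
  unfolding P3_def pint_def by (simp add: Bochner_Integration.integral_diff)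

lemma P3_add: "pint f \<Longrightarrow> pint g \<Longrightarrow> P3 P (\<lambda>t. f t + g t) x = P3 P f x + P3 P g x"
  unfolding P3_def pint_def by (simp add: Bochner_Integration.integral_add)

lemma P3_cmult: "P3 P (\<lambda>t. c * f t) x = c * P3 P f x"
  unfolding P3_def by simp

lemma P3_mono: "pint f \<Longrightarrow> pint g \<Longrightarrow> (\<And>t. f t \<le> g t) \<Longrightarrow> P3 P f x \<le> P3 P g x"
  unfolding P3_def pint_def by (auto intro!: integral_mono)

lemma P3_nonneg: "(\<And>t. 0 \<le> f t) \<Longrightarrow> 0 \<le> P3 P f x"
  unfolding P3_def by (auto intro!: integral_nonneg)

lemma P3_abs: "pint f \<Longrightarrow> \<bar>P3 P f x\<bar> \<le> P3 P (\<lambda>t. \<bar>f t\<bar>) x"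
  unfolding P3_def pint_def using integral_abs_bound by (metis real_norm_def)

lemma Pn_P3: "pint f \<Longrightarrow> (\<And>t. 0 \<le> f t) \<Longrightarrow> Pn P f x = ennreal (P3 P f x)"
  by (rule Pn_eq_P3) (auto simp: pint_def)

lemma P3_sq_le: "pint f \<Longrightarrow> pint (\<lambda>t. (f t)\<^sup>2) \<Longrightarrow> (P3 P f x)\<^sup>2 \<le> P3 P (\<lambda>t. (f t)\<^sup>2) x"
  unfolding P3_def pint_def using prob_sq_le[OF prob_P] by auto

lemma single_nn:
  assumes n: "n \<in> Gen r" and f: "pint f" and nn: "\<And>t. 0 \<le> f t"
    and i: "integrable M (\<lambda>\<omega>. P3 P f (X n \<omega>))"
  shows "integrable M (\<lambda>\<omega>. f (Delta X n \<omega>))" "(\<integral>\<omega>. f (Delta X n \<omega>) \<partial>M) = (\<integral>\<omega>. P3 P f (X n \<omega>) \<partial>M)"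
proof -
  have [measurable]: "f \<in> borel_measurable (borel \<Otimes>\<^sub>M borel \<Otimes>\<^sub>M borel)" using f by (simp add: pint_def)
  have e: "(\<integral>\<^sup>+\<omega>. ennreal (f (Delta X n \<omega>)) \<partial>M) = (\<integral>\<^sup>+\<omega>. ennreal (P3 P f (X n \<omega>)) \<partial>M)"
  proof -
    have "(\<integral>\<^sup>+\<omega>. ennreal (f (Delta X n \<omega>)) \<partial>M) = (\<integral>\<^sup>+\<omega>. Pn P f (X n \<omega>) \<partial>M)"
      by (rule nn_single[OF n]) (use nn in auto)
    then show ?thesis using Pn_P3[OF f nn] by simp
  qed
  also have "\<dots> = ennreal (\<integral>\<omega>. P3 P f (X n \<omega>) \<partial>M)"
    by (rule nn_integral_eq_integral[OF i]) (auto intro: P3_nonneg nn)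
  finally have e2: "(\<integral>\<^sup>+\<omega>. ennreal (f (Delta X n \<omega>)) \<partial>M) = ennreal (\<integral>\<omega>. P3 P f (X n \<omega>) \<partial>M)" .
  show int: "integrable M (\<lambda>\<omega>. f (Delta X n \<omega>))"
    by (rule integrableI_nonneg) (use nn e2 in auto)
  have "ennreal (\<integral>\<omega>. f (Delta X n \<omega>) \<partial>M) = ennreal (\<integral>\<omega>. P3 P f (X n \<omega>) \<partial>M)"
    using nn_integral_eq_integral[OF int] nn e2 by simp
  then show "(\<integral>\<omega>. f (Delta X n \<omega>) \<partial>M) = (\<integral>\<omega>. P3 P f (X n \<omega>) \<partial>M)"
  proof (subst (asm) ennreal_inj)
    show "0 \<le> (\<integral>\<omega>. f (Delta X n \<omega>) \<partial>M)" by (rule Bochner_Integration.integral_nonneg) (use nn in auto)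
    show "0 \<le> (\<integral>\<omega>. P3 P f (X n \<omega>) \<partial>M)" by (rule Bochner_Integration.integral_nonneg) (use nn P3_nonneg in auto)
  qed
qed

lemma single_signed:
  assumes n: "n \<in> Gen r" and f: "pint f"
    and i: "integrable M (\<lambda>\<omega>. P3 P (\<lambda>t. \<bar>f t\<bar>) (X n \<omega>))"
  shows "integrable M (\<lambda>\<omega>. f (Delta X n \<omega>))" "(\<integral>\<omega>. f (Delta X n \<omega>) \<partial>M) = (\<integral>\<omega>. P3 P f (X n \<omega>) \<partial>M)"
proof -
  have [measurable]: "f \<in> borel_measurable (borel \<Otimes>\<^sub>M borel \<Otimes>\<^sub>M borel)" using f by (simp add: pint_def)
  define fp where "fp = (\<lambda>t. max (f t) 0)"
  define fm where "fm = (\<lambda>t. max (- f t) 0)"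
  have pp: "pint fp" "pint fm" using f pint_max0 pint_max0m unfolding fp_def fm_def by auto
  have ip: "integrable M (\<lambda>\<omega>. P3 P fp (X n \<omega>))"
    apply (rule Bochner_Integration.integrable_bound[OF i])
    apply (use pp in measurable)
    apply (intro AE_I2)
    using P3_mono[OF pp(1) pint_abs[OF f]] P3_nonneg[of fp] unfolding fp_def
    by (auto simp: abs_of_nonneg[OF P3_nonneg[of "\<lambda>t. \<bar>f t\<bar>"]])
  have im: "integrable M (\<lambda>\<omega>. P3 P fm (X n \<omega>))"
    apply (rule Bochner_Integration.integrable_bound[OF i])
    apply (use pp in measurable)
    apply (intro AE_I2)
    using P3_mono[OF pp(2) pint_abs[OF f]] P3_nonneg[of fm] unfolding fm_def
    by (auto simp: abs_of_nonneg[OF P3_nonneg[of "\<lambda>t. \<bar>f t\<bar>"]])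
  note sp = single_nn[OF n pp(1) _ ip] single_nn[OF n pp(2) _ im]
  have fe: "f t = fp t - fm t" for t unfolding fp_def fm_def by auto
  have fe2: "(\<lambda>\<omega>. f (Delta X n \<omega>)) = (\<lambda>\<omega>. fp (Delta X n \<omega>) - fm (Delta X n \<omega>))"
    using fe by auto
  show "integrable M (\<lambda>\<omega>. f (Delta X n \<omega>))"
    unfolding fe2 using sp by (auto simp: fp_def fm_def)
  have "P3 P f x = P3 P fp x - P3 P fm x" for x
  proof -
    have "f = (\<lambda>t. fp t - fm t)" by (rule ext) (simp add: fe)
    then show ?thesis using P3_diff[OF pp] by simp
  qed
  then show "(\<integral>\<omega>. f (Delta X n \<omega>) \<partial>M) = (\<integral>\<omega>. P3 P f (X n \<omega>) \<partial>M)"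
    unfolding fe2 using sp ip im by (simp add: fp_def fm_def)
qed

end


context bmc begin

lemma pair_nn:
  assumes n: "n \<in> Gen r" and m: "m \<in> Gen r" and nm: "n \<noteq> m"
    and f: "pint f" and g: "pint g" and fn: "\<And>t. 0 \<le> f t" and gn: "\<And>t. 0 \<le> g t"
    and i: "integrable M (\<lambda>\<omega>. P3 P f (X n \<omega>) * P3 P g (X m \<omega>))"
  shows "integrable M (\<lambda>\<omega>. f (Delta X n \<omega>) * g (Delta X m \<omega>))"
    "(\<integral>\<omega>. f (Delta X n \<omega>) * g (Delta X m \<omega>) \<partial>M) = (\<integral>\<omega>. P3 P f (X n \<omega>) * P3 P g (X m \<omega>) \<partial>M)"
proof -
  have [measurable]: "f \<in> borel_measurable (borel \<Otimes>\<^sub>M borel \<Otimes>\<^sub>M borel)" using f by (simp add: pint_def)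
  have [measurable]: "g \<in> borel_measurable (borel \<Otimes>\<^sub>M borel \<Otimes>\<^sub>M borel)" using g by (simp add: pint_def)
  have "(\<integral>\<^sup>+\<omega>. ennreal (f (Delta X n \<omega>) * g (Delta X m \<omega>)) \<partial>M)
      = (\<integral>\<^sup>+\<omega>. ennreal (f (Delta X n \<omega>)) * ennreal (g (Delta X m \<omega>)) \<partial>M)"
    by (rule nn_integral_cong) (simp add: ennreal_mult fn gn)
  also have "\<dots> = (\<integral>\<^sup>+\<omega>. Pn P f (X n \<omega>) * Pn P g (X m \<omega>) \<partial>M)"
    by (rule nn_pair[OF n m nm]) (use fn gn in auto)
  also have "\<dots> = (\<integral>\<^sup>+\<omega>. ennreal (P3 P f (X n \<omega>) * P3 P g (X m \<omega>)) \<partial>M)"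
    by (rule nn_integral_cong) (simp add: ennreal_mult P3_nonneg fn gn Pn_P3[OF f fn] Pn_P3[OF g gn])
  also have "\<dots> = ennreal (\<integral>\<omega>. P3 P f (X n \<omega>) * P3 P g (X m \<omega>) \<partial>M)"
    by (rule nn_integral_eq_integral[OF i]) (auto intro!: mult_nonneg_nonneg P3_nonneg fn gn)
  finally have e2: "(\<integral>\<^sup>+\<omega>. ennreal (f (Delta X n \<omega>) * g (Delta X m \<omega>)) \<partial>M) = ennreal (\<integral>\<omega>. P3 P f (X n \<omega>) * P3 P g (X m \<omega>) \<partial>M)" .
  show int: "integrable M (\<lambda>\<omega>. f (Delta X n \<omega>) * g (Delta X m \<omega>))"
    by (rule integrableI_nonneg) (use fn gn e2 in auto)
  have "ennreal (\<integral>\<omega>. f (Delta X n \<omega>) * g (Delta X m \<omega>) \<partial>M) = ennreal (\<integral>\<omega>. P3 P f (X n \<omega>) * P3 P g (X m \<omega>) \<partial>M)"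
    using nn_integral_eq_integral[OF int] fn gn e2 by simp
  then show "(\<integral>\<omega>. f (Delta X n \<omega>) * g (Delta X m \<omega>) \<partial>M) = (\<integral>\<omega>. P3 P f (X n \<omega>) * P3 P g (X m \<omega>) \<partial>M)"
  proof (subst (asm) ennreal_inj)
    show "0 \<le> (\<integral>\<omega>. f (Delta X n \<omega>) * g (Delta X m \<omega>) \<partial>M)" by (rule Bochner_Integration.integral_nonneg) (use fn gn in auto)
    show "0 \<le> (\<integral>\<omega>. P3 P f (X n \<omega>) * P3 P g (X m \<omega>) \<partial>M)" by (rule Bochner_Integration.integral_nonneg) (use fn gn P3_nonneg in auto)
  qed
qed

lemma pair_signed:
  assumes n: "n \<in> Gen r" and m: "m \<in> Gen r" and nm: "n \<noteq> m"
    and f: "pint f" and g: "pint g"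
    and i: "integrable M (\<lambda>\<omega>. P3 P (\<lambda>t. \<bar>f t\<bar>) (X n \<omega>) * P3 P (\<lambda>t. \<bar>g t\<bar>) (X m \<omega>))"
  shows "integrable M (\<lambda>\<omega>. f (Delta X n \<omega>) * g (Delta X m \<omega>))"
    "(\<integral>\<omega>. f (Delta X n \<omega>) * g (Delta X m \<omega>) \<partial>M) = (\<integral>\<omega>. P3 P f (X n \<omega>) * P3 P g (X m \<omega>) \<partial>M)"
proof -
  have [measurable]: "f \<in> borel_measurable (borel \<Otimes>\<^sub>M borel \<Otimes>\<^sub>M borel)" using f by (simp add: pint_def)
  have [measurable]: "g \<in> borel_measurable (borel \<Otimes>\<^sub>M borel \<Otimes>\<^sub>M borel)" using g by (simp add: pint_def)
  define fp where "fp = (\<lambda>t. max (f t) 0)"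
  define fm where "fm = (\<lambda>t. max (- f t) 0)"
  define gp where "gp = (\<lambda>t. max (g t) 0)"
  define gm where "gm = (\<lambda>t. max (- g t) 0)"
  have pp: "pint fp" "pint fm" "pint gp" "pint gm"
    using f g pint_max0 pint_max0m unfolding fp_def fm_def gp_def gm_def by auto
  have nn: "\<And>t. 0 \<le> fp t" "\<And>t. 0 \<le> fm t" "\<And>t. 0 \<le> gp t" "\<And>t. 0 \<le> gm t"
    unfolding fp_def fm_def gp_def gm_def by auto
  have bf: "P3 P h x \<le> P3 P (\<lambda>t. \<bar>f t\<bar>) x" if "h = fp \<or> h = fm" for h x
    using that P3_mono[OF pp(1) pint_abs[OF f]] P3_mono[OF pp(2) pint_abs[OF f]]
    unfolding fp_def fm_def by auto
  have bg: "P3 P h x \<le> P3 P (\<lambda>t. \<bar>g t\<bar>) x" if "h = gp \<or> h = gm" for h x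
    using that P3_mono[OF pp(3) pint_abs[OF g]] P3_mono[OF pp(4) pint_abs[OF g]]
    unfolding gp_def gm_def by auto
  have ii: "integrable M (\<lambda>\<omega>. P3 P h (X n \<omega>) * P3 P k (X m \<omega>))"
    if h: "h = fp \<or> h = fm" and k: "k = gp \<or> k = gm" for h k
  proof (rule Bochner_Integration.integrable_bound[OF i])
    have "pint h" "pint k" using h k pp by auto
    then show "(\<lambda>\<omega>. P3 P h (X n \<omega>) * P3 P k (X m \<omega>)) \<in> borel_measurable M" by measurable
    have hn: "\<And>t. 0 \<le> h t" "\<And>t. 0 \<le> k t" using h k nn by auto
    show "AE x in M. norm (P3 P h (X n x) * P3 P k (X m x))
      \<le> norm (P3 P (\<lambda>t. \<bar>f t\<bar>) (X n x) * P3 P (\<lambda>t. \<bar>g t\<bar>) (X m x))"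
      using bf[OF h] bg[OF k] P3_nonneg[of h, OF hn(1)] P3_nonneg[of k, OF hn(2)] P3_nonneg[of "\<lambda>t. \<bar>f t\<bar>"]
      by (intro AE_I2) (auto simp: abs_mult intro!: mult_mono order.trans[OF _ abs_ge_self])
  qed
  have pr: "integrable M (\<lambda>\<omega>. h (Delta X n \<omega>) * k (Delta X m \<omega>)) \<and>
     (\<integral>\<omega>. h (Delta X n \<omega>) * k (Delta X m \<omega>) \<partial>M) = (\<integral>\<omega>. P3 P h (X n \<omega>) * P3 P k (X m \<omega>) \<partial>M)"
    if h: "h = fp \<or> h = fm" and k: "k = gp \<or> k = gm" for h k
  proof -
    have "pint h" "pint k" using h k pp by auto
    moreover have "\<And>t. 0 \<le> h t" "\<And>t. 0 \<le> k t" using h k nn by auto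
    ultimately show ?thesis using pair_nn[OF n m nm _ _ _ _ ii[OF h k]] by auto
  qed
  have fe: "f = (\<lambda>t. fp t - fm t)" "g = (\<lambda>t. gp t - gm t)" unfolding fp_def fm_def gp_def gm_def by auto
  have e1: "f (Delta X n \<omega>) * g (Delta X m \<omega>) = fp (Delta X n \<omega>) * gp (Delta X m \<omega>) - fp (Delta X n \<omega>) * gm (Delta X m \<omega>)
      - fm (Delta X n \<omega>) * gp (Delta X m \<omega>) + fm (Delta X n \<omega>) * gm (Delta X m \<omega>)" for \<omega>
    by (subst fe(1), subst fe(2)) (simp add: algebra_simps)
  have p3f: "P3 P f x = P3 P fp x - P3 P fm x" for x by (subst fe(1), rule P3_diff[OF pp(1,2)])
  have p3g: "P3 P g x = P3 P gp x - P3 P gm x" for x by (subst fe(2), rule P3_diff[OF pp(3,4)])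
  have e2: "P3 P f (X n \<omega>) * P3 P g (X m \<omega>) = P3 P fp (X n \<omega>) * P3 P gp (X m \<omega>) - P3 P fp (X n \<omega>) * P3 P gm (X m \<omega>)
      - P3 P fm (X n \<omega>) * P3 P gp (X m \<omega>) + P3 P fm (X n \<omega>) * P3 P gm (X m \<omega>)" for \<omega>
    unfolding p3f p3g by (simp add: algebra_simps)
  note a = pr[of fp gp] pr[of fp gm] pr[of fm gp] pr[of fm gm]
  note b = ii[of fp gp] ii[of fp gm] ii[of fm gp] ii[of fm gm]
  show "integrable M (\<lambda>\<omega>. f (Delta X n \<omega>) * g (Delta X m \<omega>))"
    unfolding e1 using a by auto
  show "(\<integral>\<omega>. f (Delta X n \<omega>) * g (Delta X m \<omega>) \<partial>M) = (\<integral>\<omega>. P3 P f (X n \<omega>) * P3 P g (X m \<omega>) \<partial>M)"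
    unfolding e1 e2 using a b by simp
qed

end


context bmc begin

lemma P3_abs_sq: "pint f \<Longrightarrow> pint (\<lambda>t. (f t)\<^sup>2) \<Longrightarrow> (P3 P (\<lambda>t. \<bar>f t\<bar>) x)\<^sup>2 \<le> P3 P (\<lambda>t. (f t)\<^sup>2) x"
  using P3_sq_le[of "\<lambda>t. \<bar>f t\<bar>"] pint_abs[of f] by simp

lemma gen_aux:
  assumes f: "pint f" and f2: "pint (\<lambda>t. (f t)\<^sup>2)"
    and i2: "\<forall>n\<in>Gen r. integrable M (\<lambda>\<omega>. P3 P (\<lambda>t. (f t)\<^sup>2) (X n \<omega>))"
    and n: "n \<in> Gen r" and m: "m \<in> Gen r"
  shows "integrable M (\<lambda>\<omega>. P3 P (\<lambda>t. \<bar>f t\<bar>) (X n \<omega>) * P3 P (\<lambda>t. \<bar>f t\<bar>) (X m \<omega>))"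
    "integrable M (\<lambda>\<omega>. P3 P f (X n \<omega>) * P3 P f (X m \<omega>))"
    "integrable M (\<lambda>\<omega>. P3 P (\<lambda>t. \<bar>f t\<bar>) (X n \<omega>))"
proof -
  have [measurable]: "f \<in> borel_measurable (borel \<Otimes>\<^sub>M borel \<Otimes>\<^sub>M borel)" using f by (simp add: pint_def)
  have S: "integrable M (\<lambda>\<omega>. (P3 P (\<lambda>t. (f t)\<^sup>2) (X n \<omega>) + P3 P (\<lambda>t. (f t)\<^sup>2) (X m \<omega>)) / 2)"
    using i2 n m by auto
  have key: "\<bar>a * b\<bar> \<le> (A + B) / 2" if "a\<^sup>2 \<le> A" "b\<^sup>2 \<le> B" for a b A B :: real
  proof -
    have "\<bar>a * b\<bar> \<le> (a\<^sup>2 + b\<^sup>2) / 2"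
      using sum_squares_bound[of "\<bar>a\<bar>" "\<bar>b\<bar>"] by (simp add: abs_mult power2_eq_square)
    moreover have "(a\<^sup>2 + b\<^sup>2) / 2 \<le> (A + B) / 2" by (intro divide_right_mono add_mono that) simp
    ultimately show ?thesis by (rule order.trans)
  qed
  show "integrable M (\<lambda>\<omega>. P3 P (\<lambda>t. \<bar>f t\<bar>) (X n \<omega>) * P3 P (\<lambda>t. \<bar>f t\<bar>) (X m \<omega>))"
    apply (rule Bochner_Integration.integrable_bound[OF S])
     apply measurable
    apply (intro AE_I2)
    using key[OF P3_abs_sq[OF f f2] P3_abs_sq[OF f f2]] P3_nonneg[of "\<lambda>t. (f t)\<^sup>2"]
    by (simp add: add_nonneg_nonneg)
  show "integrable M (\<lambda>\<omega>. P3 P f (X n \<omega>) * P3 P f (X m \<omega>))"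
    apply (rule Bochner_Integration.integrable_bound[OF S])
     apply measurable
    apply (intro AE_I2)
    using key[OF P3_sq_le[OF f f2] P3_sq_le[OF f f2]] P3_nonneg[of "\<lambda>t. (f t)\<^sup>2"]
    by (simp add: add_nonneg_nonneg)
  have S1: "integrable M (\<lambda>\<omega>. (1 + P3 P (\<lambda>t. (f t)\<^sup>2) (X n \<omega>)) / 2)"
    using i2 n by auto
  have key1: "\<bar>a\<bar> \<le> (1 + A) / 2" if "a\<^sup>2 \<le> A" for a A :: real
  proof -
    have "\<bar>a\<bar> \<le> (1 + a\<^sup>2) / 2"
      using sum_squares_bound[of 1 "\<bar>a\<bar>"] by (simp add: power2_eq_square)
    moreover have "(1 + a\<^sup>2) / 2 \<le> (1 + A) / 2" by (intro divide_right_mono add_mono that) simp_all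
    ultimately show ?thesis by (rule order.trans)
  qed
  show "integrable M (\<lambda>\<omega>. P3 P (\<lambda>t. \<bar>f t\<bar>) (X n \<omega>))"
    apply (rule Bochner_Integration.integrable_bound[OF S1])
     apply measurable
    apply (intro AE_I2)
    using key1[OF P3_abs_sq[OF f f2]] P3_nonneg[of "\<lambda>t. (f t)\<^sup>2"]
    by simp
qed

lemma gen_mean:
  assumes f: "pint f"
    and i: "\<forall>n\<in>Gen r. integrable M (\<lambda>\<omega>. P3 P (\<lambda>t. \<bar>f t\<bar>) (X n \<omega>))"
  shows "integrable M (\<lambda>\<omega>. \<Sum>n\<in>Gen r. f (Delta X n \<omega>))"
    "(\<integral>\<omega>. (\<Sum>n\<in>Gen r. f (Delta X n \<omega>)) \<partial>M) = (\<integral>\<omega>. (\<Sum>n\<in>Gen r. P3 P f (X n \<omega>)) \<partial>M)"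
proof -
  note s = single_signed[OF _ f]
  have ip: "integrable M (\<lambda>\<omega>. P3 P f (X n \<omega>))" if "n \<in> Gen r" for n
  proof (rule Bochner_Integration.integrable_bound[OF i[rule_format, OF that]])
    show "(\<lambda>\<omega>. P3 P f (X n \<omega>)) \<in> borel_measurable M" using f by measurable
    show "AE x in M. norm (P3 P f (X n x)) \<le> norm (P3 P (\<lambda>t. \<bar>f t\<bar>) (X n x))"
      using P3_abs[OF f] by (intro AE_I2) (auto intro: order.trans[OF _ abs_ge_self])
  qed
  show "integrable M (\<lambda>\<omega>. \<Sum>n\<in>Gen r. f (Delta X n \<omega>))"
    using s i by auto
  show "(\<integral>\<omega>. (\<Sum>n\<in>Gen r. f (Delta X n \<omega>)) \<partial>M) = (\<integral>\<omega>. (\<Sum>n\<in>Gen r. P3 P f (X n \<omega>)) \<partial>M)"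
    using s i ip by (simp add: Bochner_Integration.integral_sum)
qed

lemma gen_sq:
  assumes f: "pint f" and f2: "pint (\<lambda>t. (f t)\<^sup>2)"
    and i2: "\<forall>n\<in>Gen r. integrable M (\<lambda>\<omega>. P3 P (\<lambda>t. (f t)\<^sup>2) (X n \<omega>))"
  shows "integrable M (\<lambda>\<omega>. (\<Sum>n\<in>Gen r. f (Delta X n \<omega>))\<^sup>2)"
    "(\<integral>\<omega>. (\<Sum>n\<in>Gen r. f (Delta X n \<omega>))\<^sup>2 \<partial>M) =
       (\<integral>\<omega>. (\<Sum>n\<in>Gen r. P3 P f (X n \<omega>))\<^sup>2 \<partial>M)
       + (\<Sum>n\<in>Gen r. (\<integral>\<omega>. P3 P (\<lambda>t. (f t)\<^sup>2) (X n \<omega>) - (P3 P f (X n \<omega>))\<^sup>2 \<partial>M))"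
proof -
  have [measurable]: "f \<in> borel_measurable (borel \<Otimes>\<^sub>M borel \<Otimes>\<^sub>M borel)" using f by (simp add: pint_def)
  note A = gen_aux[OF f f2 i2]
  have fin: "finite (Gen r)" by (simp add: Gen_def)
  have sq: "(\<Sum>n\<in>G. a n)\<^sup>2 = (\<Sum>n\<in>G. \<Sum>m\<in>G. a n * a m)" for G and a :: "nat \<Rightarrow> real"
    by (simp add: power2_eq_square sum_product)
  have tY: "integrable M (\<lambda>\<omega>. f (Delta X n \<omega>) * f (Delta X m \<omega>)) \<and>
     (\<integral>\<omega>. f (Delta X n \<omega>) * f (Delta X m \<omega>) \<partial>M) =
       (\<integral>\<omega>. P3 P f (X n \<omega>) * P3 P f (X m \<omega>) \<partial>M) +
       (if n = m then (\<integral>\<omega>. P3 P (\<lambda>t. (f t)\<^sup>2) (X n \<omega>) - (P3 P f (X n \<omega>))\<^sup>2 \<partial>M) else 0)"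
    if n: "n \<in> Gen r" and m: "m \<in> Gen r" for n m
  proof (cases "n = m")
    case True
    have s: "integrable M (\<lambda>\<omega>. (f (Delta X n \<omega>))\<^sup>2)"
      "(\<integral>\<omega>. (f (Delta X n \<omega>))\<^sup>2 \<partial>M) = (\<integral>\<omega>. P3 P (\<lambda>t. (f t)\<^sup>2) (X n \<omega>) \<partial>M)"
      using single_nn[OF n f2 _ i2[rule_format, OF n]] by auto
    have "integrable M (\<lambda>\<omega>. P3 P f (X n \<omega>) * P3 P f (X n \<omega>))" using A(2)[OF n n] .
    then show ?thesis using True s i2 n by (simp add: power2_eq_square Bochner_Integration.integral_diff)
  next
    case False
    then show ?thesis using pair_signed[OF n m False f f A(1)[OF n m]] by simp
  qed
  have tZ: "integrable M (\<lambda>\<omega>. P3 P f (X n \<omega>) * P3 P f (X m \<omega>))" if "n \<in> Gen r" "m \<in> Gen r" for n m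
    using A(2) that .
  show "integrable M (\<lambda>\<omega>. (\<Sum>n\<in>Gen r. f (Delta X n \<omega>))\<^sup>2)"
    unfolding sq using tY by auto
  have "(\<integral>\<omega>. (\<Sum>n\<in>Gen r. f (Delta X n \<omega>))\<^sup>2 \<partial>M)
      = (\<Sum>n\<in>Gen r. \<Sum>m\<in>Gen r. (\<integral>\<omega>. f (Delta X n \<omega>) * f (Delta X m \<omega>) \<partial>M))"
    unfolding sq using tY by (simp add: Bochner_Integration.integral_sum)
  also have "\<dots> = (\<Sum>n\<in>Gen r. \<Sum>m\<in>Gen r. (\<integral>\<omega>. P3 P f (X n \<omega>) * P3 P f (X m \<omega>) \<partial>M) +
       (if n = m then (\<integral>\<omega>. P3 P (\<lambda>t. (f t)\<^sup>2) (X n \<omega>) - (P3 P f (X n \<omega>))\<^sup>2 \<partial>M) else 0))"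
    using tY by (intro sum.cong refl) auto
  also have "\<dots> = (\<Sum>n\<in>Gen r. \<Sum>m\<in>Gen r. (\<integral>\<omega>. P3 P f (X n \<omega>) * P3 P f (X m \<omega>) \<partial>M))
       + (\<Sum>n\<in>Gen r. (\<integral>\<omega>. P3 P (\<lambda>t. (f t)\<^sup>2) (X n \<omega>) - (P3 P f (X n \<omega>))\<^sup>2 \<partial>M))"
    using fin by (simp add: sum.distrib)
  also have "(\<Sum>n\<in>Gen r. \<Sum>m\<in>Gen r. (\<integral>\<omega>. P3 P f (X n \<omega>) * P3 P f (X m \<omega>) \<partial>M))
      = (\<integral>\<omega>. (\<Sum>n\<in>Gen r. P3 P f (X n \<omega>))\<^sup>2 \<partial>M)"
    unfolding sq using tZ by (simp add: Bochner_Integration.integral_sum)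
  finally show "(\<integral>\<omega>. (\<Sum>n\<in>Gen r. f (Delta X n \<omega>))\<^sup>2 \<partial>M) =
       (\<integral>\<omega>. (\<Sum>n\<in>Gen r. P3 P f (X n \<omega>))\<^sup>2 \<partial>M)
       + (\<Sum>n\<in>Gen r. (\<integral>\<omega>. P3 P (\<lambda>t. (f t)\<^sup>2) (X n \<omega>) - (P3 P f (X n \<omega>))\<^sup>2 \<partial>M))" .
qed

end


definition L1 :: "('a \<Rightarrow> real) \<Rightarrow> 'a \<times> 'a \<times> 'a \<Rightarrow> real" where
  "L1 g t = g (fst (snd t))"
definition L2 :: "('a \<Rightarrow> real) \<Rightarrow> 'a \<times> 'a \<times> 'a \<Rightarrow> real" where
  "L2 g t = g (snd (snd t))"
definition psi :: "('a \<Rightarrow> real) \<Rightarrow> 'a \<times> 'a \<times> 'a \<Rightarrow> real" where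
  "psi g t = g (fst (snd t)) + g (snd (snd t))"

locale bmcF = bmc M X \<nu> P
  for M :: "'b measure" and X :: "nat \<Rightarrow> 'b \<Rightarrow> 'a::metric_space"
    and \<nu> :: "'a measure" and P :: "'a \<Rightarrow> ('a \<times> 'a) measure" +
  fixes \<mu> :: "'a measure" and F :: "('a \<Rightarrow> real) set"
  assumes subsp: "vector_subspace_B F" and condF: "F_conditions P \<mu> \<nu> F"
begin

abbreviation Q where "Q \<equiv> Qop P"

lemma F_meas: "g \<in> F \<Longrightarrow> g \<in> borel_measurable borel"
  using subsp unfolding vector_subspace_B_def by auto

lemma F_add: "g \<in> F \<Longrightarrow> h \<in> F \<Longrightarrow> (\<lambda>x. g x + h x) \<in> F"
  using subsp unfolding vector_subspace_B_def by auto

lemma F_cmult: "g \<in> F \<Longrightarrow> (\<lambda>x. c * g x) \<in> F"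
  using subsp unfolding vector_subspace_B_def by auto

lemma F_diff: "g \<in> F \<Longrightarrow> h \<in> F \<Longrightarrow> (\<lambda>x. g x - h x) \<in> F"
  using F_add[of g "\<lambda>x. (-1) * h x"] F_cmult[of h "-1"] by simp

lemma F_const: "(\<lambda>_. c) \<in> F"
  using condF unfolding F_conditions_def by auto

lemma F_sq: "g \<in> F \<Longrightarrow> (\<lambda>x. (g x)\<^sup>2) \<in> F"
  using condF unfolding F_conditions_def by auto

lemma F_tensor_int: "g \<in> F \<Longrightarrow> h \<in> F \<Longrightarrow> integrable (P x) (tensor g h)"
  using condF unfolding F_conditions_def by auto

lemma F_tensor: "g \<in> F \<Longrightarrow> h \<in> F \<Longrightarrow> Pop P (tensor g h) \<in> F"
  using condF unfolding F_conditions_def by auto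

lemma mu_prob: "prob_space \<mu>"
  using condF unfolding F_conditions_def by auto

lemma F_int_mu: "g \<in> F \<Longrightarrow> integrable \<mu> g"
  using condF unfolding F_conditions_def by auto

lemma F_int_nu: "g \<in> F \<Longrightarrow> integrable \<nu> g"
  using condF unfolding F_conditions_def by auto

lemma F_dom: "g \<in> F \<Longrightarrow> \<exists>h\<in>F. \<forall>r x. \<bar>(Q ^^ r) g x\<bar> \<le> h x"
  using condF unfolding F_conditions_def by auto

lemma int_fst: "g \<in> F \<Longrightarrow> integrable (P x) (\<lambda>p. g (fst p))"
  using F_tensor_int[of g "\<lambda>_. 1" x] F_const[of 1] by (simp add: tensor_def split_beta')

lemma int_snd: "g \<in> F \<Longrightarrow> integrable (P x) (\<lambda>p. g (snd p))"
  using F_tensor_int[of "\<lambda>_. 1" g x] F_const[of 1] by (simp add: tensor_def split_beta')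

lemma int_prod: "g \<in> F \<Longrightarrow> h \<in> F \<Longrightarrow> integrable (P x) (\<lambda>p. g (fst p) * h (snd p))"
  using F_tensor_int[of g h x] by (simp add: tensor_def split_beta')

lemma Pop_fst: "Pop P (tensor g (\<lambda>_. 1)) x = (\<integral>p. g (fst p) \<partial>P x)"
  by (simp add: Pop_def tensor_def case_prod_beta)

lemma Pop_snd: "Pop P (tensor (\<lambda>_. 1) g) x = (\<integral>p. g (snd p) \<partial>P x)"
  by (simp add: Pop_def tensor_def case_prod_beta)

lemma Q_eq: "Q g = (\<lambda>x. (Pop P (tensor g (\<lambda>_. 1)) x + Pop P (tensor (\<lambda>_. 1) g) x) / 2)"
  by (rule ext) (simp add: Qop_def Pop_fst Pop_snd)

lemma F_Q: "g \<in> F \<Longrightarrow> Q g \<in> F"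
  unfolding Q_eq
  using F_cmult[OF F_add[OF F_tensor[OF _ F_const] F_tensor[OF F_const]], of g g "1/2"]
  by (simp add: field_simps)

lemma F_Qpow: "g \<in> F \<Longrightarrow> (Q ^^ r) g \<in> F"
  by (induction r) (auto intro: F_Q)

lemma Q_lin: "g \<in> F \<Longrightarrow> h \<in> F \<Longrightarrow> Q (\<lambda>x. a * g x + b * h x) = (\<lambda>x. a * Q g x + b * Q h x)"
  unfolding Qop_def using int_fst int_snd
  by (auto simp: Bochner_Integration.integral_add field_simps intro!: ext)

lemma Qpow_lin: "g \<in> F \<Longrightarrow> h \<in> F \<Longrightarrow> (Q ^^ r) (\<lambda>x. a * g x + b * h x) = (\<lambda>x. a * (Q ^^ r) g x + b * (Q ^^ r) h x)"
  by (induction r) (auto simp: Q_lin F_Qpow)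

lemma Q_nonneg: "(\<And>x. 0 \<le> g x) \<Longrightarrow> 0 \<le> Q g x"
  unfolding Qop_def by (auto intro!: Bochner_Integration.integral_nonneg add_nonneg_nonneg)

lemma Qpow_nonneg: "(\<And>x. 0 \<le> g x) \<Longrightarrow> 0 \<le> (Q ^^ r) g x"
proof (induction r arbitrary: x)
  case (Suc r) then show ?case by (simp add: Q_nonneg)
qed simp

lemma Qpow_mono: "g \<in> F \<Longrightarrow> h \<in> F \<Longrightarrow> (\<And>x. g x \<le> h x) \<Longrightarrow> (Q ^^ r) g x \<le> (Q ^^ r) h x"
  using Qpow_lin[of h g r 1 "-1"] Qpow_nonneg[of "\<lambda>x. 1 * h x + (-1) * g x" r x] by (auto dest: fun_cong[where x=x])

lemma F_L1: "g \<in> F \<Longrightarrow> pint (L1 g)"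
  unfolding pint_def L1_def using F_meas int_fst by (auto simp: case_prod_beta)

end


lemma Gen_0: "Gen 0 = {1}" by (auto simp: Gen_def)

lemma finite_Gen[simp]: "finite (Gen r)" by (simp add: Gen_def)

lemma card_Gen: "card (Gen r) = 2 ^ r" by (simp add: Gen_def)

lemma Gen_Suc_split: "Gen (Suc r) = (\<lambda>n. 2 * n) ` Gen r \<union> (\<lambda>n. 2 * n + 1) ` Gen r"
proof (rule set_eqI)
  fix i
  show "i \<in> Gen (Suc r) \<longleftrightarrow> i \<in> (\<lambda>n. 2 * n) ` Gen r \<union> (\<lambda>n. 2 * n + 1) ` Gen r"
  proof
    assume i: "i \<in> Gen (Suc r)"
    have "i div 2 \<in> Gen r" using i by (auto simp: Gen_def less_mult_imp_div_less div_le_mono2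
         intro: div_greater_zero_iff[THEN iffD2])
    moreover have "i = 2 * (i div 2) \<or> i = 2 * (i div 2) + 1" by presburger
    ultimately show "i \<in> (\<lambda>n. 2 * n) ` Gen r \<union> (\<lambda>n. 2 * n + 1) ` Gen r" by (metis UnI1 UnI2 image_eqI)
  next
    assume "i \<in> (\<lambda>n. 2 * n) ` Gen r \<union> (\<lambda>n. 2 * n + 1) ` Gen r"
    then show "i \<in> Gen (Suc r)" by (auto simp: Gen_def)
  qed
qed

lemma sum_Gen_Suc: "(\<Sum>i\<in>Gen (Suc r). a i) = (\<Sum>n\<in>Gen r. a (2 * n) + a (2 * n + 1))"
proof -
  have d: "(\<lambda>n. 2 * n) ` Gen r \<inter> (\<lambda>n. 2 * n + 1) ` Gen r = {}" by auto presburger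
  have "(\<Sum>i\<in>Gen (Suc r). a i) = (\<Sum>i\<in>(\<lambda>n. 2 * n) ` Gen r. a i) + (\<Sum>i\<in>(\<lambda>n. 2 * n + 1) ` Gen r. a i)"
    unfolding Gen_Suc_split by (rule sum.union_disjoint) (use d in auto)
  also have "\<dots> = (\<Sum>n\<in>Gen r. a (2 * n)) + (\<Sum>n\<in>Gen r. a (2 * n + 1))"
    by (subst sum.reindex, simp add: inj_on_def, subst sum.reindex, simp add: inj_on_def, simp)
  finally show ?thesis by (simp add: sum.distrib)
qed

context bmcF begin

lemma psi_pint: "g \<in> F \<Longrightarrow> pint (psi g)"
  unfolding pint_def psi_def using F_meas int_fst int_snd by auto

lemma psi_sq_pint: "g \<in> F \<Longrightarrow> pint (\<lambda>t. (psi g t)\<^sup>2)"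
proof -
  assume g: "g \<in> F"
  have e: "(\<lambda>p. (g (fst p) + g (snd p))\<^sup>2) = (\<lambda>p. (g (fst p))\<^sup>2 + 2 * (g (fst p) * g (snd p)) + (g (snd p))\<^sup>2)"
    by (simp add: power2_sum fun_eq_iff)
  show ?thesis unfolding pint_def
    using F_meas[OF g] int_fst[OF F_sq[OF g]] int_snd[OF F_sq[OF g]] int_prod[OF g g]
    by (auto simp: e psi_def)
qed

lemma P3_psi: "g \<in> F \<Longrightarrow> P3 P (psi g) = (\<lambda>x. 2 * Q g x)"
  unfolding P3_def psi_def Qop_def using int_fst int_snd
  by (auto intro!: ext simp: Bochner_Integration.integral_add)

lemma P3_psi_sq: "g \<in> F \<Longrightarrow> P3 P (\<lambda>t. (psi g t)\<^sup>2) = (\<lambda>x. 2 * Q (\<lambda>y. (g y)\<^sup>2) x + 2 * Pop P (tensor g g) x)"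
proof (rule ext)
  fix x assume g: "g \<in> F"
  have e: "(psi g (x, p))\<^sup>2 = (g (fst p))\<^sup>2 + 2 * (g (fst p) * g (snd p)) + (g (snd p))\<^sup>2" for p
    by (simp add: psi_def power2_sum)
  note i = int_fst[OF F_sq[OF g]] int_snd[OF F_sq[OF g]] int_prod[OF g g]
  show "P3 P (\<lambda>t. (psi g t)\<^sup>2) x = 2 * Q (\<lambda>y. (g y)\<^sup>2) x + 2 * Pop P (tensor g g) x"
    unfolding P3_def Qop_def Pop_def using i
    by (simp add: e Bochner_Integration.integral_add tensor_def split_beta' algebra_simps)
qed

lemma F_P3_psi_sq: "g \<in> F \<Longrightarrow> P3 P (\<lambda>t. (psi g t)\<^sup>2) \<in> F"
  unfolding P3_psi_sq
  by (intro F_add F_cmult F_Q F_sq F_tensor)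

lemma psi_Delta: "psi g (Delta X n \<omega>) = g (X (2 * n) \<omega>) + g (X (2 * n + 1) \<omega>)"
  by (simp add: psi_def Delta_def)

lemma F_int: "h \<in> F \<Longrightarrow> n \<in> Gen r \<Longrightarrow> integrable M (\<lambda>\<omega>. h (X n \<omega>))"
proof (induction r arbitrary: h n)
  case 0
  then have n: "n = 1" by (simp add: Gen_0)
  have [measurable]: "h \<in> borel_measurable borel" using F_meas[OF 0(1)] .
  have "integrable (distr M borel (X 1)) h" using F_int_nu[OF 0(1)] nu_def by simp
  then show ?case unfolding n by (subst (asm) integrable_distr_eq) auto
next
  case (Suc r)
  note h = Suc.prems(1)
  define k where "k = (\<lambda>x. (1 + (h x)\<^sup>2) / 2)"
  have kF: "k \<in> F" unfolding k_def using F_cmult[OF F_add[OF F_const F_sq[OF h]], of "1/2" 1]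
    by (simp add: field_simps)
  have hk: "\<bar>h x\<bar> \<le> k x" for x
    using sum_squares_bound[of 1 "\<bar>h x\<bar>"] by (simp add: k_def power2_eq_square)
  have [measurable]: "h \<in> borel_measurable borel" using F_meas[OF h] .
  have L1p: "pint (\<lambda>t. h (fst (snd t)))" "pint (\<lambda>t. h (snd (snd t)))"
    unfolding pint_def using int_fst[OF h] int_snd[OF h] by auto
  have QkF: "Pop P (tensor k (\<lambda>_. 1)) \<in> F" "Pop P (tensor (\<lambda>_. 1) k) \<in> F"
    using F_tensor[OF kF F_const] F_tensor[OF F_const kF] by auto
  obtain m where m: "m \<in> Gen r" "n = 2 * m \<or> n = 2 * m + 1"
    using Suc.prems(2) unfolding Gen_Suc_split by auto
  have i1: "integrable M (\<lambda>\<omega>. P3 P (\<lambda>t. \<bar>h (fst (snd t))\<bar>) (X m \<omega>))"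
  proof (rule Bochner_Integration.integrable_bound[OF Suc.IH[OF QkF(1) m(1)]])
    show "(\<lambda>\<omega>. P3 P (\<lambda>t. \<bar>h (fst (snd t))\<bar>) (X m \<omega>)) \<in> borel_measurable M" by measurable
    have "P3 P (\<lambda>t. \<bar>h (fst (snd t))\<bar>) x \<le> Pop P (tensor k (\<lambda>_. 1)) x" for x
      unfolding Pop_fst P3_def using int_fst[OF h] int_fst[OF kF] hk
      by (intro integral_mono) auto
    then show "AE x in M. norm (P3 P (\<lambda>t. \<bar>h (fst (snd t))\<bar>) (X m x)) \<le> norm (Pop P (tensor k (\<lambda>_. 1)) (X m x))"
      by (intro AE_I2) (auto simp: P3_nonneg intro: order.trans[OF _ abs_ge_self])
  qed
  have i2: "integrable M (\<lambda>\<omega>. P3 P (\<lambda>t. \<bar>h (snd (snd t))\<bar>) (X m \<omega>))"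
  proof (rule Bochner_Integration.integrable_bound[OF Suc.IH[OF QkF(2) m(1)]])
    show "(\<lambda>\<omega>. P3 P (\<lambda>t. \<bar>h (snd (snd t))\<bar>) (X m \<omega>)) \<in> borel_measurable M" by measurable
    have "P3 P (\<lambda>t. \<bar>h (snd (snd t))\<bar>) x \<le> Pop P (tensor (\<lambda>_. 1) k) x" for x
      unfolding Pop_snd P3_def using int_snd[OF h] int_snd[OF kF] hk
      by (intro integral_mono) auto
    then show "AE x in M. norm (P3 P (\<lambda>t. \<bar>h (snd (snd t))\<bar>) (X m x)) \<le> norm (Pop P (tensor (\<lambda>_. 1) k) (X m x))"
      by (intro AE_I2) (auto simp: P3_nonneg intro: order.trans[OF _ abs_ge_self])
  qed
  show ?case using m(2)
  proof
    assume "n = 2 * m"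
    then show ?thesis using single_signed(1)[OF m(1) L1p(1) i1] by (simp add: Delta_def)
  next
    assume "n = 2 * m + 1"
    then show ?thesis using single_signed(1)[OF m(1) L1p(2) i2] by (simp add: Delta_def)
  qed
qed

end


definition Asum :: "(nat \<Rightarrow> 'b \<Rightarrow> 'a) \<Rightarrow> nat \<Rightarrow> ('a \<Rightarrow> real) \<Rightarrow> 'b \<Rightarrow> real" where
  "Asum X r g \<omega> = (\<Sum>i\<in>Gen r. g (X i \<omega>))"

context bmcF begin

definition Rf :: "('a \<Rightarrow> real) \<Rightarrow> 'a \<Rightarrow> real" where
  "Rf g = (\<lambda>x. 2 * Q (\<lambda>y. (g y)\<^sup>2) x + 2 * Pop P (tensor g g) x - 4 * (Q g x)\<^sup>2)"

lemma F_Rf: "g \<in> F \<Longrightarrow> Rf g \<in> F"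
  unfolding Rf_def by (intro F_diff F_add F_cmult F_Q F_sq F_tensor)

lemma Asum_Suc: "Asum X (Suc r) g \<omega> = (\<Sum>n\<in>Gen r. psi g (Delta X n \<omega>))"
  unfolding Asum_def sum_Gen_Suc psi_Delta ..

lemma Asum_int: "g \<in> F \<Longrightarrow> integrable M (Asum X r g)"
  unfolding Asum_def[abs_def] using F_int by auto

lemma psi_i2: "g \<in> F \<Longrightarrow> \<forall>n\<in>Gen r. integrable M (\<lambda>\<omega>. P3 P (\<lambda>t. (psi g t)\<^sup>2) (X n \<omega>))"
  using F_int[OF F_P3_psi_sq] by auto

lemma Asum_mean: "g \<in> F \<Longrightarrow> (\<integral>\<omega>. Asum X r g \<omega> \<partial>M) = 2 ^ r * (\<integral>x. (Q ^^ r) g x \<partial>\<nu>)"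
proof (induction r arbitrary: g)
  case 0
  have [measurable]: "g \<in> borel_measurable borel" using F_meas[OF 0] .
  show ?case unfolding Asum_def Gen_0 nu_def by (simp add: integral_distr)
next
  case (Suc r)
  note g = Suc.prems
  have i: "\<forall>n\<in>Gen r. integrable M (\<lambda>\<omega>. P3 P (\<lambda>t. \<bar>psi g t\<bar>) (X n \<omega>))"
    using gen_aux(3)[OF psi_pint[OF g] psi_sq_pint[OF g] psi_i2[OF g]] by auto
  have "(\<integral>\<omega>. Asum X (Suc r) g \<omega> \<partial>M) = (\<integral>\<omega>. (\<Sum>n\<in>Gen r. P3 P (psi g) (X n \<omega>)) \<partial>M)"
    unfolding Asum_Suc by (rule gen_mean(2)[OF psi_pint[OF g] i])
  also have "\<dots> = (\<integral>\<omega>. 2 * Asum X r (Q g) \<omega> \<partial>M)"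
    unfolding P3_psi[OF g] Asum_def by (simp add: sum_distrib_left)
  also have "\<dots> = 2 * (2 ^ r * (\<integral>x. (Q ^^ r) (Q g) x \<partial>\<nu>))"
    using Suc.IH[OF F_Q[OF g]] by simp
  also have "\<dots> = 2 ^ Suc r * (\<integral>x. (Q ^^ Suc r) g x \<partial>\<nu>)"
    by (simp add: funpow_Suc_right del: funpow.simps)
  finally show ?case .
qed

lemma Asum_sq0: "g \<in> F \<Longrightarrow> (\<integral>\<omega>. (Asum X 0 g \<omega>)\<^sup>2 \<partial>M) = (\<integral>x. (g x)\<^sup>2 \<partial>\<nu>)"
proof -
  assume g: "g \<in> F"
  have [measurable]: "g \<in> borel_measurable borel" using F_meas[OF g] .
  show ?thesis unfolding Asum_def Gen_0 nu_def by (simp add: integral_distr)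
qed

lemma Asum_sq_int: "g \<in> F \<Longrightarrow> integrable M (\<lambda>\<omega>. (Asum X r g \<omega>)\<^sup>2)"
proof (cases r)
  case 0
  assume g: "g \<in> F"
  then show ?thesis unfolding 0 Asum_def Gen_0 using F_int[OF F_sq[OF g], of 1 0] by (simp add: Gen_0)
next
  case (Suc r')
  assume g: "g \<in> F"
  show ?thesis unfolding Suc Asum_Suc using gen_sq(1)[OF psi_pint[OF g] psi_sq_pint[OF g] psi_i2[OF g]] .
qed

lemma V_rec: "g \<in> F \<Longrightarrow> (\<integral>\<omega>. (Asum X (Suc r) g \<omega>)\<^sup>2 \<partial>M)
   = 4 * (\<integral>\<omega>. (Asum X r (Q g) \<omega>)\<^sup>2 \<partial>M) + (\<integral>\<omega>. Asum X r (Rf g) \<omega> \<partial>M)"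
proof -
  assume g: "g \<in> F"
  have e1: "(\<Sum>n\<in>Gen r. P3 P (psi g) (X n \<omega>))\<^sup>2 = 4 * (Asum X r (Q g) \<omega>)\<^sup>2" for \<omega>
    unfolding P3_psi[OF g] Asum_def by (simp add: sum_distrib_left[symmetric] power_mult_distrib)
  have e2: "P3 P (\<lambda>t. (psi g t)\<^sup>2) x - (P3 P (psi g) x)\<^sup>2 = Rf g x" for x
    unfolding P3_psi[OF g] P3_psi_sq[OF g] Rf_def by (simp add: power_mult_distrib)
  have "(\<integral>\<omega>. (Asum X (Suc r) g \<omega>)\<^sup>2 \<partial>M)
     = (\<integral>\<omega>. (\<Sum>n\<in>Gen r. P3 P (psi g) (X n \<omega>))\<^sup>2 \<partial>M)
       + (\<Sum>n\<in>Gen r. (\<integral>\<omega>. P3 P (\<lambda>t. (psi g t)\<^sup>2) (X n \<omega>) - (P3 P (psi g) (X n \<omega>))\<^sup>2 \<partial>M))"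
    unfolding Asum_Suc by (rule gen_sq(2)[OF psi_pint[OF g] psi_sq_pint[OF g] psi_i2[OF g]])
  also have "\<dots> = 4 * (\<integral>\<omega>. (Asum X r (Q g) \<omega>)\<^sup>2 \<partial>M) + (\<Sum>n\<in>Gen r. (\<integral>\<omega>. Rf g (X n \<omega>) \<partial>M))"
    unfolding e1 e2 by simp
  also have "(\<Sum>n\<in>Gen r. (\<integral>\<omega>. Rf g (X n \<omega>) \<partial>M)) = (\<integral>\<omega>. Asum X r (Rf g) \<omega> \<partial>M)"
    unfolding Asum_def using F_int[OF F_Rf[OF g]] by (simp add: Bochner_Integration.integral_sum)
  finally show ?thesis .
qed

end


fun rho :: "real \<Rightarrow> nat \<Rightarrow> real" where
  "rho a 0 = 1"
| "rho a (Suc r) = (1/2) ^ Suc r + a\<^sup>2 * rho a r"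

lemma rho_ge: "(1/2) ^ r \<le> rho a r"
proof (induction r)
  case (Suc r)
  have "0 \<le> rho a r" using Suc.IH by (rule order.trans[rotated]) simp
  then show ?case by simp
qed simp

lemma rho_nonneg: "0 \<le> rho a r"
  using rho_ge[of r a] by (rule order.trans[rotated]) simp

context bmcF begin

lemma Q_mono: "g \<in> F \<Longrightarrow> h \<in> F \<Longrightarrow> (\<And>x. g x \<le> h x) \<Longrightarrow> Q g x \<le> Q h x"
  using Qpow_mono[of g h 1 x] by simp

lemma Q_scale: "g \<in> F \<Longrightarrow> Q (\<lambda>x. a * g x) = (\<lambda>x. a * Q g x)"
  using Q_lin[of g g a 0] by simp

lemma Qpow_scale: "g \<in> F \<Longrightarrow> (Q ^^ r) (\<lambda>x. a * g x) = (\<lambda>x. a * (Q ^^ r) g x)"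
  using Qpow_lin[of g g r a 0] by simp

lemma V_bound:
  assumes h0: "h0 \<in> F" and h0n: "\<And>x. 0 \<le> h0 x" and al: "0 \<le> \<alpha>" "\<alpha> \<le> 1"
  shows "\<exists>K\<ge>0. \<forall>r. \<forall>g\<in>F. \<forall>c\<ge>0. (\<forall>k x. \<bar>(Q ^^ k) g x\<bar> \<le> c * \<alpha> ^ k * h0 x) \<longrightarrow>
           (\<integral>\<omega>. (Asum X r g \<omega>)\<^sup>2 \<partial>M) \<le> c\<^sup>2 * K * 4 ^ r * rho \<alpha> r"
proof -
  define H where "H = (\<lambda>x. 2 * Q (\<lambda>y. (h0 y)\<^sup>2) x + 2 * Pop P (tensor h0 h0) x + 4 * (h0 x)\<^sup>2)"
  have HF: "H \<in> F" unfolding H_def by (intro F_add F_cmult F_Q F_sq F_tensor h0)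
  obtain h1 where h1: "h1 \<in> F" "\<And>r x. \<bar>(Q ^^ r) H x\<bar> \<le> h1 x" using F_dom[OF HF] by blast
  have h1n: "0 \<le> h1 x" for x using h1(2)[of 0 x] by simp
  define K where "K = (\<integral>x. (h0 x)\<^sup>2 \<partial>\<nu>) + (\<integral>x. h1 x \<partial>\<nu>)"
  have I0: "0 \<le> (\<integral>x. (h0 x)\<^sup>2 \<partial>\<nu>)" by (rule Bochner_Integration.integral_nonneg) simp
  have I1: "0 \<le> (\<integral>x. h1 x \<partial>\<nu>)" by (rule Bochner_Integration.integral_nonneg) (simp add: h1n)
  have K0: "0 \<le> K" unfolding K_def using I0 I1 by simp
  have Rb: "\<bar>Rf g x\<bar> \<le> c\<^sup>2 * H x"
    if g: "g \<in> F" and c: "0 \<le> c" and b: "\<forall>k x. \<bar>(Q ^^ k) g x\<bar> \<le> c * \<alpha> ^ k * h0 x" for g c x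
  proof -
    have g0: "\<bar>g y\<bar> \<le> c * h0 y" for y using b[rule_format, of 0 y] by simp
    have g2: "(g y)\<^sup>2 \<le> c\<^sup>2 * (h0 y)\<^sup>2" for y
      using power_mono[OF g0[of y] abs_ge_zero, of 2] by (simp add: power_mult_distrib)
    have q1: "Q (\<lambda>y. (g y)\<^sup>2) x \<le> c\<^sup>2 * Q (\<lambda>y. (h0 y)\<^sup>2) x"
      using Q_mono[OF F_sq[OF g] F_cmult[OF F_sq[OF h0]], of "c\<^sup>2" x] g2 Q_scale[OF F_sq[OF h0], of "c\<^sup>2"]
      by simp
    have q1n: "0 \<le> Q (\<lambda>y. (g y)\<^sup>2) x" by (rule Q_nonneg) simp
    have pt: "\<bar>Pop P (tensor g g) x\<bar> \<le> c\<^sup>2 * Pop P (tensor h0 h0) x"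
    proof -
      have "\<bar>Pop P (tensor g g) x\<bar> \<le> (\<integral>p. \<bar>tensor g g p\<bar> \<partial>P x)"
        unfolding Pop_def using integral_abs_bound[of "P x" "tensor g g"] by simp
      also have "\<dots> \<le> (\<integral>p. c\<^sup>2 * tensor h0 h0 p \<partial>P x)"
      proof (rule integral_mono)
        show "integrable (P x) (\<lambda>p. \<bar>tensor g g p\<bar>)" using F_tensor_int[OF g g] by auto
        show "integrable (P x) (\<lambda>p. c\<^sup>2 * tensor h0 h0 p)" using F_tensor_int[OF h0 h0] by auto
        fix p
        show "\<bar>tensor g g p\<bar> \<le> c\<^sup>2 * tensor h0 h0 p"
          unfolding tensor_def using mult_mono[OF g0[of "fst p"] g0[of "snd p"]] c h0n
          by (auto simp: split_beta' abs_mult power2_eq_square algebra_simps)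
      qed
      also have "\<dots> = c\<^sup>2 * Pop P (tensor h0 h0) x" unfolding Pop_def by simp
      finally show ?thesis .
    qed
    have qg: "(Q g x)\<^sup>2 \<le> c\<^sup>2 * (h0 x)\<^sup>2"
    proof -
      have a: "\<bar>Q g x\<bar> \<le> c * h0 x"
        using b[rule_format, of 1 x] mult_right_mono[OF mult_left_le[OF al(2) c] h0n[of x]] al
        by (simp add: mult.assoc)
      show ?thesis using power_mono[OF a abs_ge_zero, of 2] by (simp add: power_mult_distrib)
    qed
    have hh: "c\<^sup>2 * H x = 2 * (c\<^sup>2 * Q (\<lambda>y. (h0 y)\<^sup>2) x) + 2 * (c\<^sup>2 * Pop P (tensor h0 h0) x) + 4 * (c\<^sup>2 * (h0 x)\<^sup>2)"
      unfolding H_def by (simp add: algebra_simps)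
    have "0 \<le> (Q g x)\<^sup>2" by simp
    then show ?thesis unfolding Rf_def hh using q1 q1n pt qg
      by (simp only: abs_le_iff) linarith
  qed
  have step: "\<bar>(\<integral>\<omega>. Asum X r (Rf g) \<omega> \<partial>M)\<bar> \<le> 2 ^ r * (c\<^sup>2 * (\<integral>x. h1 x \<partial>\<nu>))"
    if g: "g \<in> F" and c: "0 \<le> c" and b: "\<forall>k x. \<bar>(Q ^^ k) g x\<bar> \<le> c * \<alpha> ^ k * h0 x" for g c r
  proof -
    have RF: "Rf g \<in> F" by (rule F_Rf[OF g])
    have pb: "\<bar>(Q ^^ r) (Rf g) x\<bar> \<le> c\<^sup>2 * h1 x" for x
    proof -
      have u: "(Q ^^ r) (Rf g) x \<le> c\<^sup>2 * (Q ^^ r) H x"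
        using Qpow_mono[OF RF F_cmult[OF HF], of "c\<^sup>2" r x] Rb[OF g c b] Qpow_scale[OF HF, of r "c\<^sup>2"]
        by (simp add: abs_le_iff)
      have l: "(Q ^^ r) (\<lambda>y. (-1) * Rf g y) x \<le> c\<^sup>2 * (Q ^^ r) H x"
        using Qpow_mono[OF F_cmult[OF RF] F_cmult[OF HF], of "-1" "c\<^sup>2" r x] Rb[OF g c b] Qpow_scale[OF HF, of r "c\<^sup>2"]
        by (simp add: abs_le_iff)
      have l2: "(Q ^^ r) (\<lambda>y. (-1) * Rf g y) x = - (Q ^^ r) (Rf g) x"
        using Qpow_scale[OF RF, of r "-1"] by simp
      have "c\<^sup>2 * (Q ^^ r) H x \<le> c\<^sup>2 * h1 x"
        using h1(2)[of r x] by (intro mult_left_mono) auto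
      then show ?thesis using u l l2 by (simp add: abs_le_iff)
    qed
    have "(\<integral>\<omega>. Asum X r (Rf g) \<omega> \<partial>M) = 2 ^ r * (\<integral>x. (Q ^^ r) (Rf g) x \<partial>\<nu>)"
      by (rule Asum_mean[OF RF])
    moreover have "\<bar>\<integral>x. (Q ^^ r) (Rf g) x \<partial>\<nu>\<bar> \<le> (\<integral>x. c\<^sup>2 * h1 x \<partial>\<nu>)"
    proof -
      have "\<bar>\<integral>x. (Q ^^ r) (Rf g) x \<partial>\<nu>\<bar> \<le> (\<integral>x. \<bar>(Q ^^ r) (Rf g) x\<bar> \<partial>\<nu>)"
        using integral_abs_bound[of \<nu> "(Q ^^ r) (Rf g)"] by simp
      also have "\<dots> \<le> (\<integral>x. c\<^sup>2 * h1 x \<partial>\<nu>)"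
        by (rule integral_mono) (use F_int_nu[OF F_Qpow[OF RF]] F_int_nu[OF h1(1)] pb in auto)
      finally show ?thesis .
    qed
    ultimately show ?thesis by (simp add: abs_mult)
  qed
  have main: "\<forall>g\<in>F. \<forall>c\<ge>0. (\<forall>k x. \<bar>(Q ^^ k) g x\<bar> \<le> c * \<alpha> ^ k * h0 x) \<longrightarrow>
           (\<integral>\<omega>. (Asum X r g \<omega>)\<^sup>2 \<partial>M) \<le> c\<^sup>2 * K * 4 ^ r * rho \<alpha> r" for r
  proof (induction r)
    case 0
    show ?case
    proof (intro ballI allI impI)
      fix g c assume g: "g \<in> F" and c: "0 \<le> c" and b: "\<forall>k x. \<bar>(Q ^^ k) g x\<bar> \<le> c * \<alpha> ^ k * h0 x"
      have g2: "(g y)\<^sup>2 \<le> c\<^sup>2 * (h0 y)\<^sup>2" for y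
        using power_mono[OF b[rule_format, of 0 y, simplified] abs_ge_zero, of 2] by (simp add: power_mult_distrib)
      have "(\<integral>\<omega>. (Asum X 0 g \<omega>)\<^sup>2 \<partial>M) = (\<integral>x. (g x)\<^sup>2 \<partial>\<nu>)" by (rule Asum_sq0[OF g])
      also have "\<dots> \<le> (\<integral>x. c\<^sup>2 * (h0 x)\<^sup>2 \<partial>\<nu>)"
        by (rule integral_mono) (use F_int_nu[OF F_sq[OF g]] F_int_nu[OF F_sq[OF h0]] g2 in auto)
      also have "\<dots> = c\<^sup>2 * (\<integral>x. (h0 x)\<^sup>2 \<partial>\<nu>)" by simp
      also have "\<dots> \<le> c\<^sup>2 * K" unfolding K_def using I1 by (intro mult_left_mono) auto
      finally show "(\<integral>\<omega>. (Asum X 0 g \<omega>)\<^sup>2 \<partial>M) \<le> c\<^sup>2 * K * 4 ^ 0 * rho \<alpha> 0" by simp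
    qed
  next
    case (Suc r)
    show ?case
    proof (intro ballI allI impI)
      fix g c assume g: "g \<in> F" and c: "0 \<le> c" and b: "\<forall>k x. \<bar>(Q ^^ k) g x\<bar> \<le> c * \<alpha> ^ k * h0 x"
      have bQ: "\<forall>k x. \<bar>(Q ^^ k) (Q g) x\<bar> \<le> (c * \<alpha>) * \<alpha> ^ k * h0 x"
      proof (intro allI)
        fix k x
        have e: "(Q ^^ k) (Q g) = (Q ^^ Suc k) g" by (simp add: funpow_Suc_right del: funpow.simps)
        show "\<bar>(Q ^^ k) (Q g) x\<bar> \<le> (c * \<alpha>) * \<alpha> ^ k * h0 x"
          unfolding e using b[rule_format, of "Suc k" x] by (simp add: mult.assoc)
      qed
      have IH: "(\<integral>\<omega>. (Asum X r (Q g) \<omega>)\<^sup>2 \<partial>M) \<le> (c * \<alpha>)\<^sup>2 * K * 4 ^ r * rho \<alpha> r"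
        using Suc.IH F_Q[OF g] c al bQ by auto
      have "(\<integral>\<omega>. (Asum X (Suc r) g \<omega>)\<^sup>2 \<partial>M) = 4 * (\<integral>\<omega>. (Asum X r (Q g) \<omega>)\<^sup>2 \<partial>M) + (\<integral>\<omega>. Asum X r (Rf g) \<omega> \<partial>M)"
        by (rule V_rec[OF g])
      also have "\<dots> \<le> 4 * ((c * \<alpha>)\<^sup>2 * K * 4 ^ r * rho \<alpha> r) + 2 ^ r * (c\<^sup>2 * (\<integral>x. h1 x \<partial>\<nu>))"
        using IH step[OF g c b, of r] by linarith
      also have "\<dots> \<le> 4 * ((c * \<alpha>)\<^sup>2 * K * 4 ^ r * rho \<alpha> r) + 2 ^ r * (c\<^sup>2 * (2 * K))"
        unfolding K_def using I0 I1 by (intro add_left_mono mult_left_mono) auto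
      also have "\<dots> = c\<^sup>2 * K * 4 ^ Suc r * rho \<alpha> (Suc r)"
      proof -
        have e: "(4::real) ^ Suc r * (1/2) ^ Suc r = 2 * 2 ^ r"
        proof -
          have "(4::real) ^ Suc r * (1/2) ^ Suc r = (4 * (1/2)) ^ Suc r" by (simp only: power_mult_distrib)
          then show ?thesis by simp
        qed
        have "c\<^sup>2 * K * 4 ^ Suc r * rho \<alpha> (Suc r) = c\<^sup>2 * K * ((4::real) ^ Suc r * (1/2) ^ Suc r) + 4 * ((c * \<alpha>)\<^sup>2 * K * 4 ^ r * rho \<alpha> r)"
          by (simp add: algebra_simps power_mult_distrib)
        also have "\<dots> = 4 * ((c * \<alpha>)\<^sup>2 * K * 4 ^ r * rho \<alpha> r) + 2 ^ r * (c\<^sup>2 * (2 * K))"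
          unfolding e by simp
        finally show ?thesis by simp
      qed
      finally show "(\<integral>\<omega>. (Asum X (Suc r) g \<omega>)\<^sup>2 \<partial>M) \<le> c\<^sup>2 * K * 4 ^ Suc r * rho \<alpha> (Suc r)" .
    qed
  qed
  show ?thesis using main K0 by blast
qed

end


context bmcF begin

lemma Asum_F_bound: "k \<in> F \<Longrightarrow> \<exists>C\<ge>0. \<forall>r. \<bar>\<integral>\<omega>. Asum X r k \<omega> \<partial>M\<bar> \<le> 2 ^ r * C"
proof -
  assume k: "k \<in> F"
  obtain h where h: "h \<in> F" "\<And>r x. \<bar>(Q ^^ r) k x\<bar> \<le> h x" using F_dom[OF k] by blast
  have hn: "0 \<le> h x" for x using h(2)[of 0 x] by simp
  have C0: "0 \<le> (\<integral>x. h x \<partial>\<nu>)" by (rule Bochner_Integration.integral_nonneg) (simp add: hn)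
  have "\<bar>\<integral>\<omega>. Asum X r k \<omega> \<partial>M\<bar> \<le> 2 ^ r * (\<integral>x. h x \<partial>\<nu>)" for r
  proof -
    have "\<bar>\<integral>x. (Q ^^ r) k x \<partial>\<nu>\<bar> \<le> (\<integral>x. \<bar>(Q ^^ r) k x\<bar> \<partial>\<nu>)"
      using integral_abs_bound[of \<nu> "(Q ^^ r) k"] by simp
    also have "\<dots> \<le> (\<integral>x. h x \<partial>\<nu>)"
      by (rule integral_mono) (use F_int_nu[OF F_Qpow[OF k]] F_int_nu[OF h(1)] h(2) in auto)
    finally show ?thesis unfolding Asum_mean[OF k] by (simp add: abs_mult)
  qed
  then show ?thesis using C0 by blast
qed

lemma S_bound:
  assumes f: "pint f" and f2: "pint (\<lambda>t. (f t)\<^sup>2)"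
    and PfF: "P3 P f \<in> F" and Pf2F: "P3 P (\<lambda>t. (f t)\<^sup>2) \<in> F"
    and cent: "(\<integral>x. P3 P f x \<partial>\<mu>) = 0" and hyp: "H1 P \<mu> F \<alpha>"
  shows "\<exists>K\<ge>0. \<forall>r. integrable M (\<lambda>\<omega>. (\<Sum>i\<in>Gen r. f (Delta X i \<omega>))\<^sup>2) \<and>
            (\<integral>\<omega>. (\<Sum>i\<in>Gen r. f (Delta X i \<omega>))\<^sup>2 \<partial>M) \<le> K * 4 ^ r * rho \<alpha> r"
proof -
  have al: "0 < \<alpha>" "\<alpha> < 1" using hyp unfolding H1_def by auto
  obtain h0 where h0: "h0 \<in> F" "\<And>r x. \<bar>(Q ^^ r) (P3 P f) x\<bar> \<le> \<alpha> ^ r * h0 x"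
    using hyp PfF cent unfolding H1_def by blast
  have h0n: "0 \<le> h0 x" for x using h0(2)[of 0 x] by simp
  obtain K where K: "K \<ge> 0" "\<And>r g c. g \<in> F \<Longrightarrow> c \<ge> 0 \<Longrightarrow> (\<forall>k x. \<bar>(Q ^^ k) g x\<bar> \<le> c * \<alpha> ^ k * h0 x) \<Longrightarrow>
           (\<integral>\<omega>. (Asum X r g \<omega>)\<^sup>2 \<partial>M) \<le> c\<^sup>2 * K * 4 ^ r * rho \<alpha> r"
    using V_bound[OF h0(1) h0n, of \<alpha>] al by auto
  have V: "(\<integral>\<omega>. (Asum X r (P3 P f) \<omega>)\<^sup>2 \<partial>M) \<le> K * 4 ^ r * rho \<alpha> r" for r
    using K(2)[OF PfF, of 1 r] h0(2) by simp
  define k where "k = (\<lambda>x. P3 P (\<lambda>t. (f t)\<^sup>2) x - (P3 P f x)\<^sup>2)"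
  have kF: "k \<in> F" unfolding k_def by (intro F_diff F_sq Pf2F PfF)
  obtain C where C: "C \<ge> 0" "\<And>r. \<bar>\<integral>\<omega>. Asum X r k \<omega> \<partial>M\<bar> \<le> 2 ^ r * C"
    using Asum_F_bound[OF kF] by blast
  have i2: "\<forall>n\<in>Gen r. integrable M (\<lambda>\<omega>. P3 P (\<lambda>t. (f t)\<^sup>2) (X n \<omega>))" for r
    using F_int[OF Pf2F] by auto
  have "(\<integral>\<omega>. (\<Sum>i\<in>Gen r. f (Delta X i \<omega>))\<^sup>2 \<partial>M) \<le> (K + C) * 4 ^ r * rho \<alpha> r" for r
  proof -
    have "(\<integral>\<omega>. (\<Sum>i\<in>Gen r. f (Delta X i \<omega>))\<^sup>2 \<partial>M) =
       (\<integral>\<omega>. (\<Sum>n\<in>Gen r. P3 P f (X n \<omega>))\<^sup>2 \<partial>M)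
       + (\<Sum>n\<in>Gen r. (\<integral>\<omega>. P3 P (\<lambda>t. (f t)\<^sup>2) (X n \<omega>) - (P3 P f (X n \<omega>))\<^sup>2 \<partial>M))"
      by (rule gen_sq(2)[OF f f2 i2])
    also have "(\<Sum>n\<in>Gen r. (\<integral>\<omega>. P3 P (\<lambda>t. (f t)\<^sup>2) (X n \<omega>) - (P3 P f (X n \<omega>))\<^sup>2 \<partial>M)) = (\<integral>\<omega>. Asum X r k \<omega> \<partial>M)"
      unfolding Asum_def k_def using F_int[OF kF[unfolded k_def]]
      by (simp add: Bochner_Integration.integral_sum)
    also have "(\<integral>\<omega>. (\<Sum>n\<in>Gen r. P3 P f (X n \<omega>))\<^sup>2 \<partial>M) = (\<integral>\<omega>. (Asum X r (P3 P f) \<omega>)\<^sup>2 \<partial>M)"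
      unfolding Asum_def ..
    also have "(\<integral>\<omega>. (Asum X r (P3 P f) \<omega>)\<^sup>2 \<partial>M) + (\<integral>\<omega>. Asum X r k \<omega> \<partial>M) \<le> K * 4 ^ r * rho \<alpha> r + 2 ^ r * C"
      using V[of r] C(2)[of r] by linarith
    also have "2 ^ r * C \<le> C * 4 ^ r * rho \<alpha> r"
    proof -
      have "(2::real) ^ r = 4 ^ r * (1/2) ^ r"
      proof -
        have "(4::real) ^ r * (1/2) ^ r = (4 * (1/2)) ^ r" by (simp only: power_mult_distrib)
        then show ?thesis by simp
      qed
      also have "\<dots> \<le> 4 ^ r * rho \<alpha> r" by (intro mult_left_mono rho_ge) simp
      finally have "(2::real) ^ r \<le> 4 ^ r * rho \<alpha> r" .
      then have "2 ^ r * C \<le> (4 ^ r * rho \<alpha> r) * C" using C(1) by (rule mult_right_mono)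
      then show ?thesis by (simp add: algebra_simps)
    qed
    finally show ?thesis by (simp add: algebra_simps)
  qed
  moreover have "integrable M (\<lambda>\<omega>. (\<Sum>i\<in>Gen r. f (Delta X i \<omega>))\<^sup>2)" for r
    by (rule gen_sq(1)[OF f f2 i2])
  ultimately show ?thesis using K(1) C(1) by (intro exI[of _ "K + C"]) auto
qed

lemma S2_bound:
  assumes f2: "pint (\<lambda>t. (f t)\<^sup>2)" and Pf2F: "P3 P (\<lambda>t. (f t)\<^sup>2) \<in> F"
  shows "\<exists>C\<ge>0. \<forall>r. integrable M (\<lambda>\<omega>. \<Sum>i\<in>Gen r. (f (Delta X i \<omega>))\<^sup>2) \<and>
          (\<integral>\<omega>. (\<Sum>i\<in>Gen r. (f (Delta X i \<omega>))\<^sup>2) \<partial>M) \<le> 2 ^ r * C"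
proof -
  obtain C where C: "C \<ge> 0" "\<And>r. \<bar>\<integral>\<omega>. Asum X r (P3 P (\<lambda>t. (f t)\<^sup>2)) \<omega> \<partial>M\<bar> \<le> 2 ^ r * C"
    using Asum_F_bound[OF Pf2F] by blast
  have s: "integrable M (\<lambda>\<omega>. (f (Delta X i \<omega>))\<^sup>2) \<and>
     (\<integral>\<omega>. (f (Delta X i \<omega>))\<^sup>2 \<partial>M) = (\<integral>\<omega>. P3 P (\<lambda>t. (f t)\<^sup>2) (X i \<omega>) \<partial>M)" if "i \<in> Gen r" for i r
    using single_nn[OF that f2 _ F_int[OF Pf2F that]] by auto
  have "integrable M (\<lambda>\<omega>. \<Sum>i\<in>Gen r. (f (Delta X i \<omega>))\<^sup>2) \<and>
          (\<integral>\<omega>. (\<Sum>i\<in>Gen r. (f (Delta X i \<omega>))\<^sup>2) \<partial>M) \<le> 2 ^ r * C" for r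
  proof
    show "integrable M (\<lambda>\<omega>. \<Sum>i\<in>Gen r. (f (Delta X i \<omega>))\<^sup>2)" using s by auto
    have "(\<integral>\<omega>. (\<Sum>i\<in>Gen r. (f (Delta X i \<omega>))\<^sup>2) \<partial>M) = (\<integral>\<omega>. Asum X r (P3 P (\<lambda>t. (f t)\<^sup>2)) \<omega> \<partial>M)"
      unfolding Asum_def using s F_int[OF Pf2F]
      by (simp add: Bochner_Integration.integral_sum)
    then show "(\<integral>\<omega>. (\<Sum>i\<in>Gen r. (f (Delta X i \<omega>))\<^sup>2) \<partial>M) \<le> 2 ^ r * C" using C(2)[of r] by linarith
  qed
  then show ?thesis using C(1) by blast
qed

end


lemma rho_closed: "rho a r = (1/2) ^ r * (\<Sum>k<Suc r. (2 * a\<^sup>2) ^ k)"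
proof (induction r)
  case (Suc r)
  have "(\<Sum>k<Suc (Suc r). (2 * a\<^sup>2) ^ k) = 1 + (\<Sum>k<Suc r. (2 * a\<^sup>2) ^ Suc k)"
    by (subst sum.lessThan_Suc_shift) simp
  also have "\<dots> = 1 + 2 * a\<^sup>2 * (\<Sum>k<Suc r. (2 * a\<^sup>2) ^ k)"
    unfolding power_Suc[of "2 * a\<^sup>2"] sum_distrib_left ..
  finally have e: "(\<Sum>k<Suc (Suc r). (2 * a\<^sup>2) ^ k) = 1 + 2 * a\<^sup>2 * (\<Sum>k<Suc r. (2 * a\<^sup>2) ^ k)" .
  show ?case unfolding rho.simps Suc e by (simp add: algebra_simps)
qed simp

definition rate :: "real \<Rightarrow> nat \<Rightarrow> real" where
  "rate a r = (if a\<^sup>2 < 1/2 then (1/2) ^ r else if a\<^sup>2 = 1/2 then real r * (1/2) ^ r else a ^ (2*r))"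

definition rate1 :: "real \<Rightarrow> nat \<Rightarrow> real" where
  "rate1 a r = (if a\<^sup>2 < 1/2 then (1/2) ^ (r + 1) else if a\<^sup>2 = 1/2 then real r * (1/2) ^ (r + 1) else a ^ (2*(r + 1)))"

lemma rho_rate:
  assumes a: "0 < a"
  shows "\<exists>C>0. \<forall>r. (a\<^sup>2 = 1/2 \<longrightarrow> r \<ge> 1) \<longrightarrow> rho a r \<le> C * rate a r"
proof -
  define b where "b = 2 * a\<^sup>2"
  have b0: "0 < b" unfolding b_def using a by simp
  consider "a\<^sup>2 < 1/2" | "a\<^sup>2 = 1/2" | "a\<^sup>2 > 1/2" by linarith
  then show ?thesis
  proof cases
    case 1
    then have b1: "b < 1" unfolding b_def by simp
    have "rho a r \<le> (1 / (1 - b)) * rate a r" for r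
    proof -
      have "(\<Sum>k<Suc r. b ^ k) \<le> 1 / (1 - b)"
        using geometric_sum_less[OF b0 b1, of "{..<Suc r}"] by simp
      then have "rho a r \<le> (1/2) ^ r * (1 / (1 - b))"
        unfolding rho_closed b_def[symmetric] by (rule mult_left_mono) simp
      moreover have "rate a r = (1/2) ^ r" unfolding rate_def using 1 by simp
      ultimately show ?thesis by simp
    qed
    then show ?thesis using b1 by (intro exI[of _ "1 / (1 - b)"]) auto
  next
    case 2
    have "rho a r \<le> 2 * rate a r" if "r \<ge> 1" for r
    proof -
      have "2 * a\<^sup>2 = 1" using 2 by simp
      then have "(\<Sum>k<Suc r. (2 * a\<^sup>2) ^ k) = real r + 1" by (simp only:) simp
      then have "rho a r = (real r + 1) * (1/2) ^ r" unfolding rho_closed by simp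
      also have "\<dots> \<le> (2 * real r) * (1/2) ^ r" using that by (intro mult_right_mono) auto
      finally show ?thesis unfolding rate_def using 2 by simp
    qed
    then show ?thesis using 2 by (intro exI[of _ 2]) auto
  next
    case 3
    then have b1: "b > 1" unfolding b_def by simp
    have "rho a r \<le> (b / (b - 1)) * rate a r" for r
    proof -
      have "(\<Sum>k<Suc r. b ^ k) = (b ^ Suc r - 1) / (b - 1)"
        using geometric_sum[of b "Suc r"] b1 by simp
      also have "\<dots> \<le> b ^ Suc r / (b - 1)" using b1 by (intro divide_right_mono) auto
      finally have s: "(\<Sum>k<Suc r. b ^ k) \<le> b ^ Suc r / (b - 1)" .
      have "rho a r \<le> (1/2) ^ r * (b ^ Suc r / (b - 1))"
        unfolding rho_closed b_def[symmetric] by (rule mult_left_mono[OF s]) simp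
      also have "\<dots> = (b / (b - 1)) * ((1/2) ^ r * b ^ r)" by (simp add: field_simps)
      also have "(1/2) ^ r * b ^ r = a ^ (2 * r)"
        unfolding b_def power_mult_distrib[symmetric] by (simp add: power_mult)
      finally show ?thesis unfolding rate_def using 3 by simp
    qed
    then show ?thesis using b1 by (intro exI[of _ "b / (b - 1)"]) auto
  qed
qed

lemma rate1_nonneg': "0 \<le> a \<Longrightarrow> 0 \<le> rate1 a r"
  unfolding rate1_def by auto

lemma rate_rate1:
  assumes a: "0 < a"
  shows "rate a r \<le> max 2 (1 / a\<^sup>2) * rate1 a r"
proof -
  have m2: "2 \<le> max 2 (1 / a\<^sup>2)" "1 / a\<^sup>2 \<le> max 2 (1 / a\<^sup>2)" by auto
  consider "a\<^sup>2 < 1/2" | "a\<^sup>2 = 1/2" | "a\<^sup>2 > 1/2" by linarith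
  then show ?thesis
  proof cases
    case 1
    have e: "rate a r = 2 * rate1 a r" unfolding rate_def rate1_def using 1 by simp
    show ?thesis unfolding e by (intro mult_right_mono m2 rate1_nonneg') (use a in simp)
  next
    case 2
    have e: "rate a r = 2 * rate1 a r" unfolding rate_def rate1_def using 2 by simp
    show ?thesis unfolding e by (intro mult_right_mono m2 rate1_nonneg') (use a in simp)
  next
    case 3
    have n1: "\<not> a\<^sup>2 < 1/2" "a\<^sup>2 \<noteq> 1/2" using 3 by auto
    have e: "rate a r = (1 / a\<^sup>2) * rate1 a r" unfolding rate_def rate1_def using n1 a
      by (simp add: power_add power_mult field_simps power2_eq_square)
    show ?thesis unfolding e by (intro mult_right_mono m2 rate1_nonneg') (use a in simp)
  qed
qed

lemma rate_nonneg: "0 \<le> a \<Longrightarrow> 0 \<le> rate a r"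
  unfolding rate_def by auto

lemma rate1_nonneg: "0 \<le> a \<Longrightarrow> 0 \<le> rate1 a r"
  unfolding rate1_def by auto

context prob_space begin

lemma cheb:
  assumes [measurable]: "Z \<in> borel_measurable M" and i: "integrable M (\<lambda>\<omega>. (Z \<omega>)\<^sup>2)" and c: "0 < c"
  shows "measure M {\<omega>\<in>space M. \<bar>Z \<omega>\<bar> > c} \<le> (\<integral>\<omega>. (Z \<omega>)\<^sup>2 \<partial>M) / c\<^sup>2"
proof -
  have "measure M {\<omega>\<in>space M. \<bar>Z \<omega>\<bar> > c} \<le> measure M {\<omega>\<in>space M. (Z \<omega>)\<^sup>2 \<ge> c\<^sup>2}"
  proof (rule finite_measure_mono)
    show "{\<omega>\<in>space M. \<bar>Z \<omega>\<bar> > c} \<subseteq> {\<omega>\<in>space M. (Z \<omega>)\<^sup>2 \<ge> c\<^sup>2}"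
      using c by (auto simp: abs_le_square_iff[symmetric] less_imp_le)
    show "{\<omega>\<in>space M. (Z \<omega>)\<^sup>2 \<ge> c\<^sup>2} \<in> sets M" by measurable
  qed
  also have "\<dots> \<le> (\<integral>\<omega>. (Z \<omega>)\<^sup>2 \<partial>M) / c\<^sup>2"
    by (rule integral_Markov_inequality_measure[OF i, where A="space M"]) (use c in auto)
  finally show ?thesis .
qed

end



lemma cs_weighted:
  fixes S :: "nat \<Rightarrow> real" and u :: real
  assumes u: "0 < u"
  shows "(\<Sum>q\<le>r. S q)\<^sup>2 \<le> (\<Sum>q\<le>r. u ^ q) * (\<Sum>q\<le>r. (S q)\<^sup>2 / u ^ q)"
proof -
  have "(\<Sum>q\<le>r. S q)\<^sup>2 = (\<Sum>q\<le>r. sqrt (u ^ q) * (S q / sqrt (u ^ q)))\<^sup>2"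
    using u by (intro arg_cong[where f="\<lambda>x. x\<^sup>2"] sum.cong) auto
  also have "\<dots> \<le> (\<Sum>q\<le>r. (sqrt (u ^ q))\<^sup>2) * (\<Sum>q\<le>r. (S q / sqrt (u ^ q))\<^sup>2)"
    by (rule Cauchy_Schwarz_ineq_sum)
  also have "\<dots> = (\<Sum>q\<le>r. u ^ q) * (\<Sum>q\<le>r. (S q)\<^sup>2 / u ^ q)"
    using u by (simp add: power_divide)
  finally show ?thesis .
qed

lemma rho_mono_sum: "q \<le> r \<Longrightarrow> 4 ^ q * rho a q \<le> 2 ^ q * (\<Sum>k<Suc r. (2 * a\<^sup>2) ^ k)"
proof -
  assume qr: "q \<le> r"
  have "(4::real) ^ q * (1/2) ^ q = 2 ^ q"
  proof -
    have "(4::real) ^ q * (1/2) ^ q = (4 * (1/2)) ^ q" by (simp only: power_mult_distrib)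
    then show ?thesis by simp
  qed
  then have "4 ^ q * rho a q = 2 ^ q * (\<Sum>k<Suc q. (2 * a\<^sup>2) ^ k)"
    unfolding rho_closed by (simp add: mult.assoc[symmetric])
  also have "\<dots> \<le> 2 ^ q * (\<Sum>k<Suc r. (2 * a\<^sup>2) ^ k)"
    using qr by (intro mult_left_mono sum_mono2) auto
  finally show ?thesis .
qed

context prob_space begin

lemma tree_bound:
  fixes S :: "nat \<Rightarrow> 'a \<Rightarrow> real"
  assumes [measurable]: "\<And>q. S q \<in> borel_measurable M"
    and i: "\<And>q. integrable M (\<lambda>\<omega>. (S q \<omega>)\<^sup>2)"
    and b: "\<And>q. (\<integral>\<omega>. (S q \<omega>)\<^sup>2 \<partial>M) \<le> K * 4 ^ q * rho a q" and K: "0 \<le> K"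
  shows "integrable M (\<lambda>\<omega>. (\<Sum>q\<le>r. S q \<omega>)\<^sup>2)"
    "(\<integral>\<omega>. (\<Sum>q\<le>r. S q \<omega>)\<^sup>2 \<partial>M) \<le> (2 / (sqrt 2 - 1)\<^sup>2) * K * 4 ^ r * rho a r"
proof -
  define u :: real where "u = sqrt 2"
  have u: "0 < u" "1 < u" "u\<^sup>2 = 2" unfolding u_def by auto
  define W where "W = (\<Sum>q\<le>r. u ^ q)"
  have W0: "0 \<le> W" unfolding W_def using u by (auto intro: sum_nonneg)
  have pt: "(\<Sum>q\<le>r. S q \<omega>)\<^sup>2 \<le> W * (\<Sum>q\<le>r. (S q \<omega>)\<^sup>2 / u ^ q)" for \<omega>
    unfolding W_def by (rule cs_weighted[OF u(1)])
  have i2: "integrable M (\<lambda>\<omega>. W * (\<Sum>q\<le>r. (S q \<omega>)\<^sup>2 / u ^ q))"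
    using i by auto
  show int: "integrable M (\<lambda>\<omega>. (\<Sum>q\<le>r. S q \<omega>)\<^sup>2)"
  proof (rule Bochner_Integration.integrable_bound[OF i2])
    show "(\<lambda>\<omega>. (\<Sum>q\<le>r. S q \<omega>)\<^sup>2) \<in> borel_measurable M" by measurable
    have "0 \<le> W * (\<Sum>q\<le>r. (S q \<omega>)\<^sup>2 / u ^ q)" for \<omega>
      using W0 u by (intro mult_nonneg_nonneg sum_nonneg) auto
    then show "AE x in M. norm ((\<Sum>q\<le>r. S q x)\<^sup>2) \<le> norm (W * (\<Sum>q\<le>r. (S q x)\<^sup>2 / u ^ q))"
      using pt by (intro AE_I2) auto
  qed
  define G where "G = (\<Sum>k<Suc r. (2 * a\<^sup>2) ^ k)"
  have G0: "0 \<le> G" unfolding G_def by (intro sum_nonneg) simp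
  have "(\<integral>\<omega>. (\<Sum>q\<le>r. S q \<omega>)\<^sup>2 \<partial>M) \<le> (\<integral>\<omega>. W * (\<Sum>q\<le>r. (S q \<omega>)\<^sup>2 / u ^ q) \<partial>M)"
    by (rule integral_mono[OF int i2 pt])
  also have "\<dots> = W * (\<Sum>q\<le>r. (\<integral>\<omega>. (S q \<omega>)\<^sup>2 \<partial>M) / u ^ q)"
    using i by (simp add: Bochner_Integration.integral_sum)
  also have "\<dots> \<le> W * (\<Sum>q\<le>r. K * G * u ^ q)"
  proof (intro mult_left_mono[OF _ W0] sum_mono)
    fix q assume q: "q \<in> {..r}"
    have "(\<integral>\<omega>. (S q \<omega>)\<^sup>2 \<partial>M) / u ^ q \<le> K * 4 ^ q * rho a q / u ^ q"
      using b[of q] u by (intro divide_right_mono) auto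
    also have "\<dots> \<le> K * (2 ^ q * G) / u ^ q"
      using rho_mono_sum[of q r a] q K u unfolding G_def
      by (intro divide_right_mono) (auto simp: mult.assoc intro: mult_left_mono)
    also have "\<dots> = K * G * u ^ q"
    proof -
      have "(2::real) ^ q = u ^ q * u ^ q" using u(3) by (simp add: power_mult_distrib[symmetric] power2_eq_square)
      then show ?thesis using u by (simp add: field_simps)
    qed
    finally show "(\<integral>\<omega>. (S q \<omega>)\<^sup>2 \<partial>M) / u ^ q \<le> K * G * u ^ q" .
  qed
  also have "\<dots> = K * G * W\<^sup>2" unfolding W_def by (simp add: sum_distrib_left power2_eq_square algebra_simps)
  also have "\<dots> \<le> K * G * (2 ^ Suc r / (u - 1)\<^sup>2)"
  proof (intro mult_left_mono)
    have "W = (u ^ Suc r - 1) / (u - 1)"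
      unfolding W_def using geometric_sum[of u "Suc r"] u by (simp add: lessThan_Suc_atMost)
    also have "\<dots> \<le> u ^ Suc r / (u - 1)" using u by (intro divide_right_mono) auto
    finally have "W\<^sup>2 \<le> (u ^ Suc r / (u - 1))\<^sup>2" using W0 by (intro power_mono) auto
    also have "\<dots> = 2 ^ Suc r / (u - 1)\<^sup>2"
    proof -
      have "(u ^ Suc r)\<^sup>2 = (u\<^sup>2) ^ Suc r" by (simp only: power_mult[symmetric] mult.commute)
      then show ?thesis by (simp add: power_divide u(3))
    qed
    finally show "W\<^sup>2 \<le> 2 ^ Suc r / (u - 1)\<^sup>2" .
  qed (use K G0 in auto)
  also have "\<dots> = (2 / (sqrt 2 - 1)\<^sup>2) * K * 4 ^ r * rho a r"
  proof -
    have "(4::real) ^ r * (1/2) ^ r = 2 ^ r"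
    proof -
      have "(4::real) ^ r * (1/2) ^ r = (4 * (1/2)) ^ r" by (simp only: power_mult_distrib)
      then show ?thesis by simp
    qed
    then have "4 ^ r * rho a r = 2 ^ r * G" unfolding rho_closed G_def by (simp add: mult.assoc[symmetric])
    then show ?thesis unfolding u_def by (simp add: field_simps)
  qed
  finally show "(\<integral>\<omega>. (\<Sum>q\<le>r. S q \<omega>)\<^sup>2 \<partial>M) \<le> (2 / (sqrt 2 - 1)\<^sup>2) * K * 4 ^ r * rho a r" .
qed

end


lemma Gen_disj: "p \<noteq> q \<Longrightarrow> Gen p \<inter> Gen q = {}"
proof (rule ccontr)
  assume pq: "p \<noteq> q" and "Gen p \<inter> Gen q \<noteq> {}"
  then obtain i where "i \<in> Gen p" "i \<in> Gen q" by blast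
  then have i: "2 ^ p \<le> i" "i < 2 ^ Suc p" "2 ^ q \<le> i" "i < 2 ^ Suc q" by (auto simp: Gen_def)
  show False
  proof (cases "p < q")
    case True
    then have "(2::nat) ^ Suc p \<le> 2 ^ q" by (intro power_increasing) auto
    then show False using i by linarith
  next
    case False
    then have "q < p" using pq by simp
    then have "(2::nat) ^ Suc q \<le> 2 ^ p" by (intro power_increasing) auto
    then show False using i by linarith
  qed
qed

lemma Gen_Tr: "q \<le> R \<Longrightarrow> Gen q \<subseteq> Tr R"
  unfolding Tr_def by auto

lemma finite_Tr[simp]: "finite (Tr R)" unfolding Tr_def by auto

lemma in_Tr: "i \<in> Tr R \<longleftrightarrow> (\<exists>q\<le>R. i \<in> Gen q)" unfolding Tr_def by auto

lemma LP_id: "id \<in> layer_perms R"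
  unfolding layer_perms_def by (simp add: permutes_id)

lemma LP_comp: "\<sigma> \<in> layer_perms R \<Longrightarrow> \<rho> \<in> layer_perms R \<Longrightarrow> \<sigma> \<circ> \<rho> \<in> layer_perms R"
proof -
  assume s: "\<sigma> \<in> layer_perms R" and r: "\<rho> \<in> layer_perms R"
  have "(\<sigma> \<circ> \<rho>) ` Gen q = Gen q" if "q \<le> R" for q
  proof -
    have "(\<sigma> \<circ> \<rho>) ` Gen q = \<sigma> ` (\<rho> ` Gen q)" by (simp add: image_comp)
    then show ?thesis using s r that unfolding layer_perms_def by simp
  qed
  moreover have "\<sigma> \<circ> \<rho> permutes Tr R"
    using s r unfolding layer_perms_def by (intro permutes_compose) auto
  ultimately show ?thesis unfolding layer_perms_def by simp
qed

lemma LP_inv: "\<sigma> \<in> layer_perms R \<Longrightarrow> inv \<sigma> \<in> layer_perms R"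
proof -
  assume s: "\<sigma> \<in> layer_perms R"
  then have p: "\<sigma> permutes Tr R" and g: "\<And>q. q \<le> R \<Longrightarrow> \<sigma> ` Gen q = Gen q" unfolding layer_perms_def by auto
  have "inv \<sigma> ` Gen q = Gen q" if "q \<le> R" for q
  proof -
    have "inv \<sigma> ` Gen q = inv \<sigma> ` (\<sigma> ` Gen q)" using g[OF that] by simp
    also have "\<dots> = Gen q" using permutes_inj[OF p] by (simp add: image_comp inv_o_cancel)
    finally show ?thesis .
  qed
  then show ?thesis using permutes_inv[OF p] unfolding layer_perms_def by auto
qed

lemma LP_transpose: "j \<in> Gen R \<Longrightarrow> k \<in> Gen R \<Longrightarrow> Transposition.transpose j k \<in> layer_perms R"
proof -
  assume j: "j \<in> Gen R" and k: "k \<in> Gen R"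
  have jk: "j \<in> Tr R" "k \<in> Tr R" using j k Gen_Tr[of R R] by auto
  have "Transposition.transpose j k ` Gen q = Gen q" if "q \<le> R" for q
  proof (cases "q = R")
    case True
    then show ?thesis using j k permutes_image[OF permutes_swap_id[OF j k]] by simp
  next
    case False
    then have "j \<notin> Gen q" "k \<notin> Gen q" using j k Gen_disj[of q R] by auto
    then show ?thesis by (auto simp: Transposition.transpose_def image_iff)
  qed
  then show ?thesis using permutes_swap_id[OF jk] unfolding layer_perms_def by auto
qed

lemma LP_finite: "finite (layer_perms R)"
  using finite_permutations[of "Tr R"] unfolding layer_perms_def by (auto intro: finite_subset)

lemma LP_Gen: "\<sigma> \<in> layer_perms R \<Longrightarrow> q \<le> R \<Longrightarrow> bij_betw \<sigma> (Gen q) (Gen q)"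
  unfolding layer_perms_def bij_betw_def using permutes_inj_on by blast

lemma LP_reindex:
  assumes \<rho>: "\<rho> \<in> layer_perms R"
  shows "(\<Sum>\<sigma>\<in>layer_perms R. g (\<sigma> \<circ> \<rho>)) = (\<Sum>\<sigma>\<in>layer_perms R. (g \<sigma> :: real))"
proof (rule sum.reindex_bij_betw)
  have p: "\<rho> permutes Tr R" using \<rho> unfolding layer_perms_def by auto
  show "bij_betw (\<lambda>\<sigma>. \<sigma> \<circ> \<rho>) (layer_perms R) (layer_perms R)"
  proof (rule bij_betwI[where g="\<lambda>\<sigma>. \<sigma> \<circ> inv \<rho>"])
    show "(\<lambda>\<sigma>. \<sigma> \<circ> \<rho>) \<in> layer_perms R \<rightarrow> layer_perms R" using LP_comp[OF _ \<rho>] by auto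
    show "(\<lambda>\<sigma>. \<sigma> \<circ> inv \<rho>) \<in> layer_perms R \<rightarrow> layer_perms R" using LP_comp[OF _ LP_inv[OF \<rho>]] by auto
    show "\<sigma> \<circ> \<rho> \<circ> inv \<rho> = \<sigma>" for \<sigma> by (simp add: comp_assoc permutes_inv_o[OF p])
    show "\<sigma> \<circ> inv \<rho> \<circ> \<rho> = \<sigma>" for \<sigma> by (simp add: comp_assoc permutes_inv_o[OF p])
  qed
qed

lemma LP_ex1: "i \<in> Gen R \<Longrightarrow> k \<in> Gen R \<Longrightarrow> \<exists>\<rho>\<in>layer_perms R. \<rho> k = i"
  using LP_transpose[of i R k] by (intro bexI[of _ "Transposition.transpose i k"]) auto

lemma LP_ex2:
  assumes "i \<in> Gen R" "i' \<in> Gen R" "k \<in> Gen R" "k' \<in> Gen R" "i \<noteq> i'" "k \<noteq> k'"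
  shows "\<exists>\<rho>\<in>layer_perms R. \<rho> k = i \<and> \<rho> k' = i'"
proof -
  define t1 where "t1 = Transposition.transpose i k"
  define t2 where "t2 = Transposition.transpose (t1 k') i'"
  have t1: "t1 \<in> layer_perms R" unfolding t1_def by (rule LP_transpose) (use assms in auto)
  have t1k: "t1 k = i" unfolding t1_def by simp
  have t1k': "t1 k' \<noteq> i" using assms unfolding t1_def by (auto simp: Transposition.transpose_eq_iff)
  have "t1 k' \<in> Gen R" using LP_Gen[OF t1 order.refl] assms(4) unfolding bij_betw_def by auto
  then have t2: "t2 \<in> layer_perms R" unfolding t2_def by (rule LP_transpose) (use assms in auto)
  have "(t2 \<circ> t1) k = i" using t1k t1k' assms(5) unfolding t2_def by (auto simp: Transposition.transpose_eq_iff)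
  moreover have "(t2 \<circ> t1) k' = i'" unfolding t2_def by simp
  ultimately show ?thesis using LP_comp[OF t2 t1] by blast
qed

lemma avg1:
  assumes i: "i \<in> Gen R"
  shows "real (card (Gen R)) * (\<Sum>\<sigma>\<in>layer_perms R. g (\<sigma> i)) = real (card (layer_perms R)) * (\<Sum>j\<in>Gen R. (g j :: real))"
proof -
  have inv: "(\<Sum>\<sigma>\<in>layer_perms R. g (\<sigma> i)) = (\<Sum>\<sigma>\<in>layer_perms R. g (\<sigma> k))" if k: "k \<in> Gen R" for k
  proof -
    obtain \<rho> where \<rho>: "\<rho> \<in> layer_perms R" "\<rho> k = i" using LP_ex1[OF i k] by blast
    have "(\<Sum>\<sigma>\<in>layer_perms R. g (\<sigma> i)) = (\<Sum>\<sigma>\<in>layer_perms R. g ((\<sigma> \<circ> \<rho>) k))" using \<rho>(2) by simp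
    also have "\<dots> = (\<Sum>\<sigma>\<in>layer_perms R. g (\<sigma> k))" by (rule LP_reindex[OF \<rho>(1), of "\<lambda>\<sigma>. g (\<sigma> k)"])
    finally show ?thesis .
  qed
  have "(\<Sum>k\<in>Gen R. \<Sum>\<sigma>\<in>layer_perms R. g (\<sigma> k)) = (\<Sum>k\<in>Gen R. \<Sum>\<sigma>\<in>layer_perms R. g (\<sigma> i))"
    by (rule sum.cong[OF refl], rule inv[symmetric])
  then have "real (card (Gen R)) * (\<Sum>\<sigma>\<in>layer_perms R. g (\<sigma> i)) = (\<Sum>k\<in>Gen R. \<Sum>\<sigma>\<in>layer_perms R. g (\<sigma> k))"
    by simp
  also have "\<dots> = (\<Sum>\<sigma>\<in>layer_perms R. \<Sum>k\<in>Gen R. g (\<sigma> k))" by (rule sum.swap)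
  also have "\<dots> = (\<Sum>\<sigma>\<in>layer_perms R. \<Sum>j\<in>Gen R. g j)"
    by (intro sum.cong refl sum.reindex_bij_betw LP_Gen) auto
  finally show ?thesis by simp
qed

lemma avg2:
  assumes i: "i \<in> Gen R" "i' \<in> Gen R" "i \<noteq> i'"
  shows "real (card (Gen R) * (card (Gen R) - 1)) * (\<Sum>\<sigma>\<in>layer_perms R. g (\<sigma> i) (\<sigma> i'))
       = real (card (layer_perms R)) * (\<Sum>j\<in>Gen R. \<Sum>j'\<in>Gen R - {j}. (g j j' :: real))"
proof -
  have inv: "(\<Sum>\<sigma>\<in>layer_perms R. g (\<sigma> i) (\<sigma> i')) = (\<Sum>\<sigma>\<in>layer_perms R. g (\<sigma> k) (\<sigma> k'))"
    if k: "k \<in> Gen R" "k' \<in> Gen R" "k \<noteq> k'" for k k'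
  proof -
    obtain \<rho> where \<rho>: "\<rho> \<in> layer_perms R" "\<rho> k = i" "\<rho> k' = i'" using LP_ex2[OF i(1,2) k(1,2) i(3) k(3)] by blast
    have "(\<Sum>\<sigma>\<in>layer_perms R. g (\<sigma> i) (\<sigma> i')) = (\<Sum>\<sigma>\<in>layer_perms R. g ((\<sigma> \<circ> \<rho>) k) ((\<sigma> \<circ> \<rho>) k'))" using \<rho> by simp
    also have "\<dots> = (\<Sum>\<sigma>\<in>layer_perms R. g (\<sigma> k) (\<sigma> k'))" by (rule LP_reindex[OF \<rho>(1), of "\<lambda>\<sigma>. g (\<sigma> k) (\<sigma> k')"])
    finally show ?thesis .
  qed
  have cnt: "(\<Sum>k\<in>Gen R. \<Sum>k'\<in>Gen R - {k}. c) = real (card (Gen R) * (card (Gen R) - 1)) * c" for c :: real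
    by (simp add: card_Diff_singleton)
  have "real (card (Gen R) * (card (Gen R) - 1)) * (\<Sum>\<sigma>\<in>layer_perms R. g (\<sigma> i) (\<sigma> i'))
      = (\<Sum>k\<in>Gen R. \<Sum>k'\<in>Gen R - {k}. \<Sum>\<sigma>\<in>layer_perms R. g (\<sigma> k) (\<sigma> k'))"
    unfolding cnt[symmetric] by (rule sum.cong[OF refl], rule sum.cong[OF refl], rule inv) auto
  also have "\<dots> = (\<Sum>k\<in>Gen R. \<Sum>\<sigma>\<in>layer_perms R. \<Sum>k'\<in>Gen R - {k}. g (\<sigma> k) (\<sigma> k'))"
    by (rule sum.cong[OF refl], rule sum.swap)
  also have "\<dots> = (\<Sum>\<sigma>\<in>layer_perms R. \<Sum>k\<in>Gen R. \<Sum>k'\<in>Gen R - {k}. g (\<sigma> k) (\<sigma> k'))"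
    by (rule sum.swap)
  also have "\<dots> = (\<Sum>\<sigma>\<in>layer_perms R. \<Sum>j\<in>Gen R. \<Sum>j'\<in>Gen R - {j}. g j j')"
  proof (rule sum.cong[OF refl])
    fix \<sigma> assume s: "\<sigma> \<in> layer_perms R"
    have b: "bij_betw \<sigma> (Gen R) (Gen R)" by (rule LP_Gen[OF s]) simp
    have "(\<Sum>k\<in>Gen R. \<Sum>k'\<in>Gen R - {k}. g (\<sigma> k) (\<sigma> k')) = (\<Sum>k\<in>Gen R. \<Sum>j'\<in>Gen R - {\<sigma> k}. g (\<sigma> k) j')"
    proof (rule sum.cong[OF refl])
      fix k assume k: "k \<in> Gen R"
      have inj: "inj_on \<sigma> (Gen R)" using b by (simp add: bij_betw_def)
      have img: "\<sigma> ` (Gen R - {k}) = Gen R - {\<sigma> k}"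
        using inj_on_image_set_diff[OF inj, of "Gen R" "{k}"] k b by (simp add: bij_betw_def)
      have "bij_betw \<sigma> (Gen R - {k}) (Gen R - {\<sigma> k})"
        unfolding img[symmetric] by (rule inj_on_imp_bij_betw) (rule inj_on_subset[OF inj], auto)
      then show "(\<Sum>k'\<in>Gen R - {k}. g (\<sigma> k) (\<sigma> k')) = (\<Sum>j'\<in>Gen R - {\<sigma> k}. g (\<sigma> k) j')"
        by (rule sum.reindex_bij_betw)
    qed
    also have "\<dots> = (\<Sum>j\<in>Gen R. \<Sum>j'\<in>Gen R - {j}. g j j')"
      by (rule sum.reindex_bij_betw[OF b, of "\<lambda>j. \<Sum>j'\<in>Gen R - {j}. g j j'"])
    finally show "(\<Sum>k\<in>Gen R. \<Sum>k'\<in>Gen R - {k}. g (\<sigma> k) (\<sigma> k')) = (\<Sum>j\<in>Gen R. \<Sum>j'\<in>Gen R - {j}. g j j')" .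
  qed
  finally show ?thesis by simp
qed



definition sig :: "('b \<Rightarrow> nat \<Rightarrow> nat) \<Rightarrow> nat \<Rightarrow> 'b \<Rightarrow> nat \<Rightarrow> nat" where
  "sig \<pi> R \<omega> = (\<lambda>i. if i \<in> Tr R then \<pi> \<omega> i else i)"

definition Cset :: "nat \<Rightarrow> (nat \<Rightarrow> nat) \<Rightarrow> (nat \<Rightarrow> nat) set" where
  "Cset R \<sigma> = {g. \<forall>i\<in>Tr R. g i = \<sigma> i}"

locale bmcP = bmcF M X \<nu> P \<mu> F
  for M :: "'b measure" and X :: "nat \<Rightarrow> 'b \<Rightarrow> 'a::metric_space"
    and \<nu> :: "'a measure" and P :: "'a \<Rightarrow> ('a \<times> 'a) measure" and \<mu> F +
  fixes \<pi> :: "'b \<Rightarrow> nat \<Rightarrow> nat"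
  assumes perm: "random_layer_perm M X \<pi>"
begin

lemma pi_Gen: "\<omega> \<in> space M \<Longrightarrow> \<pi> \<omega> ` Gen q = Gen q"
  using perm unfolding random_layer_perm_def by auto

lemma pi_inj: "\<omega> \<in> space M \<Longrightarrow> inj_on (\<pi> \<omega>) (Gen q)"
  by (rule eq_card_imp_inj_on) (auto simp: pi_Gen)

lemma pi_bij: "\<omega> \<in> space M \<Longrightarrow> bij_betw (\<pi> \<omega>) (Gen q) (Gen q)"
  using pi_inj pi_Gen by (simp add: bij_betw_def)

lemma pi_meas: "\<pi> \<in> M \<rightarrow>\<^sub>M Pi\<^sub>M UNIV (\<lambda>_. count_space UNIV)"
  using perm unfolding random_layer_perm_def by auto

lemma Xv_meas: "(\<lambda>\<omega> i. X i \<omega>) \<in> M \<rightarrow>\<^sub>M Pi\<^sub>M UNIV (\<lambda>_. borel)"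
  using perm unfolding random_layer_perm_def by auto

lemma pi_prob: "\<sigma> \<in> layer_perms R \<Longrightarrow> measure M {\<omega>\<in>space M. \<forall>i\<in>Tr R. \<pi> \<omega> i = \<sigma> i} = 1 / real (card (layer_perms R))"
  using perm unfolding random_layer_perm_def by auto

lemma pi_indep: "indep_set
       (sigma_sets (space M) {\<pi> -` A \<inter> space M | A. A \<in> sets (Pi\<^sub>M UNIV (\<lambda>_. count_space UNIV))})
       (sigma_sets (space M) {(\<lambda>\<omega> i. X i \<omega>) -` A \<inter> space M | A. A \<in> sets (Pi\<^sub>M UNIV (\<lambda>_. borel))})"
  using perm unfolding random_layer_perm_def by auto

lemma sig_LP: assumes \<omega>: "\<omega> \<in> space M" shows "sig \<pi> R \<omega> \<in> layer_perms R"
proof -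
  let ?s = "sig \<pi> R \<omega>"
  have img: "?s ` Gen q = Gen q" if "q \<le> R" for q
  proof -
    have "?s ` Gen q = \<pi> \<omega> ` Gen q" using Gen_Tr[OF that] unfolding sig_def by (intro image_cong) auto
    then show ?thesis using pi_Gen[OF \<omega>] by simp
  qed
  have imgT: "?s ` Tr R = Tr R" unfolding Tr_def image_UN using img by simp
  have inj: "inj_on ?s (Tr R)"
  proof (rule inj_onI)
    fix i j assume i: "i \<in> Tr R" and j: "j \<in> Tr R" and e: "?s i = ?s j"
    obtain q where q: "q \<le> R" "i \<in> Gen q" using i by (auto simp: in_Tr)
    obtain p where p: "p \<le> R" "j \<in> Gen p" using j by (auto simp: in_Tr)
    have e2: "\<pi> \<omega> i = \<pi> \<omega> j" using e i j unfolding sig_def by simp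
    have "\<pi> \<omega> i \<in> Gen q" "\<pi> \<omega> j \<in> Gen p" using q p pi_Gen[OF \<omega>] by auto
    then have "p = q" using e2 Gen_disj[of p q] by auto
    then show "i = j" using pi_inj[OF \<omega>, of q] q p e2 by (auto dest: inj_onD)
  qed
  have bij: "bij_betw ?s (Tr R) (Tr R)" using inj imgT by (simp add: bij_betw_def)
  have "?s permutes Tr R"
    by (rule bij_imp_permutes[OF bij]) (simp add: sig_def)
  then show ?thesis using img unfolding layer_perms_def by auto
qed

lemma Cset_iff: "\<sigma> \<in> layer_perms R \<Longrightarrow> \<omega> \<in> space M \<Longrightarrow> \<pi> \<omega> \<in> Cset R \<sigma> \<longleftrightarrow> \<sigma> = sig \<pi> R \<omega>"
proof -
  assume s: "\<sigma> \<in> layer_perms R" and \<omega>: "\<omega> \<in> space M"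
  have p: "\<sigma> permutes Tr R" using s unfolding layer_perms_def by auto
  show ?thesis
  proof
    assume "\<pi> \<omega> \<in> Cset R \<sigma>"
    then show "\<sigma> = sig \<pi> R \<omega>" using permutes_not_in[OF p] unfolding Cset_def sig_def by (auto intro!: ext)
  next
    assume "\<sigma> = sig \<pi> R \<omega>"
    then show "\<pi> \<omega> \<in> Cset R \<sigma>" unfolding Cset_def sig_def by auto
  qed
qed

lemma sum_LP_ind:
  assumes \<omega>: "\<omega> \<in> space M"
  shows "(\<Sum>\<sigma>\<in>layer_perms R. indicator (Cset R \<sigma>) (\<pi> \<omega>) * h \<sigma>) = (h (sig \<pi> R \<omega>) :: real)"
proof -
  have "(\<Sum>\<sigma>\<in>layer_perms R. indicator (Cset R \<sigma>) (\<pi> \<omega>) * h \<sigma>) = (\<Sum>\<sigma>\<in>layer_perms R. if \<sigma> = sig \<pi> R \<omega> then h \<sigma> else 0)"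
    using Cset_iff[OF _ \<omega>] by (intro sum.cong refl) (auto simp: indicator_def)
  also have "\<dots> = h (sig \<pi> R \<omega>)" using sig_LP[OF \<omega>] LP_finite[of R] by (simp add: sum.delta')
  finally show ?thesis .
qed

lemma Cset_meas: "Cset R \<sigma> \<in> sets (Pi\<^sub>M UNIV (\<lambda>_. count_space UNIV))"
proof -
  have "Cset R \<sigma> = {g \<in> space (Pi\<^sub>M UNIV (\<lambda>_. count_space UNIV)). \<forall>i\<in>Tr R. g i = \<sigma> i}"
    by (simp add: Cset_def space_PiM)
  also have "\<dots> \<in> sets (Pi\<^sub>M UNIV (\<lambda>_. count_space UNIV))"
    by measurable
  finally show ?thesis .
qed

lemma indep_prod:
  assumes \<Phi>[measurable]: "\<Phi> \<in> borel_measurable (Pi\<^sub>M UNIV (\<lambda>_. borel))"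
    and int: "integrable M (\<lambda>\<omega>. \<Phi> (\<lambda>i. X i \<omega>))"
  shows "(\<integral>\<omega>. indicator (Cset R \<sigma>) (\<pi> \<omega>) * \<Phi> (\<lambda>i. X i \<omega>) \<partial>M)
        = prob {\<omega>\<in>space M. \<pi> \<omega> \<in> Cset R \<sigma>} * (\<integral>\<omega>. \<Phi> (\<lambda>i. X i \<omega>) \<partial>M)"
proof -
  note [measurable] = pi_meas Xv_meas Cset_meas
  define Y1 where "Y1 = (\<lambda>\<omega>. indicator (Cset R \<sigma>) (\<pi> \<omega>) :: real)"
  define Y2 where "Y2 = (\<lambda>\<omega>. \<Phi> (\<lambda>i. X i \<omega>))"
  have ind[measurable]: "(\<lambda>g. indicator (Cset R \<sigma>) g :: real) \<in> borel_measurable (Pi\<^sub>M UNIV (\<lambda>_. count_space UNIV))"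
    by (rule borel_measurable_indicator) (rule Cset_meas)
  have [measurable]: "Y1 \<in> borel_measurable M" unfolding Y1_def
    by (rule measurable_compose[OF pi_meas ind])
  have [measurable]: "Y2 \<in> borel_measurable M" unfolding Y2_def
    by (rule measurable_compose[OF Xv_meas \<Phi>])
  let ?A = "sigma_sets (space M) {\<pi> -` A \<inter> space M | A. A \<in> sets (Pi\<^sub>M UNIV (\<lambda>_. count_space UNIV))}"
  let ?B = "sigma_sets (space M) {(\<lambda>\<omega> i. X i \<omega>) -` A \<inter> space M | A. A \<in> sets (Pi\<^sub>M UNIV (\<lambda>_. borel))}"
  have AB: "\<forall>a\<in>?A. \<forall>b\<in>?B. prob (a \<inter> b) = prob a * prob b"
    using pi_indep unfolding indep_sets2_eq by auto
  have s1: "sigma_sets (space M) {Y1 -` A \<inter> space M | A. A \<in> sets borel} \<subseteq> ?A"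
  proof (rule sigma_sets_mono, safe)
    fix A :: "real set" assume A: "A \<in> sets borel"
    have "Y1 -` A \<inter> space M = \<pi> -` ((\<lambda>g. indicator (Cset R \<sigma>) g :: real) -` A \<inter> space (Pi\<^sub>M UNIV (\<lambda>_. count_space UNIV))) \<inter> space M"
      unfolding Y1_def using measurable_space[OF pi_meas] by auto
    moreover have "(\<lambda>g. indicator (Cset R \<sigma>) g :: real) -` A \<inter> space (Pi\<^sub>M UNIV (\<lambda>_. count_space UNIV)) \<in> sets (Pi\<^sub>M UNIV (\<lambda>_. count_space UNIV))"
      using measurable_sets[OF ind A] .
    ultimately show "Y1 -` A \<inter> space M \<in> ?A" by blast
  qed
  have s2: "sigma_sets (space M) {Y2 -` A \<inter> space M | A. A \<in> sets borel} \<subseteq> ?B"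
  proof (rule sigma_sets_mono, safe)
    fix A :: "real set" assume A: "A \<in> sets borel"
    have "Y2 -` A \<inter> space M = (\<lambda>\<omega> i. X i \<omega>) -` (\<Phi> -` A \<inter> space (Pi\<^sub>M UNIV (\<lambda>_. borel))) \<inter> space M"
      unfolding Y2_def using measurable_space[OF Xv_meas] by auto
    moreover have "\<Phi> -` A \<inter> space (Pi\<^sub>M UNIV (\<lambda>_. borel)) \<in> sets (Pi\<^sub>M UNIV (\<lambda>_. borel))"
      using measurable_sets[OF \<Phi> A] .
    ultimately show "Y2 -` A \<inter> space M \<in> ?B" by blast
  qed
  have ev1: "sigma_sets (space M) {Y1 -` A \<inter> space M | A. A \<in> sets borel} \<subseteq> events"
    by (rule sets.sigma_sets_subset) auto
  have ev2: "sigma_sets (space M) {Y2 -` A \<inter> space M | A. A \<in> sets borel} \<subseteq> events"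
    by (rule sets.sigma_sets_subset) auto
  have "indep_set (sigma_sets (space M) {Y1 -` A \<inter> space M | A. A \<in> sets borel})
                   (sigma_sets (space M) {Y2 -` A \<inter> space M | A. A \<in> sets borel})"
    unfolding indep_sets2_eq
  proof (intro conjI ev1 ev2 ballI)
    fix a b assume "a \<in> sigma_sets (space M) {Y1 -` A \<inter> space M | A. A \<in> sets borel}"
      "b \<in> sigma_sets (space M) {Y2 -` A \<inter> space M | A. A \<in> sets borel}"
    then have "a \<in> ?A" "b \<in> ?B" using s1 s2 by (auto simp only: subset_iff)
    then show "prob (a \<inter> b) = prob a * prob b" using AB by blast
  qed
  then have "indep_var borel Y1 borel Y2"
    unfolding indep_var_eq by simp
  moreover have "integrable M Y1" unfolding Y1_def
    by (rule integrable_const_bound[where B=1]) (auto simp: indicator_def)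
  ultimately have "(\<integral>\<omega>. Y1 \<omega> * Y2 \<omega> \<partial>M) = (\<integral>\<omega>. Y1 \<omega> \<partial>M) * (\<integral>\<omega>. Y2 \<omega> \<partial>M)"
    using int unfolding Y2_def by (intro indep_var_lebesgue_integral) auto
  moreover have "(\<integral>\<omega>. Y1 \<omega> \<partial>M) = prob {\<omega>\<in>space M. \<pi> \<omega> \<in> Cset R \<sigma>}"
  proof -
    have "(\<integral>\<omega>. Y1 \<omega> \<partial>M) = (\<integral>\<omega>. indicator {\<omega>\<in>space M. \<pi> \<omega> \<in> Cset R \<sigma>} \<omega> \<partial>M)"
      unfolding Y1_def by (intro Bochner_Integration.integral_cong) (auto simp: indicator_def)
    also have "\<dots> = prob {\<omega>\<in>space M. \<pi> \<omega> \<in> Cset R \<sigma>}" by simp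
    finally show ?thesis .
  qed
  ultimately show ?thesis unfolding Y1_def Y2_def by simp
qed

end


lemma rgen_bounds:
  assumes n: "1 \<le> n"
  shows "2 ^ rgen n \<le> n" "n < 2 ^ (rgen n + 1)"
proof -
  have l: "0 \<le> log 2 (real n)" using n by simp
  then have fl: "\<lfloor>log 2 (real n)\<rfloor> = int (rgen n)" unfolding rgen_def by simp
  have "(2::nat) ^ rgen n \<le> n \<and> n < 2 ^ (rgen n + 1)"
    using floor_log_nat_eq_powr_iff[of 2 n "rgen n"] n fl by simp
  then show "2 ^ rgen n \<le> n" "n < 2 ^ (rgen n + 1)" by auto
qed

lemma UN_Gen_less: "(\<Union>q<r. Gen q) = {1..<2 ^ r}"
proof (induction r)
  case (Suc r)
  have "(\<Union>q<Suc r. Gen q) = (\<Union>q<r. Gen q) \<union> Gen r" by (simp add: lessThan_Suc Un_commute)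
  also have "\<dots> = {1..<2 ^ r} \<union> {2 ^ r..<2 ^ Suc r}" using Suc.IH by (simp add: Gen_def)
  also have "\<dots> = {1..<2 ^ Suc r}" by (rule ivl_disj_un) auto
  finally show ?case .
qed (simp add: Gen_def)

lemma sum_UN_Gen: "(\<Sum>i\<in>(\<Union>q<r. Gen q). a i) = (\<Sum>q<r. \<Sum>i\<in>Gen q. (a i :: real))"
  by (rule sum.UNION_disjoint) (auto dest: Gen_disj[THEN disjoint_iff_not_equal[THEN iffD1], rotated])

lemma sum_Tr: "(\<Sum>i\<in>Tr r. a i) = (\<Sum>q\<le>r. \<Sum>i\<in>Gen q. (a i :: real))"
  unfolding Tr_def
  by (rule sum.UNION_disjoint) (auto dest: Gen_disj[THEN disjoint_iff_not_equal[THEN iffD1], rotated])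

lemma card_Tr: "card (Tr r) = 2 ^ (r + 1) - 1"
proof -
  have "Tr r = (\<Union>q<Suc r. Gen q)" unfolding Tr_def by (simp add: lessThan_Suc_atMost)
  then show ?thesis unfolding UN_Gen_less by simp
qed

lemma sq_sum_expand: "(\<Sum>j\<in>G. a j)\<^sup>2 = (\<Sum>j\<in>G. (a j)\<^sup>2) + (\<Sum>j\<in>G. \<Sum>k\<in>G - {j}. a j * (a k :: real))"
  if "finite G" for G
proof -
  have "(\<Sum>j\<in>G. a j)\<^sup>2 = (\<Sum>j\<in>G. \<Sum>k\<in>G. a j * a k)" by (simp add: power2_eq_square sum_product)
  also have "\<dots> = (\<Sum>j\<in>G. (a j)\<^sup>2 + (\<Sum>k\<in>G - {j}. a j * a k))"
    using that by (intro sum.cong refl) (simp add: sum.remove[of G] power2_eq_square)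
  finally show ?thesis by (simp add: sum.distrib)
qed



lemma ab_bound: "\<bar>a * b\<bar> \<le> (a\<^sup>2 + b\<^sup>2) / (2::real)"
  using sum_squares_bound[of "\<bar>a\<bar>" "\<bar>b\<bar>"] by (simp add: abs_mult power2_eq_square)

locale bmcPf = bmcP M X \<nu> P \<mu> F \<pi>
  for M :: "'b measure" and X :: "nat \<Rightarrow> 'b \<Rightarrow> 'a::metric_space"
    and \<nu> :: "'a measure" and P :: "'a \<Rightarrow> ('a \<times> 'a) measure" and \<mu> F \<pi> +
  fixes f :: "'a \<times> 'a \<times> 'a \<Rightarrow> real" and \<alpha> :: real
  assumes fp: "pint f" and f2p: "pint (\<lambda>t. (f t)\<^sup>2)"
    and PfF: "P3 P f \<in> F" and Pf2F: "P3 P (\<lambda>t. (f t)\<^sup>2) \<in> F"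
    and cent: "(\<integral>x. P3 P f x \<partial>\<mu>) = 0" and hyp: "H1 P \<mu> F \<alpha>"
begin

lemma al: "0 < \<alpha>" "\<alpha> < 1" using hyp unfolding H1_def by auto

lemma f_meas[measurable]: "f \<in> borel_measurable (borel \<Otimes>\<^sub>M borel \<Otimes>\<^sub>M borel)"
  using fp by (simp add: pint_def)

lemma fD_meas[measurable]: "(\<lambda>\<omega>. f (Delta X j \<omega>)) \<in> borel_measurable M"
  by measurable

lemma fsq_int: "j \<in> Gen r \<Longrightarrow> integrable M (\<lambda>\<omega>. (f (Delta X j \<omega>))\<^sup>2)"
  using single_nn(1)[OF _ f2p _ F_int[OF Pf2F]] by auto

lemma fprod_int: "j \<in> Gen r \<Longrightarrow> k \<in> Gen r' \<Longrightarrow> integrable M (\<lambda>\<omega>. f (Delta X j \<omega>) * f (Delta X k \<omega>))"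
proof -
  assume j: "j \<in> Gen r" and k: "k \<in> Gen r'"
  have i: "integrable M (\<lambda>\<omega>. ((f (Delta X j \<omega>))\<^sup>2 + (f (Delta X k \<omega>))\<^sup>2) / 2)"
    using fsq_int[OF j] fsq_int[OF k] by auto
  show ?thesis
  proof (rule Bochner_Integration.integrable_bound[OF i])
    show "(\<lambda>\<omega>. f (Delta X j \<omega>) * f (Delta X k \<omega>)) \<in> borel_measurable M" by measurable
    show "AE x in M. norm (f (Delta X j x) * f (Delta X k x)) \<le> norm (((f (Delta X j x))\<^sup>2 + (f (Delta X k x))\<^sup>2) / 2)"
      using ab_bound by (intro AE_I2) (auto intro: order.trans[OF _ abs_ge_self])
  qed
qed

definition Sr :: "nat \<Rightarrow> 'b \<Rightarrow> real" where
  "Sr r \<omega> = (\<Sum>i\<in>Gen r. f (Delta X i \<omega>))"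

lemma Sr_meas[measurable]: "Sr r \<in> borel_measurable M"
  unfolding Sr_def[abs_def] by measurable

lemma Sr_bound: "\<exists>K\<ge>0. \<forall>r. integrable M (\<lambda>\<omega>. (Sr r \<omega>)\<^sup>2) \<and> (\<integral>\<omega>. (Sr r \<omega>)\<^sup>2 \<partial>M) \<le> K * 4 ^ r * rho \<alpha> r"
  unfolding Sr_def using S_bound[OF fp f2p PfF Pf2F cent hyp] .

lemma MG_bound:
  "\<exists>c>0. \<forall>\<delta>>0. \<forall>r. (\<alpha>\<^sup>2 = 1/2 \<longrightarrow> r \<ge> 1) \<longrightarrow>
        measure M {\<omega>\<in>space M. \<bar>MG X r f \<omega>\<bar> > \<delta>} \<le> c / \<delta>\<^sup>2 * rate \<alpha> r"
proof -
  obtain K where K: "K \<ge> 0" "\<And>r. integrable M (\<lambda>\<omega>. (Sr r \<omega>)\<^sup>2)" "\<And>r. (\<integral>\<omega>. (Sr r \<omega>)\<^sup>2 \<partial>M) \<le> K * 4 ^ r * rho \<alpha> r"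
    using Sr_bound by blast
  obtain C where C: "C > 0" "\<And>r. (\<alpha>\<^sup>2 = 1/2 \<longrightarrow> r \<ge> 1) \<Longrightarrow> rho \<alpha> r \<le> C * rate \<alpha> r"
    using rho_rate[OF al(1)] by blast
  have "measure M {\<omega>\<in>space M. \<bar>MG X r f \<omega>\<bar> > \<delta>} \<le> (K * C + 1) / \<delta>\<^sup>2 * rate \<alpha> r"
    if d: "\<delta> > 0" and r: "\<alpha>\<^sup>2 = 1/2 \<longrightarrow> r \<ge> 1" for \<delta> r
  proof -
    have p: "(0::real) < 2 ^ r" by simp
    have e: "{\<omega>\<in>space M. \<bar>MG X r f \<omega>\<bar> > \<delta>} = {\<omega>\<in>space M. \<bar>Sr r \<omega>\<bar> > \<delta> * 2 ^ r}"
      unfolding MG_def Sr_def card_Gen using p by (auto simp: abs_divide field_simps)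
    have "measure M {\<omega>\<in>space M. \<bar>Sr r \<omega>\<bar> > \<delta> * 2 ^ r} \<le> (\<integral>\<omega>. (Sr r \<omega>)\<^sup>2 \<partial>M) / (\<delta> * 2 ^ r)\<^sup>2"
      by (rule cheb[OF Sr_meas K(2)]) (use d in simp)
    also have "\<dots> \<le> K * 4 ^ r * rho \<alpha> r / (\<delta> * 2 ^ r)\<^sup>2"
      by (rule divide_right_mono[OF K(3)]) simp
    also have "\<dots> = K * rho \<alpha> r / \<delta>\<^sup>2"
    proof -
      have "(4::real) ^ r = 2 ^ r * 2 ^ r" using power_mult_distrib[of "2::real" 2 r] by simp
      then have "(\<delta> * 2 ^ r)\<^sup>2 = \<delta>\<^sup>2 * 4 ^ r"
        by (simp add: power_mult_distrib power2_eq_square)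
      then show ?thesis using d by (simp add: field_simps)
    qed
    also have "\<dots> \<le> K * (C * rate \<alpha> r) / \<delta>\<^sup>2"
      using C(2)[OF r] K(1) by (intro divide_right_mono mult_left_mono) auto
    also have "\<dots> \<le> (K * C + 1) / \<delta>\<^sup>2 * rate \<alpha> r"
    proof -
      have "K * (C * rate \<alpha> r) \<le> (K * C + 1) * rate \<alpha> r"
        using rate_nonneg[of \<alpha> r] al by (simp add: algebra_simps)
      then show ?thesis by (simp add: divide_right_mono)
    qed
    finally show ?thesis unfolding e .
  qed
  moreover have "K * C + 1 > 0" using K(1) C(1) by (simp add: add_nonneg_pos)
  ultimately show ?thesis by blast
qed

end


context bmcPf begin

lemma rho_rate1: "\<exists>C>0. \<forall>r. (\<alpha>\<^sup>2 = 1/2 \<longrightarrow> r \<ge> 1) \<longrightarrow> rho \<alpha> r \<le> C * rate1 \<alpha> r"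
proof -
  obtain C where C: "C > 0" "\<And>r. (\<alpha>\<^sup>2 = 1/2 \<longrightarrow> r \<ge> 1) \<Longrightarrow> rho \<alpha> r \<le> C * rate \<alpha> r"
    using rho_rate[OF al(1)] by blast
  have "rho \<alpha> r \<le> (C * max 2 (1 / \<alpha>\<^sup>2)) * rate1 \<alpha> r" if "\<alpha>\<^sup>2 = 1/2 \<longrightarrow> r \<ge> 1" for r
  proof -
    have "rho \<alpha> r \<le> C * rate \<alpha> r" using C(2)[OF that] .
    also have "\<dots> \<le> C * (max 2 (1 / \<alpha>\<^sup>2) * rate1 \<alpha> r)"
      using rate_rate1[OF al(1)] C(1) by (intro mult_left_mono) auto
    finally show ?thesis by (simp add: mult.assoc)
  qed
  moreover have "C * max 2 (1 / \<alpha>\<^sup>2) > 0" using C(1) by (intro mult_pos_pos) (auto simp: less_max_iff_disj)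
  ultimately show ?thesis by blast
qed

lemma four_pow: "(4::real) ^ r = 2 ^ r * 2 ^ r"
  using power_mult_distrib[of "2::real" 2 r] by simp

lemma cheb_scaled:
  assumes Z[measurable]: "Z \<in> borel_measurable M" and i: "integrable M (\<lambda>\<omega>. (Z \<omega>)\<^sup>2)"
    and b: "(\<integral>\<omega>. (Z \<omega>)\<^sup>2 \<partial>M) \<le> B * 4 ^ r * rho \<alpha> r" and B: "0 \<le> B"
    and N: "2 ^ r \<le> N" and d: "0 < \<delta>"
  shows "measure M {\<omega>\<in>space M. \<bar>Z \<omega> / N\<bar> > \<delta>} \<le> B * rho \<alpha> r / \<delta>\<^sup>2"
proof -
  have N0: "0 < N" using N by (rule order.strict_trans2[rotated]) simp
  have e: "{\<omega>\<in>space M. \<bar>Z \<omega> / N\<bar> > \<delta>} = {\<omega>\<in>space M. \<bar>Z \<omega>\<bar> > \<delta> * N}"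
    using N0 by (auto simp: abs_divide field_simps)
  have "measure M {\<omega>\<in>space M. \<bar>Z \<omega>\<bar> > \<delta> * N} \<le> (\<integral>\<omega>. (Z \<omega>)\<^sup>2 \<partial>M) / (\<delta> * N)\<^sup>2"
    by (rule cheb[OF Z i]) (use d N0 in simp)
  also have "\<dots> \<le> B * 4 ^ r * rho \<alpha> r / (\<delta> * N)\<^sup>2"
    by (rule divide_right_mono[OF b]) simp
  also have "\<dots> \<le> B * 4 ^ r * rho \<alpha> r / (\<delta> * 2 ^ r)\<^sup>2"
  proof (rule divide_left_mono)
    show "0 \<le> B * 4 ^ r * rho \<alpha> r" using B rho_nonneg by simp
    show "(\<delta> * 2 ^ r)\<^sup>2 \<le> (\<delta> * N)\<^sup>2" using d N by (intro power_mono mult_left_mono) auto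
    show "0 < (\<delta> * N)\<^sup>2 * (\<delta> * 2 ^ r)\<^sup>2" using d N0 by simp
  qed
  also have "\<dots> = B * rho \<alpha> r / \<delta>\<^sup>2"
    using d by (simp add: four_pow power_mult_distrib power2_eq_square field_simps)
  finally show ?thesis unfolding e .
qed

lemma MT_bound:
  "\<exists>c>0. \<forall>\<delta>>0. \<forall>r. (\<alpha>\<^sup>2 = 1/2 \<longrightarrow> r \<ge> 1) \<longrightarrow>
        measure M {\<omega>\<in>space M. \<bar>MT X r f \<omega>\<bar> > \<delta>} \<le> c / \<delta>\<^sup>2 * rate1 \<alpha> r"
proof -
  obtain K where K: "K \<ge> 0" "\<And>r. integrable M (\<lambda>\<omega>. (Sr r \<omega>)\<^sup>2)" "\<And>r. (\<integral>\<omega>. (Sr r \<omega>)\<^sup>2 \<partial>M) \<le> K * 4 ^ r * rho \<alpha> r"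
    using Sr_bound by blast
  obtain C where C: "C > 0" "\<And>r. (\<alpha>\<^sup>2 = 1/2 \<longrightarrow> r \<ge> 1) \<Longrightarrow> rho \<alpha> r \<le> C * rate1 \<alpha> r"
    using rho_rate1 by blast
  define Ct where "Ct = 2 / (sqrt 2 - 1)\<^sup>2"
  have Ct: "0 \<le> Ct" unfolding Ct_def by simp
  have "measure M {\<omega>\<in>space M. \<bar>MT X r f \<omega>\<bar> > \<delta>} \<le> (Ct * K * C + 1) / \<delta>\<^sup>2 * rate1 \<alpha> r"
    if d: "\<delta> > 0" and r: "\<alpha>\<^sup>2 = 1/2 \<longrightarrow> r \<ge> 1" for \<delta> r
  proof -
    have MT: "MT X r f \<omega> = (\<Sum>q\<le>r. Sr q \<omega>) / real (card (Tr r))" for \<omega>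
      unfolding MT_def Sr_def sum_Tr ..
    have N: "(2::real) ^ r \<le> real (card (Tr r))"
    proof -
      have "(2::nat) ^ r \<le> 2 ^ (r + 1) - 1" by simp
      then show ?thesis unfolding card_Tr by (metis of_nat_le_iff of_nat_numeral of_nat_power)
    qed
    have "measure M {\<omega>\<in>space M. \<bar>MT X r f \<omega>\<bar> > \<delta>} \<le> (Ct * K) * rho \<alpha> r / \<delta>\<^sup>2"
      unfolding MT
      by (rule cheb_scaled[OF _ tree_bound(1)[where S=Sr and K=K and a=\<alpha>, OF Sr_meas K(2) K(3) K(1)] _ _ N d])
         (use tree_bound(2)[where S=Sr and K=K and a=\<alpha>, OF Sr_meas K(2) K(3) K(1)] Ct K(1) in \<open>auto simp: Ct_def\<close>)
    also have "\<dots> \<le> (Ct * K) * (C * rate1 \<alpha> r) / \<delta>\<^sup>2"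
      using C(2)[OF r] K(1) Ct by (intro divide_right_mono mult_left_mono) auto
    also have "\<dots> \<le> (Ct * K * C + 1) / \<delta>\<^sup>2 * rate1 \<alpha> r"
    proof -
      have "(Ct * K) * (C * rate1 \<alpha> r) \<le> (Ct * K * C + 1) * rate1 \<alpha> r"
        using rate1_nonneg[of \<alpha> r] al by (simp add: algebra_simps)
      then show ?thesis by (simp add: divide_right_mono)
    qed
    finally show ?thesis .
  qed
  moreover have "Ct * K * C + 1 > 0" using K(1) C(1) Ct by (simp add: add_nonneg_pos)
  ultimately show ?thesis by blast
qed

end


context bmcPf begin

lemma LP_Gen_mem: "\<sigma> \<in> layer_perms r \<Longrightarrow> i \<in> Gen r \<Longrightarrow> \<sigma> i \<in> Gen r"
  using LP_Gen[of \<sigma> r r] by (auto simp: bij_betw_def)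

lemma ind_meas[measurable]: "(\<lambda>\<omega>. indicator (Cset r \<sigma>) (\<pi> \<omega>) :: real) \<in> borel_measurable M"
  by (rule measurable_compose[OF pi_meas borel_measurable_indicator[OF Cset_meas]])

lemma Bs_Phi:
  "(\<lambda>x. (\<Sum>i\<in>I. f (x (\<sigma> i), x (2 * \<sigma> i), x (2 * \<sigma> i + 1)))\<^sup>2) \<in> borel_measurable (Pi\<^sub>M UNIV (\<lambda>_. borel))"
  by measurable

lemma prob_Cset: "\<sigma> \<in> layer_perms r \<Longrightarrow> prob {\<omega>\<in>space M. \<pi> \<omega> \<in> Cset r \<sigma>} = 1 / real (card (layer_perms r))"
  using pi_prob[of \<sigma> r] unfolding Cset_def by simp

lemma div_helper: "(n::real) \<noteq> 0 \<Longrightarrow> l \<noteq> 0 \<Longrightarrow> n * s = l * d \<Longrightarrow> s / l = d / n"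
  by (simp add: field_simps)

lemma perm_part:
  assumes I: "I \<subseteq> Gen r"
  defines "W \<equiv> \<lambda>\<omega>. (\<Sum>\<sigma>\<in>layer_perms r. indicator (Cset r \<sigma>) (\<pi> \<omega>) * (\<Sum>i\<in>I. f (Delta X (\<sigma> i) \<omega>)))"
  shows "integrable M (\<lambda>\<omega>. (W \<omega>)\<^sup>2)"
    "(\<integral>\<omega>. (W \<omega>)\<^sup>2 \<partial>M) \<le> (\<integral>\<omega>. (\<Sum>j\<in>Gen r. (f (Delta X j \<omega>))\<^sup>2) \<partial>M) + (\<integral>\<omega>. (Sr r \<omega>)\<^sup>2 \<partial>M)"
proof -
  define LP where "LP = layer_perms r"
  define Bs where "Bs = (\<lambda>\<sigma> \<omega>. \<Sum>i\<in>I. f (Delta X (\<sigma> i) \<omega>))"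
  have finI: "finite I" using I by (rule finite_subset) simp
  have finLP: "finite LP" unfolding LP_def by (rule LP_finite)
  have [measurable]: "Bs \<sigma> \<in> borel_measurable M" for \<sigma> unfolding Bs_def by measurable
  have Bs2_exp: "(Bs \<sigma> \<omega>)\<^sup>2 = (\<Sum>i\<in>I. \<Sum>i'\<in>I. f (Delta X (\<sigma> i) \<omega>) * f (Delta X (\<sigma> i') \<omega>))" for \<sigma> \<omega>
    unfolding Bs_def by (simp add: power2_eq_square sum_product)
  have cint: "integrable M (\<lambda>\<omega>. f (Delta X (\<sigma> i) \<omega>) * f (Delta X (\<sigma> i') \<omega>))"
    if "\<sigma> \<in> LP" "i \<in> I" "i' \<in> I" for \<sigma> i i'
  proof -
    have "\<sigma> i \<in> Gen r" "\<sigma> i' \<in> Gen r" using LP_Gen_mem[of \<sigma> r] that I unfolding LP_def by auto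
    then show ?thesis by (rule fprod_int)
  qed
  have Bs2_int: "integrable M (\<lambda>\<omega>. (Bs \<sigma> \<omega>)\<^sup>2)" if "\<sigma> \<in> LP" for \<sigma>
    unfolding Bs2_exp using cint[OF that] by auto
  define c where "c = (\<lambda>j k. \<integral>\<omega>. f (Delta X j \<omega>) * f (Delta X k \<omega>) \<partial>M)"
  have Bs2_eq: "(\<integral>\<omega>. (Bs \<sigma> \<omega>)\<^sup>2 \<partial>M) = (\<Sum>i\<in>I. \<Sum>i'\<in>I. c (\<sigma> i) (\<sigma> i'))" if "\<sigma> \<in> LP" for \<sigma>
    unfolding Bs2_exp c_def using cint[OF that] by (simp add: Bochner_Integration.integral_sum)
  have Wsq: "(W \<omega>)\<^sup>2 = (\<Sum>\<sigma>\<in>LP. indicator (Cset r \<sigma>) (\<pi> \<omega>) * (Bs \<sigma> \<omega>)\<^sup>2)" if "\<omega> \<in> space M" for \<omega>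
  proof -
    have "W \<omega> = Bs (sig \<pi> r \<omega>) \<omega>"
      using sum_LP_ind[OF that, of r "\<lambda>\<sigma>. Bs \<sigma> \<omega>"] by (simp add: W_def Bs_def)
    moreover have "(\<Sum>\<sigma>\<in>LP. indicator (Cset r \<sigma>) (\<pi> \<omega>) * (Bs \<sigma> \<omega>)\<^sup>2) = (Bs (sig \<pi> r \<omega>) \<omega>)\<^sup>2"
      unfolding LP_def using sum_LP_ind[OF that, of r "\<lambda>\<sigma>. (Bs \<sigma> \<omega>)\<^sup>2"] by simp
    ultimately show ?thesis by simp
  qed
  have term_int: "integrable M (\<lambda>\<omega>. indicator (Cset r \<sigma>) (\<pi> \<omega>) * (Bs \<sigma> \<omega>)\<^sup>2)" if "\<sigma> \<in> LP" for \<sigma>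
  proof (rule Bochner_Integration.integrable_bound[OF Bs2_int[OF that]])
    show "(\<lambda>\<omega>. indicator (Cset r \<sigma>) (\<pi> \<omega>) * (Bs \<sigma> \<omega>)\<^sup>2) \<in> borel_measurable M" by measurable
    show "AE x in M. norm (indicator (Cset r \<sigma>) (\<pi> x) * (Bs \<sigma> x)\<^sup>2) \<le> norm ((Bs \<sigma> x)\<^sup>2)"
      by (intro AE_I2) (auto simp: indicator_def)
  qed
  have int_sum: "integrable M (\<lambda>\<omega>. \<Sum>\<sigma>\<in>LP. indicator (Cset r \<sigma>) (\<pi> \<omega>) * (Bs \<sigma> \<omega>)\<^sup>2)"
    using term_int by auto
  show "integrable M (\<lambda>\<omega>. (W \<omega>)\<^sup>2)"
    by (rule Bochner_Integration.integrable_cong[THEN iffD2, OF refl _ int_sum]) (simp add: Wsq)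
  have Bs_X: "Bs \<sigma> \<omega> = (\<lambda>x. \<Sum>i\<in>I. f (x (\<sigma> i), x (2 * \<sigma> i), x (2 * \<sigma> i + 1))) (\<lambda>i. X i \<omega>)" for \<sigma> \<omega>
    unfolding Bs_def Delta_def by simp
  have term_eq: "(\<integral>\<omega>. indicator (Cset r \<sigma>) (\<pi> \<omega>) * (Bs \<sigma> \<omega>)\<^sup>2 \<partial>M) = (\<integral>\<omega>. (Bs \<sigma> \<omega>)\<^sup>2 \<partial>M) / real (card LP)"
    if s: "\<sigma> \<in> LP" for \<sigma>
  proof -
    have "(\<integral>\<omega>. indicator (Cset r \<sigma>) (\<pi> \<omega>) * (Bs \<sigma> \<omega>)\<^sup>2 \<partial>M)
        = prob {\<omega>\<in>space M. \<pi> \<omega> \<in> Cset r \<sigma>} * (\<integral>\<omega>. (Bs \<sigma> \<omega>)\<^sup>2 \<partial>M)"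
      unfolding Bs_X by (rule indep_prod[OF Bs_Phi]) (use Bs2_int[OF s] in \<open>simp add: Bs_X\<close>)
    then show ?thesis using prob_Cset[of \<sigma> r] s unfolding LP_def by simp
  qed
  have "(\<integral>\<omega>. (W \<omega>)\<^sup>2 \<partial>M) = (\<integral>\<omega>. (\<Sum>\<sigma>\<in>LP. indicator (Cset r \<sigma>) (\<pi> \<omega>) * (Bs \<sigma> \<omega>)\<^sup>2) \<partial>M)"
    by (rule Bochner_Integration.integral_cong) (simp_all add: Wsq)
  also have "\<dots> = (\<Sum>\<sigma>\<in>LP. (\<integral>\<omega>. (Bs \<sigma> \<omega>)\<^sup>2 \<partial>M) / real (card LP))"
    using term_int term_eq by (simp add: Bochner_Integration.integral_sum)
  also have "\<dots> = (\<Sum>i\<in>I. \<Sum>i'\<in>I. (\<Sum>\<sigma>\<in>LP. c (\<sigma> i) (\<sigma> i')) / real (card LP))"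
  proof -
    have "(\<Sum>\<sigma>\<in>LP. (\<integral>\<omega>. (Bs \<sigma> \<omega>)\<^sup>2 \<partial>M) / real (card LP))
        = (\<Sum>\<sigma>\<in>LP. (\<integral>\<omega>. (Bs \<sigma> \<omega>)\<^sup>2 \<partial>M)) / real (card LP)"
      by (simp add: sum_divide_distrib)
    also have "(\<Sum>\<sigma>\<in>LP. (\<integral>\<omega>. (Bs \<sigma> \<omega>)\<^sup>2 \<partial>M)) = (\<Sum>\<sigma>\<in>LP. (\<Sum>i\<in>I. \<Sum>i'\<in>I. c (\<sigma> i) (\<sigma> i')))"
      by (rule sum.cong[OF refl]) (simp add: Bs2_eq)
    also have "(\<Sum>\<sigma>\<in>LP. (\<Sum>i\<in>I. \<Sum>i'\<in>I. c (\<sigma> i) (\<sigma> i'))) = (\<Sum>i\<in>I. \<Sum>\<sigma>\<in>LP. \<Sum>i'\<in>I. c (\<sigma> i) (\<sigma> i'))"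
      by (rule sum.swap)
    also have "\<dots> = (\<Sum>i\<in>I. \<Sum>i'\<in>I. \<Sum>\<sigma>\<in>LP. c (\<sigma> i) (\<sigma> i'))"
      by (rule sum.cong[OF refl], rule sum.swap)
    finally show ?thesis by (simp add: sum_divide_distrib)
  qed
  finally have W2: "(\<integral>\<omega>. (W \<omega>)\<^sup>2 \<partial>M) = (\<Sum>i\<in>I. \<Sum>i'\<in>I. (\<Sum>\<sigma>\<in>LP. c (\<sigma> i) (\<sigma> i')) / real (card LP))" .
  define N where "N = card (Gen r)"
  define D where "D = (\<Sum>j\<in>Gen r. c j j)"
  define Od where "Od = (\<Sum>j\<in>Gen r. \<Sum>j'\<in>Gen r - {j}. c j j')"
  have LPpos: "0 < card LP" unfolding LP_def using LP_id LP_finite by (auto simp: card_gt_0_iff)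
  have Npos: "0 < N" unfolding N_def card_Gen by simp
  have a1: "(\<Sum>\<sigma>\<in>LP. c (\<sigma> i) (\<sigma> i)) / real (card LP) = D / N" if "i \<in> I" for i
  proof -
    have ig: "i \<in> Gen r" using that I by auto
    have e: "real (card (Gen r)) * (\<Sum>\<sigma>\<in>layer_perms r. c (\<sigma> i) (\<sigma> i)) = real (card (layer_perms r)) * (\<Sum>j\<in>Gen r. c j j)"
      by (rule avg1[OF ig])
    have p1: "0 < real (card (layer_perms r))" "0 < real (card (Gen r))" using LPpos Npos unfolding LP_def N_def by auto
    show ?thesis unfolding LP_def D_def N_def by (rule div_helper[OF _ _ e]) (use p1 in auto)
  qed
  have a2: "(\<Sum>\<sigma>\<in>LP. c (\<sigma> i) (\<sigma> i')) / real (card LP) = Od / (real N * (real N - 1))"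
    if "i \<in> I" "i' \<in> I" "i \<noteq> i'" for i i'
  proof -
    have ig: "i \<in> Gen r" "i' \<in> Gen r" using that I by auto
    then have "card {i, i'} \<le> N" unfolding N_def by (intro card_mono) auto
    then have N2: "2 \<le> N" using that(3) by simp
    have e: "real (card (Gen r) * (card (Gen r) - 1)) * (\<Sum>\<sigma>\<in>layer_perms r. c (\<sigma> i) (\<sigma> i'))
       = real (card (layer_perms r)) * (\<Sum>j\<in>Gen r. \<Sum>j'\<in>Gen r - {j}. c j j')"
      by (rule avg2[OF ig that(3)])
    have N2': "real (card (Gen r) * (card (Gen r) - 1)) = real N * (real N - 1)"
      using N2 unfolding N_def by (simp add: of_nat_diff)
    have pos: "0 < real N * (real N - 1)" using N2 by simp
    have p1: "0 < real (card LP)" using LPpos by auto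
    show ?thesis using e unfolding N2' LP_def[symmetric] Od_def[symmetric]
      by (rule div_helper[rotated 2]) (use p1 pos N2 in auto)
  qed
  define m where "m = card I"
  have mN: "m \<le> N" unfolding m_def N_def using I by (intro card_mono) auto
  have W2': "(\<integral>\<omega>. (W \<omega>)\<^sup>2 \<partial>M) = m * (D / N) + (m * (real m - 1)) * (Od / (real N * (real N - 1)))"
  proof -
    have "(\<Sum>i\<in>I. \<Sum>i'\<in>I. (\<Sum>\<sigma>\<in>LP. c (\<sigma> i) (\<sigma> i')) / real (card LP))
        = (\<Sum>i\<in>I. D / N + (\<Sum>i'\<in>I - {i}. Od / (real N * (real N - 1))))"
    proof (rule sum.cong[OF refl])
      fix i assume i: "i \<in> I"
      have "(\<Sum>i'\<in>I. (\<Sum>\<sigma>\<in>LP. c (\<sigma> i) (\<sigma> i')) / real (card LP))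
          = (\<Sum>\<sigma>\<in>LP. c (\<sigma> i) (\<sigma> i)) / real (card LP) + (\<Sum>i'\<in>I - {i}. (\<Sum>\<sigma>\<in>LP. c (\<sigma> i) (\<sigma> i')) / real (card LP))"
        using i finI by (simp add: sum.remove)
      also have "\<dots> = D / N + (\<Sum>i'\<in>I - {i}. Od / (real N * (real N - 1)))"
        using a1[OF i] a2[OF i] by (intro arg_cong2[where f="(+)"] sum.cong) auto
      finally show "(\<Sum>i'\<in>I. (\<Sum>\<sigma>\<in>LP. c (\<sigma> i) (\<sigma> i')) / real (card LP)) = D / N + (\<Sum>i'\<in>I - {i}. Od / (real N * (real N - 1)))" .
    qed
    also have "\<dots> = (\<Sum>i\<in>I. D / N + (real m - 1) * (Od / (real N * (real N - 1))))"
    proof (rule sum.cong[OF refl])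
      fix i assume i: "i \<in> I"
      then have "I \<noteq> {}" by auto
      then have m1: "1 \<le> m" unfolding m_def using finI by (simp add: Suc_le_eq card_gt_0_iff)
      have "card (I - {i}) = m - 1" unfolding m_def using i finI by simp
      then show "D / N + (\<Sum>i'\<in>I - {i}. Od / (real N * (real N - 1))) = D / N + (real m - 1) * (Od / (real N * (real N - 1)))"
        using m1 by (simp add: of_nat_diff)
    qed
    also have "\<dots> = m * (D / N) + (m * (real m - 1)) * (Od / (real N * (real N - 1)))"
      unfolding m_def by (simp add: sum.distrib distrib_left mult.assoc)
    finally show ?thesis using W2 by simp
  qed
  have fsq: "integrable M (\<lambda>\<omega>. (f (Delta X j \<omega>))\<^sup>2)" if "j \<in> Gen r" for j using fsq_int[OF that] .
  have Deq: "D = (\<integral>\<omega>. (\<Sum>j\<in>Gen r. (f (Delta X j \<omega>))\<^sup>2) \<partial>M)"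
    unfolding D_def c_def using fsq by (simp add: Bochner_Integration.integral_sum power2_eq_square)
  have D0: "0 \<le> D" unfolding Deq by (rule Bochner_Integration.integral_nonneg) (auto intro: sum_nonneg)
  have Teq: "(\<integral>\<omega>. (Sr r \<omega>)\<^sup>2 \<partial>M) = D + Od"
  proof -
    have "(\<integral>\<omega>. (Sr r \<omega>)\<^sup>2 \<partial>M) = (\<integral>\<omega>. (\<Sum>j\<in>Gen r. (f (Delta X j \<omega>))\<^sup>2) + (\<Sum>j\<in>Gen r. \<Sum>k\<in>Gen r - {j}. f (Delta X j \<omega>) * f (Delta X k \<omega>)) \<partial>M)"
      unfolding Sr_def by (subst sq_sum_expand) auto
    also have "\<dots> = D + Od"
    proof -
      have ii: "integrable M (\<lambda>\<omega>. \<Sum>k\<in>Gen r - {j}. f (Delta X j \<omega>) * f (Delta X k \<omega>))" if "j \<in> Gen r" for j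
        by (intro Bochner_Integration.integrable_sum) (use that fprod_int[of j r _ r] in auto)
      have ie: "(\<integral>\<omega>. (\<Sum>k\<in>Gen r - {j}. f (Delta X j \<omega>) * f (Delta X k \<omega>)) \<partial>M)
          = (\<Sum>k\<in>Gen r - {j}. c j k)" if "j \<in> Gen r" for j
        unfolding c_def by (rule Bochner_Integration.integral_sum) (use that fprod_int[of j r _ r] in auto)
      have i1: "integrable M (\<lambda>\<omega>. \<Sum>j\<in>Gen r. (f (Delta X j \<omega>))\<^sup>2)" using fsq by auto
      have i3: "integrable M (\<lambda>\<omega>. \<Sum>j\<in>Gen r. \<Sum>k\<in>Gen r - {j}. f (Delta X j \<omega>) * f (Delta X k \<omega>))"
        using ii by auto
      have "(\<integral>\<omega>. (\<Sum>j\<in>Gen r. \<Sum>k\<in>Gen r - {j}. f (Delta X j \<omega>) * f (Delta X k \<omega>)) \<partial>M) = Od"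
        unfolding Od_def using ii ie by (simp add: Bochner_Integration.integral_sum)
      then show ?thesis unfolding Deq using i1 i3 by simp
    qed
    finally show ?thesis .
  qed
  have T0: "0 \<le> (\<integral>\<omega>. (Sr r \<omega>)\<^sup>2 \<partial>M)" by (rule Bochner_Integration.integral_nonneg) simp
  have t1: "m * (D / N) \<le> D"
    using mN D0 Npos by (simp add: field_simps mult_left_mono)
  have t2: "(m * (real m - 1)) * (Od / (real N * (real N - 1))) \<le> (\<integral>\<omega>. (Sr r \<omega>)\<^sup>2 \<partial>M)"
  proof (cases "Od \<ge> 0")
    case True
    have th: "(m * (real m - 1)) / (real N * (real N - 1)) \<le> 1"
    proof (cases "m = 0")
      case False
      then have "real m - 1 \<le> real N - 1" "0 \<le> real m - 1" using mN by auto
      then have "(m * (real m - 1)) \<le> (real N * (real N - 1))" using mN by (intro mult_mono) auto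
      then show ?thesis by (cases "real N * (real N - 1) = 0") (auto simp: divide_le_eq_1)
    qed simp
    have "(m * (real m - 1)) * (Od / (real N * (real N - 1))) = ((m * (real m - 1)) / (real N * (real N - 1))) * Od"
      by simp
    also have "\<dots> \<le> 1 * Od"
      by (rule mult_right_mono[OF th True])
    finally show ?thesis using Teq D0 by simp
  next
    case False
    have "0 \<le> (m * (real m - 1))" by (cases m) auto
    moreover have "0 \<le> real N * (real N - 1)" using Npos by simp
    ultimately have "(m * (real m - 1)) * (Od / (real N * (real N - 1))) \<le> 0"
      using False by (intro mult_nonneg_nonpos divide_nonpos_nonneg) auto
    then show ?thesis using T0 by linarith
  qed
  show "(\<integral>\<omega>. (W \<omega>)\<^sup>2 \<partial>M) \<le> (\<integral>\<omega>. (\<Sum>j\<in>Gen r. (f (Delta X j \<omega>))\<^sup>2) \<partial>M) + (\<integral>\<omega>. (Sr r \<omega>)\<^sup>2 \<partial>M)"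
    unfolding W2' Deq[symmetric] using t1 t2 by linarith
qed

end


context bmcPf begin

lemma Tq_bound:
  "\<exists>B\<ge>0. \<forall>r. integrable M (\<lambda>\<omega>. (\<Sum>q<r. Sr q \<omega>)\<^sup>2) \<and> (\<integral>\<omega>. (\<Sum>q<r. Sr q \<omega>)\<^sup>2 \<partial>M) \<le> B * 4 ^ r * rho \<alpha> r"
proof -
  obtain K where K: "K \<ge> 0" "\<And>r. integrable M (\<lambda>\<omega>. (Sr r \<omega>)\<^sup>2)" "\<And>r. (\<integral>\<omega>. (Sr r \<omega>)\<^sup>2 \<partial>M) \<le> K * 4 ^ r * rho \<alpha> r"
    using Sr_bound by blast
  define Ct where "Ct = 2 / (sqrt 2 - 1)\<^sup>2"
  have Ct: "0 \<le> Ct" unfolding Ct_def by simp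
  note tb = tree_bound[where S=Sr and K=K and a=\<alpha>, OF Sr_meas K(2) K(3) K(1)]
  have a2: "0 < \<alpha>\<^sup>2" using al by simp
  have "integrable M (\<lambda>\<omega>. (\<Sum>q<r. Sr q \<omega>)\<^sup>2) \<and> (\<integral>\<omega>. (\<Sum>q<r. Sr q \<omega>)\<^sup>2 \<partial>M) \<le> (Ct * K / \<alpha>\<^sup>2) * 4 ^ r * rho \<alpha> r" for r
  proof (cases r)
    case 0
    then show ?thesis using Ct K(1) rho_nonneg[of \<alpha> 0] by simp
  next
    case (Suc r')
    have e: "(\<lambda>\<omega>. (\<Sum>q<r. Sr q \<omega>)\<^sup>2) = (\<lambda>\<omega>. (\<Sum>q\<le>r'. Sr q \<omega>)\<^sup>2)" unfolding Suc lessThan_Suc_atMost ..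
    have "(\<integral>\<omega>. (\<Sum>q\<le>r'. Sr q \<omega>)\<^sup>2 \<partial>M) \<le> Ct * K * 4 ^ r' * rho \<alpha> r'" using tb(2)[of r'] unfolding Ct_def .
    also have "\<dots> \<le> (Ct * K / \<alpha>\<^sup>2) * 4 ^ r * rho \<alpha> r"
    proof -
      have "\<alpha>\<^sup>2 * rho \<alpha> r' \<le> rho \<alpha> r" unfolding Suc by simp
      then have r1: "rho \<alpha> r' \<le> rho \<alpha> r / \<alpha>\<^sup>2" using a2 by (simp add: field_simps)
      have r2: "(4::real) ^ r' \<le> 4 ^ r" unfolding Suc by simp
      have "Ct * K * 4 ^ r' * rho \<alpha> r' \<le> Ct * K * 4 ^ r * (rho \<alpha> r / \<alpha>\<^sup>2)"
        using Ct K(1) r1 r2 rho_nonneg[of \<alpha>]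
        by (intro mult_mono mult_nonneg_nonneg) auto
      then show ?thesis by (simp add: field_simps)
    qed
    finally show ?thesis unfolding e using tb(1)[of r'] by simp
  qed
  moreover have "0 \<le> Ct * K / \<alpha>\<^sup>2" using Ct K(1) by simp
  ultimately show ?thesis by blast
qed

lemma pointwise_Mpi:
  assumes \<omega>: "\<omega> \<in> space M" and n: "1 \<le> n"
  defines "r \<equiv> rgen n"
  shows "(\<Sum>i\<in>{1..n}. f (Delta X (\<pi> \<omega> i) \<omega>)) =
     (\<Sum>q<r. Sr q \<omega>) + (\<Sum>\<sigma>\<in>layer_perms r. indicator (Cset r \<sigma>) (\<pi> \<omega>) * (\<Sum>i\<in>{2^r..n}. f (Delta X (\<sigma> i) \<omega>)))"
proof -
  have b: "2 ^ r \<le> n" "n < 2 ^ (r + 1)" using rgen_bounds[OF n] unfolding r_def by auto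
  have sp: "{1..n} = {1..<2 ^ r} \<union> {2 ^ r..n}" using b by auto
  have IG: "{2 ^ r..n} \<subseteq> Gen r" using b by (auto simp: Gen_def)
  have "(\<Sum>i\<in>{1..n}. f (Delta X (\<pi> \<omega> i) \<omega>)) = (\<Sum>i\<in>{1..<2 ^ r}. f (Delta X (\<pi> \<omega> i) \<omega>)) + (\<Sum>i\<in>{2^r..n}. f (Delta X (\<pi> \<omega> i) \<omega>))"
    unfolding sp by (rule sum.union_disjoint) auto
  also have "(\<Sum>i\<in>{1..<2 ^ r}. f (Delta X (\<pi> \<omega> i) \<omega>)) = (\<Sum>q<r. Sr q \<omega>)"
  proof -
    have "(\<Sum>i\<in>{1..<2 ^ r}. f (Delta X (\<pi> \<omega> i) \<omega>)) = (\<Sum>q<r. \<Sum>i\<in>Gen q. f (Delta X (\<pi> \<omega> i) \<omega>))"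
      unfolding UN_Gen_less[symmetric] by (rule sum_UN_Gen)
    also have "\<dots> = (\<Sum>q<r. Sr q \<omega>)" unfolding Sr_def
      by (rule sum.cong[OF refl], rule sum.reindex_bij_betw[OF pi_bij[OF \<omega>]])
    finally show ?thesis .
  qed
  also have "(\<Sum>i\<in>{2^r..n}. f (Delta X (\<pi> \<omega> i) \<omega>)) = (\<Sum>i\<in>{2^r..n}. f (Delta X (sig \<pi> r \<omega> i) \<omega>))"
    using IG Gen_Tr[of r r] by (intro sum.cong refl) (auto simp: sig_def)
  also have "\<dots> = (\<Sum>\<sigma>\<in>layer_perms r. indicator (Cset r \<sigma>) (\<pi> \<omega>) * (\<Sum>i\<in>{2^r..n}. f (Delta X (\<sigma> i) \<omega>)))"
    using sum_LP_ind[OF \<omega>, of r "\<lambda>\<sigma>. \<Sum>i\<in>{2^r..n}. f (Delta X (\<sigma> i) \<omega>)"] by simp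
  finally show ?thesis .
qed

end


context bmcPf begin

lemma sq_sum_le: "(a + b)\<^sup>2 \<le> 2 * a\<^sup>2 + 2 * (b::real)\<^sup>2"
proof -
  have "0 \<le> (a - b)\<^sup>2" by simp
  then show ?thesis unfolding power2_diff power2_sum by linarith
qed

lemma Mpi_bound:
  "\<exists>c>0. \<forall>\<delta>>0. \<forall>n\<ge>1. (\<alpha>\<^sup>2 = 1/2 \<longrightarrow> rgen n \<ge> 1) \<longrightarrow>
        measure M {\<omega>\<in>space M. \<bar>Mpi X \<pi> n f \<omega>\<bar> > \<delta>} \<le> c / \<delta>\<^sup>2 * rate1 \<alpha> (rgen n)"
proof -
  obtain K where K: "K \<ge> 0" "\<And>r. integrable M (\<lambda>\<omega>. (Sr r \<omega>)\<^sup>2)" "\<And>r. (\<integral>\<omega>. (Sr r \<omega>)\<^sup>2 \<partial>M) \<le> K * 4 ^ r * rho \<alpha> r"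
    using Sr_bound by blast
  obtain C2 where C2: "C2 \<ge> 0" "\<And>r. integrable M (\<lambda>\<omega>. \<Sum>i\<in>Gen r. (f (Delta X i \<omega>))\<^sup>2)"
      "\<And>r. (\<integral>\<omega>. (\<Sum>i\<in>Gen r. (f (Delta X i \<omega>))\<^sup>2) \<partial>M) \<le> 2 ^ r * C2"
    using S2_bound[OF f2p Pf2F] by blast
  obtain Bt where Bt: "Bt \<ge> 0" "\<And>r. integrable M (\<lambda>\<omega>. (\<Sum>q<r. Sr q \<omega>)\<^sup>2)"
      "\<And>r. (\<integral>\<omega>. (\<Sum>q<r. Sr q \<omega>)\<^sup>2 \<partial>M) \<le> Bt * 4 ^ r * rho \<alpha> r"
    using Tq_bound by blast
  obtain C where C: "C > 0" "\<And>r. (\<alpha>\<^sup>2 = 1/2 \<longrightarrow> r \<ge> 1) \<Longrightarrow> rho \<alpha> r \<le> C * rate1 \<alpha> r"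
    using rho_rate1 by blast
  define B where "B = 2 * Bt + 2 * C2 + 2 * K"
  have B0: "0 \<le> B" unfolding B_def using Bt(1) C2(1) K(1) by simp
  have main: "measure M {\<omega>\<in>space M. \<bar>Mpi X \<pi> n f \<omega>\<bar> > \<delta>} \<le> (B * C + 1) / \<delta>\<^sup>2 * rate1 \<alpha> (rgen n)"
    if d: "\<delta> > 0" and n: "1 \<le> n" and rn: "\<alpha>\<^sup>2 = 1/2 \<longrightarrow> rgen n \<ge> 1" for \<delta> n
  proof -
    define r where "r = rgen n"
    have b: "2 ^ r \<le> n" "n < 2 ^ (r + 1)" using rgen_bounds[OF n] unfolding r_def by auto
    have IG: "{2 ^ r..n} \<subseteq> Gen r" using b by (auto simp: Gen_def)
    define W where "W = (\<lambda>\<omega>. \<Sum>\<sigma>\<in>layer_perms r. indicator (Cset r \<sigma>) (\<pi> \<omega>) * (\<Sum>i\<in>{2^r..n}. f (Delta X (\<sigma> i) \<omega>)))"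
    define T where "T = (\<lambda>\<omega>. \<Sum>q<r. Sr q \<omega>)"
    define Z where "Z = (\<lambda>\<omega>. T \<omega> + W \<omega>)"
    note pp = perm_part[OF IG]
    have [measurable]: "W \<in> borel_measurable M" unfolding W_def by measurable
    have [measurable]: "T \<in> borel_measurable M" unfolding T_def by measurable
    have Zm[measurable]: "Z \<in> borel_measurable M" unfolding Z_def by measurable
    have Zb: "(Z \<omega>)\<^sup>2 \<le> 2 * (T \<omega>)\<^sup>2 + 2 * (W \<omega>)\<^sup>2" for \<omega>
      unfolding Z_def by (rule sq_sum_le)
    have iTW: "integrable M (\<lambda>\<omega>. 2 * (T \<omega>)\<^sup>2 + 2 * (W \<omega>)\<^sup>2)" using Bt(2)[of r] pp(1) unfolding T_def W_def by auto
    have iZ: "integrable M (\<lambda>\<omega>. (Z \<omega>)\<^sup>2)"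
      by (rule Bochner_Integration.integrable_bound[OF iTW]) (use Zb in \<open>auto intro!: AE_I2\<close>)
    have "(\<integral>\<omega>. (Z \<omega>)\<^sup>2 \<partial>M) \<le> (\<integral>\<omega>. 2 * (T \<omega>)\<^sup>2 + 2 * (W \<omega>)\<^sup>2 \<partial>M)"
      by (rule integral_mono[OF iZ iTW Zb])
    also have "\<dots> = 2 * (\<integral>\<omega>. (T \<omega>)\<^sup>2 \<partial>M) + 2 * (\<integral>\<omega>. (W \<omega>)\<^sup>2 \<partial>M)"
      using Bt(2)[of r] pp(1) unfolding T_def W_def by simp
    also have "\<dots> \<le> 2 * (Bt * 4 ^ r * rho \<alpha> r) + 2 * (2 ^ r * C2 + K * 4 ^ r * rho \<alpha> r)"
    proof -
      have w: "(\<integral>\<omega>. (W \<omega>)\<^sup>2 \<partial>M) \<le> 2 ^ r * C2 + K * 4 ^ r * rho \<alpha> r"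
        using pp(2) C2(3)[of r] K(3)[of r] unfolding W_def by linarith
      have t: "(\<integral>\<omega>. (T \<omega>)\<^sup>2 \<partial>M) \<le> Bt * 4 ^ r * rho \<alpha> r"
        using Bt(3)[of r] unfolding T_def .
      show ?thesis using w t by (intro add_mono mult_left_mono) auto
    qed
    also have "\<dots> \<le> B * 4 ^ r * rho \<alpha> r"
    proof -
      have "(2::real) ^ r \<le> 4 ^ r * rho \<alpha> r"
      proof -
        have "(2::real) ^ r = 4 ^ r * (1/2) ^ r" using four_pow[of r] by (simp add: power_one_over field_simps)
        also have "\<dots> \<le> 4 ^ r * rho \<alpha> r" by (intro mult_left_mono rho_ge) simp
        finally show ?thesis .
      qed
      then have "2 ^ r * C2 \<le> 4 ^ r * rho \<alpha> r * C2" using C2(1) by (rule mult_right_mono)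
      then show ?thesis unfolding B_def by (simp add: algebra_simps)
    qed
    finally have Zint: "(\<integral>\<omega>. (Z \<omega>)\<^sup>2 \<partial>M) \<le> B * 4 ^ r * rho \<alpha> r" .
    have nr: "(2::real) ^ r \<le> real n" using b(1) by (metis of_nat_le_iff of_nat_numeral of_nat_power)
    have eq: "{\<omega>\<in>space M. \<bar>Mpi X \<pi> n f \<omega>\<bar> > \<delta>} = {\<omega>\<in>space M. \<bar>Z \<omega> / real n\<bar> > \<delta>}"
      using pointwise_Mpi[OF _ n] unfolding Mpi_def Z_def T_def W_def r_def by auto
    have "measure M {\<omega>\<in>space M. \<bar>Mpi X \<pi> n f \<omega>\<bar> > \<delta>} \<le> B * rho \<alpha> r / \<delta>\<^sup>2"
      unfolding eq by (rule cheb_scaled[OF Zm iZ Zint B0 nr d])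
    also have "\<dots> \<le> B * (C * rate1 \<alpha> r) / \<delta>\<^sup>2"
      using C(2)[of r] rn B0 unfolding r_def by (intro divide_right_mono mult_left_mono) auto
    also have "\<dots> \<le> (B * C + 1) / \<delta>\<^sup>2 * rate1 \<alpha> r"
    proof -
      have "B * (C * rate1 \<alpha> r) \<le> (B * C + 1) * rate1 \<alpha> r"
        using rate1_nonneg[of \<alpha> r] al by (simp add: algebra_simps)
      then show ?thesis by (simp add: divide_right_mono)
    qed
    finally show ?thesis unfolding r_def .
  qed
  moreover have "B * C + 1 > 0" using B0 C(1) by (simp add: add_nonneg_pos)
  ultimately show ?thesis by blast
qed

end


theorem theorem2p11:
  fixes M :: "'b measure" and X :: "nat \<Rightarrow> 'b \<Rightarrow> 'a::metric_space"
    and \<nu> \<mu> :: "'a measure" and P :: "'a \<Rightarrow> ('a \<times> 'a) measure"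
    and \<pi> :: "'b \<Rightarrow> nat \<Rightarrow> nat" and F :: "('a \<Rightarrow> real) set"
    and \<alpha> :: real and f :: "'a \<times> 'a \<times> 'a \<Rightarrow> real"
  assumes BMC: "bifurcating_MC M X \<nu> P"
    and perm: "random_layer_perm M X \<pi>"
    and subsp: "vector_subspace_B F"
    and condF: "F_conditions P \<mu> \<nu> F"
    and hyp1: "H1 P \<mu> F \<alpha>"
    and f_meas: "f \<in> borel_measurable (borel \<Otimes>\<^sub>M borel \<Otimes>\<^sub>M borel)"
    and Pf_ex: "\<forall>x. integrable (P x) (\<lambda>p. f (x, fst p, snd p))"
    and Pf2_ex: "\<forall>x. integrable (P x) (\<lambda>p. (f (x, fst p, snd p))\<^sup>2)"
    and Pf_F: "P3 P f \<in> F"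
    and Pf2_F: "P3 P (\<lambda>t. (f t)\<^sup>2) \<in> F"
    and Pf_centered: "(\<integral>x. P3 P f x \<partial>\<mu>) = 0"
  shows
    "(\<exists>c>0. \<forall>\<delta>>0. \<forall>r. (\<alpha>\<^sup>2 = 1/2 \<longrightarrow> r \<ge> 1) \<longrightarrow>
        measure M {\<omega>\<in>space M. \<bar>MG X r f \<omega>\<bar> > \<delta>}
        \<le> c / \<delta>\<^sup>2 * (if \<alpha>\<^sup>2 < 1/2 then (1/2) ^ r
                      else if \<alpha>\<^sup>2 = 1/2 then real r * (1/2) ^ r
                      else \<alpha> ^ (2*r)))
   \<and> (\<exists>c>0. \<forall>\<delta>>0. \<forall>n\<ge>1. (\<alpha>\<^sup>2 = 1/2 \<longrightarrow> rgen n \<ge> 1) \<longrightarrow>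
        measure M {\<omega>\<in>space M. \<bar>Mpi X \<pi> n f \<omega>\<bar> > \<delta>}
        \<le> c / \<delta>\<^sup>2 * (if \<alpha>\<^sup>2 < 1/2 then (1/2) ^ (rgen n + 1)
                      else if \<alpha>\<^sup>2 = 1/2 then real (rgen n) * (1/2) ^ (rgen n + 1)
                      else \<alpha> ^ (2*(rgen n + 1))))
   \<and> (\<exists>c>0. \<forall>\<delta>>0. \<forall>r. (\<alpha>\<^sup>2 = 1/2 \<longrightarrow> r \<ge> 1) \<longrightarrow>
        measure M {\<omega>\<in>space M. \<bar>MT X r f \<omega>\<bar> > \<delta>}
        \<le> c / \<delta>\<^sup>2 * (if \<alpha>\<^sup>2 < 1/2 then (1/2) ^ (r + 1)
                      else if \<alpha>\<^sup>2 = 1/2 then real r * (1/2) ^ (r + 1)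
                      else \<alpha> ^ (2*(r + 1))))"
proof -
  interpret B: bmc M X \<nu> P by unfold_locales (rule BMC)
  have fp: "B.pint f" unfolding B.pint_def using f_meas Pf_ex by auto
  have f2p: "B.pint (\<lambda>t. (f t)\<^sup>2)" unfolding B.pint_def using f_meas Pf2_ex by auto
  interpret bmcPf M X \<nu> P \<mu> F \<pi> f \<alpha>
    by unfold_locales (use BMC subsp condF perm fp f2p Pf_F Pf2_F Pf_centered hyp1 in auto)
  show ?thesis
    using MG_bound Mpi_bound MT_bound unfolding rate_def rate1_def by blast
qed



end
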